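(* Let $\Pi$ be a class of subsets of $[K]$ such that for every $k\in[K]$ there exist $A,B\in\Pi$ with $k\in A$, $k\notin B$. Suppose that for every $\alpha,\beta\in(0,1)$ the thresholds $a,b$ of the parallel SPRT $\tilde\chi$ are chosen so that $\tilde\chi\in\Delta(\alpha,\beta,\Pi)$, and that $a\sim|\log\alpha|$, $b\sim|\log\beta|$ as $\alpha,\beta\to0$. Suppose that for every $k\in[K]$ there are positive $I_k,J_k$ such that $\mathrm P_k^1(\limsup_n\lambda_k(n)/n\le I_k)=1$, $\mathrm P_k^0(\limsup_n(-\lambda_k(n))/n\le J_k)=1$, and for every $\epsilon>0$, $\sum_n\mathrm P_k^1(\lambda_k(n)/n\le I_k-\epsilon)<\infty$ and $\sum_n\mathrm P_k^0(-\lambda_k(n)/n\le J_k-\epsilon)<\infty$. Then, as $\alpha,\beta\to0$, $$\mathrm E_A[\tilde T_i]\sim\mathcal L'_{i,A}(\alpha,\beta,\Pi)\sim\frac{|\log\alpha|}{I_i},\qquad \mathrm E_A[\tilde T_j]\sim\mathcal L'_{j,A}(\alpha,\beta,\Pi)\sim\frac{|\log\beta|}{J_j},$$ simultaneously for every $i\in A$, $j\notin A$, $A\in\Pi$.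
   Context: Let $K\ge1$, $[K]=\{1,\dots,K\}$, $\mathbb N=\{1,2,\dots\}$. There are $K$ independent data streams $X_k=\{X_k(n):n\in\mathbb N\}$; $\mathcal F_k(n)=\sigma(X_k(t):t\le n)$, $\mathcal F(n)=\sigma(\mathcal F_k(n):k\in[K])$. For each $k$, $\mathrm P_k^0,\mathrm P_k^1$ are distributions of $X_k$ mutually absolutely continuous on each $\mathcal F_k(n)$, $\lambda_k(n)=\log\frac{d\mathrm P_k^1}{d\mathrm P_k^0}(\mathcal F_k(n))$. For $A\subseteq[K]$, $\mathrm P_A$ is the joint law with independent streams, $X_k\sim\mathrm P_k^1$ if $k\in A$, $\mathrm P_k^0$ otherwise; $\mathrm E_A$ its expectation. A procedure $\chi=(\mathbf T,\mathbf D)$: $\mathbb N$-valued stopping times $T_k$ w.r.t. $\{\mathcal F(n)\}$ and $\mathcal F(T_k)$-measurable Bernoulli $D_k$. It is decentralized if each $T_k$ is a stopping time w.r.t. $\{\mathcal F_k(n)\}$ and $D_k$ is $\mathcal F_k(T_k)$-measurable; $\Delta'$ denotes the decentralized procedures. $\mathrm{FWE}^1_A(\chi)=\mathrm P_A(\exists j\notin A:D_j=1)$, $\mathrm{FWE}^2_A(\chi)=\mathrm P_A(\exists i\in A:D_i=0)$. $\Delta(\alpha,\beta,\Pi)$: procedures with $\mathrm{FWE}^1_A\le\alpha$ and $\mathrm{FWE}^2_A\le\beta$ for all $A\in\Pi$. $\mathcal L'_{k,A}(\alpha,\beta,\Pi)=\inf\{\mathrm E_A[T_k]:\chi\in\Delta'\cap\Delta(\alpha,\beta,\Pi)\}$.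 Parallel SPRT $\tilde\chi$ (thresholds $a,b>0$): $\tilde T_k=\inf\{n:\lambda_k(n)\notin(-b,a)\}$, $\tilde D_k=\mathbf 1\{\lambda_k(\tilde T_k)\ge a\}$. $x\sim y$ means $x/y\to1$. *)

theory Defs
  imports "HOL-Probability.Probability" "HOL-Library.Landau_Symbols"
begin

text \<open>Stream k takes values in the measurable space M k; a path of
stream k is a function nat => 'a whose coordinates t in {1..} are X_k(1), X_k(2), ...
The streams are indexed by [K] = {1..K}; a joint outcome is a function from
stream indices to paths.\<close>

definition path_space :: "('a measure) \<Rightarrow> (nat \<Rightarrow> 'a) measure" where
  "path_space S = PiM {1..} (\<lambda>_. S)"

definition joint_space :: "nat \<Rightarrow> (nat \<Rightarrow> 'a measure) \<Rightarrow> (nat \<Rightarrow> nat \<Rightarrow> 'a) measure" where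
  "joint_space K M = PiM {1..K} (\<lambda>k. path_space (M k))"

definition stream_filt :: "('a measure) \<Rightarrow> nat \<Rightarrow> (nat \<Rightarrow> 'a) measure" where
  "stream_filt S n = vimage_algebra (space (path_space S)) (\<lambda>x. restrict x {1..n}) (PiM {1..n} (\<lambda>_. S))"

definition local_filt :: "nat \<Rightarrow> (nat \<Rightarrow> 'a measure) \<Rightarrow> nat \<Rightarrow> nat \<Rightarrow> (nat \<Rightarrow> nat \<Rightarrow> 'a) measure" where
  "local_filt K M k n = vimage_algebra (space (joint_space K M)) (\<lambda>\<omega>. restrict (\<omega> k) {1..n})
      (PiM {1..n} (\<lambda>_. M k))"

text \<open>F(n) = sigma(F_k(n) : k in [K]) on the joint space.\<close>
definition global_filt :: "nat \<Rightarrow> (nat \<Rightarrow> 'a measure) \<Rightarrow> nat \<Rightarrow> (nat \<Rightarrow> nat \<Rightarrow> 'a) measure" where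
  "global_filt K M n = vimage_algebra (space (joint_space K M))
      (\<lambda>\<omega>. \<lambda>k\<in>{1..K}. restrict (\<omega> k) {1..n}) (PiM {1..K} (\<lambda>k. PiM {1..n} (\<lambda>_. M k)))"

definition P_A :: "nat \<Rightarrow> (nat \<Rightarrow> (nat \<Rightarrow> 'a) measure) \<Rightarrow> (nat \<Rightarrow> (nat \<Rightarrow> 'a) measure)
    \<Rightarrow> nat set \<Rightarrow> (nat \<Rightarrow> nat \<Rightarrow> 'a) measure" where
  "P_A K P0 P1 A = PiM {1..K} (\<lambda>k. if k \<in> A then P1 k else P0 k)"

definition is_procedure :: "nat \<Rightarrow> (nat \<Rightarrow> 'a measure) \<Rightarrow> (nat \<Rightarrow> (nat \<Rightarrow> nat \<Rightarrow> 'a) \<Rightarrow> nat)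
    \<Rightarrow> (nat \<Rightarrow> (nat \<Rightarrow> nat \<Rightarrow> 'a) \<Rightarrow> bool) \<Rightarrow> bool" where
  "is_procedure K M T D \<longleftrightarrow> (\<forall>k\<in>{1..K}.
      (\<forall>\<omega>\<in>space (joint_space K M). 1 \<le> T k \<omega>) \<and>
      stopping_time (global_filt K M) (T k) \<and>
      D k \<in> measurable (filtration.pre_sigma (space (joint_space K M)) (global_filt K M) (T k))
                        (count_space UNIV))"

definition is_decentralized :: "nat \<Rightarrow> (nat \<Rightarrow> 'a measure) \<Rightarrow> (nat \<Rightarrow> (nat \<Rightarrow> nat \<Rightarrow> 'a) \<Rightarrow> nat)
    \<Rightarrow> (nat \<Rightarrow> (nat \<Rightarrow> nat \<Rightarrow> 'a) \<Rightarrow> bool) \<Rightarrow> bool" where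
  "is_decentralized K M T D \<longleftrightarrow> is_procedure K M T D \<and> (\<forall>k\<in>{1..K}.
      stopping_time (local_filt K M k) (T k) \<and>
      D k \<in> measurable (filtration.pre_sigma (space (joint_space K M)) (local_filt K M k) (T k))
                        (count_space UNIV))"

definition FWE1 :: "nat \<Rightarrow> (nat \<Rightarrow> (nat \<Rightarrow> 'a) measure) \<Rightarrow> (nat \<Rightarrow> (nat \<Rightarrow> 'a) measure)
    \<Rightarrow> (nat \<Rightarrow> (nat \<Rightarrow> nat \<Rightarrow> 'a) \<Rightarrow> bool) \<Rightarrow> nat set \<Rightarrow> real" where
  "FWE1 K P0 P1 D A = measure (P_A K P0 P1 A)
      {\<omega> \<in> space (P_A K P0 P1 A). \<exists>j\<in>{1..K} - A. D j \<omega>}"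

definition FWE2 :: "nat \<Rightarrow> (nat \<Rightarrow> (nat \<Rightarrow> 'a) measure) \<Rightarrow> (nat \<Rightarrow> (nat \<Rightarrow> 'a) measure)
    \<Rightarrow> (nat \<Rightarrow> (nat \<Rightarrow> nat \<Rightarrow> 'a) \<Rightarrow> bool) \<Rightarrow> nat set \<Rightarrow> real" where
  "FWE2 K P0 P1 D A = measure (P_A K P0 P1 A)
      {\<omega> \<in> space (P_A K P0 P1 A). \<exists>i\<in>A. \<not> D i \<omega>}"

definition error_ok :: "nat \<Rightarrow> (nat \<Rightarrow> (nat \<Rightarrow> 'a) measure) \<Rightarrow> (nat \<Rightarrow> (nat \<Rightarrow> 'a) measure)
    \<Rightarrow> (nat \<Rightarrow> (nat \<Rightarrow> nat \<Rightarrow> 'a) \<Rightarrow> bool) \<Rightarrow> real \<Rightarrow> real \<Rightarrow> nat set set \<Rightarrow> bool" where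
  "error_ok K P0 P1 D \<alpha> \<beta> Pis \<longleftrightarrow>
     (\<forall>A\<in>Pis. FWE1 K P0 P1 D A \<le> \<alpha> \<and> FWE2 K P0 P1 D A \<le> \<beta>)"

definition L_dec :: "nat \<Rightarrow> (nat \<Rightarrow> 'a measure) \<Rightarrow> (nat \<Rightarrow> (nat \<Rightarrow> 'a) measure) \<Rightarrow> (nat \<Rightarrow> (nat \<Rightarrow> 'a) measure)
    \<Rightarrow> nat \<Rightarrow> nat set \<Rightarrow> real \<Rightarrow> real \<Rightarrow> nat set set \<Rightarrow> ennreal" where
  "L_dec K M P0 P1 k A \<alpha> \<beta> Pis =
     (INF TD \<in> {(T, D). is_decentralized K M T D \<and> error_ok K P0 P1 D \<alpha> \<beta> Pis}.
        \<integral>\<^sup>+ \<omega>. ennreal (real (fst TD k \<omega>)) \<partial>(P_A K P0 P1 A))"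

text \<open>Parallel SPRT with thresholds a, b.  lam k n x is lambda_k(n) evaluated on the path x
of stream k.  The stopping time takes the value \<infinity> if the walk never leaves (-b, a).\<close>
definition sprt_T :: "(nat \<Rightarrow> nat \<Rightarrow> (nat \<Rightarrow> 'a) \<Rightarrow> real) \<Rightarrow> real \<Rightarrow> real \<Rightarrow> nat
    \<Rightarrow> (nat \<Rightarrow> nat \<Rightarrow> 'a) \<Rightarrow> enat" where
  "sprt_T lam a b k \<omega> =
     (if \<exists>n\<ge>1. lam k n (\<omega> k) \<notin> {-b<..<a}
      then enat (LEAST n. n \<ge> 1 \<and> lam k n (\<omega> k) \<notin> {-b<..<a}) else \<infinity>)"

definition sprt_D :: "(nat \<Rightarrow> nat \<Rightarrow> (nat \<Rightarrow> 'a) \<Rightarrow> real) \<Rightarrow> real \<Rightarrow> real \<Rightarrow> nat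
    \<Rightarrow> (nat \<Rightarrow> nat \<Rightarrow> 'a) \<Rightarrow> bool" where
  "sprt_D lam a b k \<omega> =
     (case sprt_T lam a b k \<omega> of enat n \<Rightarrow> a \<le> lam k n (\<omega> k) | \<infinity> \<Rightarrow> False)"

definition E_sprt_T :: "nat \<Rightarrow> (nat \<Rightarrow> (nat \<Rightarrow> 'a) measure) \<Rightarrow> (nat \<Rightarrow> (nat \<Rightarrow> 'a) measure)
    \<Rightarrow> (nat \<Rightarrow> nat \<Rightarrow> (nat \<Rightarrow> 'a) \<Rightarrow> real) \<Rightarrow> real \<Rightarrow> real \<Rightarrow> nat \<Rightarrow> nat set \<Rightarrow> ennreal" where
  "E_sprt_T K P0 P1 lam a b k A =
     (\<integral>\<^sup>+ \<omega>. ennreal_of_enat (sprt_T lam a b k \<omega>) \<partial>(P_A K P0 P1 A))"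

definition ab_to_0 :: "(real \<times> real) filter" where
  "ab_to_0 = at (0, 0) within ({0<..<1} \<times> {0<..<1})"

end

theory Submission
  imports Defs
begin

lemma pre_sigma_bool_meas:
  fixes T :: "'b \<Rightarrow> nat" and F :: "nat \<Rightarrow> 'b measure"
  assumes filt: "filtration \<Omega> F" and sp: "\<And>t. space (F t) = \<Omega>"
    and d1: "\<And>t. {\<omega>\<in>\<Omega>. D \<omega> \<and> T \<omega> \<le> t} \<in> sets (F t)"
    and d2: "\<And>t. {\<omega>\<in>\<Omega>. \<not> D \<omega> \<and> T \<omega> \<le> t} \<in> sets (F t)"
  shows "D \<in> measurable (filtration.pre_sigma \<Omega> F T) (count_space UNIV)"
proof -
  define G where "G = {A. \<forall>t. {\<omega>\<in>A. T \<omega> \<le> t} \<in> sets (F t)}"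
  have GP: "G \<subseteq> Pow \<Omega>"
  proof
    fix A assume "A \<in> G"
    show "A \<in> Pow \<Omega>" unfolding Pow_iff
    proof
      fix w assume "w \<in> A"
      have "\<forall>t. {\<omega>\<in>A. T \<omega> \<le> t} \<in> sets (F t)" using \<open>A \<in> G\<close> unfolding G_def by blast
      then have "{\<omega>\<in>A. T \<omega> \<le> T w} \<in> sets (F (T w))" by blast
      from sets.sets_into_space[OF this] have "{\<omega>\<in>A. T \<omega> \<le> T w} \<subseteq> \<Omega>" using sp by simp
      then show "w \<in> \<Omega>" using \<open>w \<in> A\<close> by blast
    qed
  qed
  have ps: "filtration.pre_sigma \<Omega> F T = sigma \<Omega> G"
    unfolding filtration.pre_sigma_def[OF filt] G_def by simp
  have spc: "space (sigma \<Omega> G) = \<Omega>" using GP by simp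
  have sts: "sets (sigma \<Omega> G) = sigma_sets \<Omega> G" using GP by simp
  have i1: "{\<omega>\<in>\<Omega>. D \<omega>} \<in> G" unfolding G_def
  proof (intro CollectI allI)
    fix t have "{\<omega> \<in> {\<omega> \<in> \<Omega>. D \<omega>}. T \<omega> \<le> t} = {\<omega>\<in>\<Omega>. D \<omega> \<and> T \<omega> \<le> t}" by blast
    then show "{\<omega> \<in> {\<omega> \<in> \<Omega>. D \<omega>}. T \<omega> \<le> t} \<in> sets (F t)" using d1 by simp
  qed
  have i2: "{\<omega>\<in>\<Omega>. \<not> D \<omega>} \<in> G" unfolding G_def
  proof (intro CollectI allI)
    fix t have "{\<omega> \<in> {\<omega> \<in> \<Omega>. \<not> D \<omega>}. T \<omega> \<le> t} = {\<omega>\<in>\<Omega>. \<not> D \<omega> \<and> T \<omega> \<le> t}" by blast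
    then show "{\<omega> \<in> {\<omega> \<in> \<Omega>. \<not> D \<omega>}. T \<omega> \<le> t} \<in> sets (F t)" using d2 by simp
  qed
  show ?thesis unfolding ps
  proof (subst measurable_count_space_eq2_countable, intro conjI ballI)
    show "D \<in> space (sigma \<Omega> G) \<rightarrow> UNIV" by simp
    fix x :: bool
    show "D -` {x} \<inter> space (sigma \<Omega> G) \<in> sets (sigma \<Omega> G)"
    proof (cases x)
      case True
      then have "D -` {x} \<inter> space (sigma \<Omega> G) = {\<omega>\<in>\<Omega>. D \<omega>}" using spc by auto
      then show ?thesis using i1 sts by auto
    next
      case False
      then have "D -` {x} \<inter> space (sigma \<Omega> G) = {\<omega>\<in>\<Omega>. \<not> D \<omega>}" using spc by auto
      then show ?thesis using i2 sts by auto
    qed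
  qed
qed

lemma pre_sigma_bool_inv:
  fixes T :: "'b \<Rightarrow> nat" and F :: "nat \<Rightarrow> 'b measure"
  assumes filt: "filtration \<Omega> F" and st: "stopping_time F T"
    and D: "D \<in> measurable (filtration.pre_sigma \<Omega> F T) (count_space UNIV)"
  shows "{\<omega>\<in>\<Omega>. T \<omega> = n \<and> D \<omega>} \<in> sets (F n)"
proof -
  interpret filtration \<Omega> F by (rule filt)
  have "D -` {True} \<inter> space (pre_sigma T) \<in> sets (pre_sigma T)"
    using D by (auto simp: measurable_def)
  then have A: "{\<omega>\<in>\<Omega>. D \<omega>} \<in> sets (pre_sigma T)"
  proof -
    have "D -` {True} \<inter> space (pre_sigma T) = {\<omega>\<in>\<Omega>. D \<omega>}" by (auto simp: space_pre_sigma)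
    then show ?thesis using \<open>D -` {True} \<inter> space (pre_sigma T) \<in> sets (pre_sigma T)\<close> by simp
  qed
  have s1: "{\<omega>\<in>{\<omega>\<in>\<Omega>. D \<omega>}. T \<omega> \<le> n} \<in> sets (F n)" by (rule sets_pre_sigmaD[OF st A])
  show ?thesis
  proof (cases n)
    case 0
    have "{\<omega>\<in>\<Omega>. T \<omega> = n \<and> D \<omega>} = {\<omega>\<in>{\<omega>\<in>\<Omega>. D \<omega>}. T \<omega> \<le> n}" using 0 by auto
    then show ?thesis using s1 by simp
  next
    case (Suc m)
    have s2: "{\<omega>\<in>{\<omega>\<in>\<Omega>. D \<omega>}. T \<omega> \<le> m} \<in> sets (F m)" by (rule sets_pre_sigmaD[OF st A])
    have "sets (F m) \<subseteq> sets (F n)" using sets_F_mono Suc by simp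
    with s2 have s2': "{\<omega>\<in>{\<omega>\<in>\<Omega>. D \<omega>}. T \<omega> \<le> m} \<in> sets (F n)" by auto
    have "{\<omega>\<in>\<Omega>. T \<omega> = n \<and> D \<omega>} = {\<omega>\<in>{\<omega>\<in>\<Omega>. D \<omega>}. T \<omega> \<le> n} - {\<omega>\<in>{\<omega>\<in>\<Omega>. D \<omega>}. T \<omega> \<le> m}"
      using Suc by auto
    then show ?thesis using s1 s2' by auto
  qed
qed

lemma vimage_sets_sub:
  assumes f: "f \<in> measurable N P" and X: "X = space N"
  shows "sets (vimage_algebra X f P) \<subseteq> sets N"
proof -
  have fX: "f \<in> X \<rightarrow> space P" using f X by (auto simp: measurable_def)
  show ?thesis
    unfolding sets_vimage_algebra2[OF fX] using f X by (auto intro: measurable_sets)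
qed

locale setting =
  fixes K :: nat and M :: "nat \<Rightarrow> 'a measure"
    and P0 P1 :: "nat \<Rightarrow> (nat \<Rightarrow> 'a) measure"
    and lam :: "nat \<Rightarrow> nat \<Rightarrow> (nat \<Rightarrow> 'a) \<Rightarrow> real"
  assumes P0: "\<And>k. k \<in> {1..K} \<Longrightarrow> prob_space (P0 k) \<and> sets (P0 k) = sets (path_space (M k))"
    and P1: "\<And>k. k \<in> {1..K} \<Longrightarrow> prob_space (P1 k) \<and> sets (P1 k) = sets (path_space (M k))"
    and lam_meas: "\<And>k n. k \<in> {1..K} \<Longrightarrow> n \<ge> 1 \<Longrightarrow>
        lam k n \<in> borel_measurable (stream_filt (M k) n)"
    and lam_llr: "\<And>k n. k \<in> {1..K} \<Longrightarrow> n \<ge> 1 \<Longrightarrow>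
        density (restr_to_subalg (P0 k) (stream_filt (M k) n)) (\<lambda>x. ennreal (exp (lam k n x)))
          = restr_to_subalg (P1 k) (stream_filt (M k) n)"
begin

definition Om where "Om = space (joint_space K M)"
definition Q where "Q A k = (if k \<in> A then P1 k else P0 k)"
abbreviation PA where "PA A \<equiv> P_A K P0 P1 A"

lemma PA_eq: "PA A = PiM {1..K} (Q A)"
  unfolding P_A_def Q_def by simp

lemma Q_prob: "k \<in> {1..K} \<Longrightarrow> prob_space (Q A k)"
  using P0 P1 unfolding Q_def by auto

lemma Q_sets: "k \<in> {1..K} \<Longrightarrow> sets (Q A k) = sets (path_space (M k))"
  using P0 P1 unfolding Q_def by auto

lemma Q_space: "k \<in> {1..K} \<Longrightarrow> space (Q A k) = space (path_space (M k))"
  using Q_sets by (rule sets_eq_imp_space_eq)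

lemma PA_prob: "prob_space (PA A)"
  unfolding PA_eq by (rule prob_space_PiM) (rule Q_prob)

lemma PA_sets: "sets (PA A) = sets (joint_space K M)"
  unfolding PA_eq joint_space_def by (rule sets_PiM_cong) (auto simp: Q_sets)

lemma PA_space: "space (PA A) = Om"
  unfolding Om_def using PA_sets by (rule sets_eq_imp_space_eq)

lemma Om_comp: "\<omega> \<in> Om \<Longrightarrow> k \<in> {1..K} \<Longrightarrow> \<omega> k \<in> space (path_space (M k))"
  unfolding Om_def joint_space_def by (auto simp: space_PiM)

lemma path_space_space: "space (path_space S) = (\<Pi>\<^sub>E i\<in>{1..}. space S)"
  unfolding path_space_def by (simp add: space_PiM)

lemma comp_meas: "k \<in> {1..K} \<Longrightarrow> (\<lambda>\<omega>. \<omega> k) \<in> measurable (PA A) (Q A k)"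
  unfolding PA_eq by (rule measurable_component_singleton) simp

lemma comp_distr: "k \<in> {1..K} \<Longrightarrow> distr (PA A) (Q A k) (\<lambda>\<omega>. \<omega> k) = Q A k"
  unfolding PA_eq by (rule distr_PiM_component) (auto intro: Q_prob)

lemma restr_meas_path: "(\<lambda>x. restrict x {1..n}) \<in> measurable (path_space S) (PiM {1..n} (\<lambda>_. S))"
  unfolding path_space_def by (rule measurable_restrict_subset) auto

lemma stream_filt_sets: "sets (stream_filt S n) \<subseteq> sets (path_space S)"
  unfolding stream_filt_def by (rule vimage_sets_sub[OF restr_meas_path]) simp

lemma stream_filt_space: "space (stream_filt S n) = space (path_space S)"
  unfolding stream_filt_def by simp

lemma subalg1: "k \<in> {1..K} \<Longrightarrow> subalgebra (P1 k) (stream_filt (M k) n)"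
  unfolding subalgebra_def using P1[of k] stream_filt_sets[of "M k" n] stream_filt_space[of "M k" n]
    sets_eq_imp_space_eq[of "P1 k" "path_space (M k)"] by auto

lemma subalg0: "k \<in> {1..K} \<Longrightarrow> subalgebra (P0 k) (stream_filt (M k) n)"
  unfolding subalgebra_def using P0[of k] stream_filt_sets[of "M k" n] stream_filt_space[of "M k" n]
    sets_eq_imp_space_eq[of "P0 k" "path_space (M k)"] by auto

lemma local_space: "space (local_filt K M k t) = Om"
  unfolding local_filt_def Om_def by simp

lemma global_space: "space (global_filt K M t) = Om"
  unfolding global_filt_def Om_def by simp

lemma rt_into: "k \<in> {1..K} \<Longrightarrow> (\<lambda>\<omega>. restrict (\<omega> k) {1..t}) \<in> Om \<rightarrow> space (PiM {1..t} (\<lambda>_. M k))"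
proof
  fix \<omega> assume "\<omega> \<in> Om" "k \<in> {1..K}"
  then have "\<omega> k \<in> (\<Pi>\<^sub>E i\<in>{1..}. space (M k))" using Om_comp path_space_space by metis
  then show "restrict (\<omega> k) {1..t} \<in> space (PiM {1..t} (\<lambda>_. M k))"
    by (auto simp: space_PiM PiE_iff)
qed

lemma rt_meas_local: "k \<in> {1..K} \<Longrightarrow> (\<lambda>\<omega>. restrict (\<omega> k) {1..t}) \<in> measurable (local_filt K M k t) (PiM {1..t} (\<lambda>_. M k))"
  unfolding local_filt_def Om_def[symmetric] by (rule measurable_vimage_algebra1) (rule rt_into)

lemma rn_meas_local:
  assumes k: "k \<in> {1..K}" and nt: "n \<le> t"
  shows "(\<lambda>\<omega>. restrict (\<omega> k) {1..n}) \<in> measurable (local_filt K M k t) (PiM {1..n} (\<lambda>_. M k))"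
proof -
  have m: "(\<lambda>x. restrict x {1..n}) \<circ> (\<lambda>\<omega>. restrict (\<omega> k) {1..t}) \<in> measurable (local_filt K M k t) (PiM {1..n} (\<lambda>_. M k))"
    by (rule measurable_comp[OF rt_meas_local[OF k] measurable_restrict_subset]) (use nt in auto)
  have eq: "(\<lambda>x. restrict x {1..n}) \<circ> (\<lambda>\<omega>. restrict (\<omega> k) {1..t}) = (\<lambda>\<omega>. restrict (\<omega> k) {1..n})"
    using nt by (auto simp: fun_eq_iff restrict_def)
  show ?thesis using m unfolding eq .
qed

lemma comp_meas_local:
  assumes k: "k \<in> {1..K}" and nt: "n \<le> t"
  shows "(\<lambda>\<omega>. \<omega> k) \<in> measurable (local_filt K M k t) (stream_filt (M k) n)"
  unfolding stream_filt_def
proof (rule measurable_vimage_algebra2)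
  show "(\<lambda>\<omega>. \<omega> k) \<in> space (local_filt K M k t) \<rightarrow> space (path_space (M k))"
    using Om_comp k by (auto simp: local_space)
  show "(\<lambda>x. restrict (x k) {1..n}) \<in> measurable (local_filt K M k t) (PiM {1..n} (\<lambda>_. M k))"
    by (rule rn_meas_local[OF k nt])
qed

lemma lam_meas_local:
  assumes k: "k \<in> {1..K}" and n: "1 \<le> n" "n \<le> t"
  shows "(\<lambda>\<omega>. lam k n (\<omega> k)) \<in> borel_measurable (local_filt K M k t)"
  using measurable_comp[OF comp_meas_local[OF k n(2)] lam_meas[OF k n(1)]] by (simp add: comp_def)

lemma local_mono:
  assumes k: "k \<in> {1..K}" and tt: "t \<le> t'"
  shows "sets (local_filt K M k t) \<subseteq> sets (local_filt K M k t')"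
  unfolding local_filt_def[of K M k t] Om_def[symmetric]
  by (rule vimage_sets_sub[OF rn_meas_local[OF k tt]]) (simp add: local_space)

lemma local_filtration: "k \<in> {1..K} \<Longrightarrow> filtration Om (local_filt K M k)"
  by unfold_locales (auto simp: local_space local_mono)

lemma joint_comp_meas: "k \<in> {1..K} \<Longrightarrow> (\<lambda>\<omega>. \<omega> k) \<in> measurable (joint_space K M) (path_space (M k))"
  unfolding joint_space_def by (rule measurable_component_singleton) simp

lemma local_sub_joint:
  assumes k: "k \<in> {1..K}"
  shows "sets (local_filt K M k t) \<subseteq> sets (joint_space K M)"
proof -
  have "(\<lambda>x. restrict x {1..t}) \<circ> (\<lambda>\<omega>. \<omega> k) \<in> measurable (joint_space K M) (PiM {1..t} (\<lambda>_. M k))"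
    by (rule measurable_comp[OF joint_comp_meas[OF k] restr_meas_path])
  then have "(\<lambda>\<omega>. restrict (\<omega> k) {1..t}) \<in> measurable (joint_space K M) (PiM {1..t} (\<lambda>_. M k))"
    by (simp add: comp_def)
  then show ?thesis
    unfolding local_filt_def by (rule vimage_sets_sub) simp
qed

lemma global_map_meas:
  "(\<lambda>\<omega>. \<lambda>k\<in>{1..K}. restrict (\<omega> k) {1..t}) \<in> measurable (global_filt K M t) (PiM {1..K} (\<lambda>k. PiM {1..t} (\<lambda>_. M k)))"
  unfolding global_filt_def
proof (rule measurable_vimage_algebra1)
  show "(\<lambda>\<omega>. \<lambda>k\<in>{1..K}. restrict (\<omega> k) {1..t}) \<in> space (joint_space K M) \<rightarrow> space (PiM {1..K} (\<lambda>k. PiM {1..t} (\<lambda>_. M k)))"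
    using rt_into unfolding Om_def by (force simp: space_PiM)
qed

lemma local_sub_global:
  assumes k: "k \<in> {1..K}"
  shows "sets (local_filt K M k t) \<subseteq> sets (global_filt K M t)"
proof -
  have m: "(\<lambda>y. y k) \<circ> (\<lambda>\<omega>. \<lambda>k\<in>{1..K}. restrict (\<omega> k) {1..t}) \<in> measurable (global_filt K M t) (PiM {1..t} (\<lambda>_. M k))"
    by (rule measurable_comp[OF global_map_meas measurable_component_singleton]) (use k in simp)
  have eq: "(\<lambda>y. y k) \<circ> (\<lambda>\<omega>. \<lambda>k\<in>{1..K}. restrict (\<omega> k) {1..t}) = (\<lambda>\<omega>. restrict (\<omega> k) {1..t})"
    using k by (auto simp: fun_eq_iff)
  have "(\<lambda>\<omega>. restrict (\<omega> k) {1..t}) \<in> measurable (global_filt K M t) (PiM {1..t} (\<lambda>_. M k))" using m unfolding eq .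
  then show ?thesis
    unfolding local_filt_def Om_def[symmetric] by (rule vimage_sets_sub) (auto simp: global_space)
qed

lemma global_mono:
  assumes tt: "t \<le> t'"
  shows "sets (global_filt K M t) \<subseteq> sets (global_filt K M t')"
proof -
  have m: "(\<lambda>y. \<lambda>k\<in>{1..K}. restrict (y k) {1..t}) \<circ> (\<lambda>\<omega>. \<lambda>k\<in>{1..K}. restrict (\<omega> k) {1..t'})
      \<in> measurable (global_filt K M t') (PiM {1..K} (\<lambda>k. PiM {1..t} (\<lambda>_. M k)))"
  proof (rule measurable_comp[OF global_map_meas])
    show "(\<lambda>y. \<lambda>k\<in>{1..K}. restrict (y k) {1..t}) \<in> measurable (PiM {1..K} (\<lambda>k. PiM {1..t'} (\<lambda>_. M k))) (PiM {1..K} (\<lambda>k. PiM {1..t} (\<lambda>_. M k)))"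
    proof (rule measurable_restrict)
      fix i assume i: "i \<in> {1..K}"
      show "(\<lambda>y. restrict (y i) {1..t}) \<in> measurable (PiM {1..K} (\<lambda>k. PiM {1..t'} (\<lambda>_. M k))) (PiM {1..t} (\<lambda>_. M i))"
        using measurable_comp[OF measurable_component_singleton[OF i, of "\<lambda>k. PiM {1..t'} (\<lambda>_. M k)"]
            measurable_restrict_subset[of "{1..t}" "{1..t'}" "\<lambda>_. M i"]] tt
        by (simp add: comp_def)
    qed
  qed
  have eq: "(\<lambda>y. \<lambda>k\<in>{1..K}. restrict (y k) {1..t}) \<circ> (\<lambda>\<omega>. \<lambda>k\<in>{1..K}. restrict (\<omega> k) {1..t'})
      = (\<lambda>\<omega>. \<lambda>k\<in>{1..K}. restrict (\<omega> k) {1..t})"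
    using tt by (auto simp: fun_eq_iff restrict_def)
  have "(\<lambda>\<omega>. \<lambda>k\<in>{1..K}. restrict (\<omega> k) {1..t}) \<in> measurable (global_filt K M t') (PiM {1..K} (\<lambda>k. PiM {1..t} (\<lambda>_. M k)))" using m unfolding eq .
  then show ?thesis
    unfolding global_filt_def[of K M t] Om_def[symmetric] by (rule vimage_sets_sub) (auto simp: global_space)
qed

lemma global_filtration: "filtration Om (global_filt K M)"
  by unfold_locales (auto simp: global_space global_mono)

end

context setting begin

lemma subalgQ: "k \<in> {1..K} \<Longrightarrow> subalgebra (Q A k) (stream_filt (M k) n)"
  unfolding Q_def using subalg0 subalg1 by auto

lemma CM1:
  assumes k: "k \<in> {1..K}" and n: "n \<ge> 1" and S: "S \<in> sets (stream_filt (M k) n)"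
  shows "emeasure (P1 k) S = (\<integral>\<^sup>+x. ennreal (exp (lam k n x)) * indicator S x \<partial>P0 k)"
proof -
  note lm[measurable] = lam_meas[OF k n]
  note S[measurable]
  have f: "(\<lambda>x. ennreal (exp (lam k n x))) \<in> borel_measurable (stream_filt (M k) n)" by measurable
  have fi: "(\<lambda>x. ennreal (exp (lam k n x)) * indicator S x) \<in> borel_measurable (stream_filt (M k) n)" by measurable
  have "emeasure (P1 k) S = emeasure (restr_to_subalg (P1 k) (stream_filt (M k) n)) S"
    by (rule emeasure_restr_to_subalg[symmetric, OF subalg1[OF k] S])
  also have "\<dots> = emeasure (density (restr_to_subalg (P0 k) (stream_filt (M k) n)) (\<lambda>x. ennreal (exp (lam k n x)))) S"
    using lam_llr[OF k n] by simp
  also have "\<dots> = (\<integral>\<^sup>+x. ennreal (exp (lam k n x)) * indicator S x \<partial>restr_to_subalg (P0 k) (stream_filt (M k) n))"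
    by (rule emeasure_density[OF measurable_in_subalg[OF subalg0[OF k] f]]) (simp add: sets_restr_to_subalg[OF subalg0[OF k]] S)
  also have "\<dots> = (\<integral>\<^sup>+x. ennreal (exp (lam k n x)) * indicator S x \<partial>P0 k)"
    by (rule nn_integral_subalgebra2[OF subalg0[OF k] fi])
  finally show ?thesis .
qed

lemma CM0:
  assumes k: "k \<in> {1..K}" and n: "n \<ge> 1" and S: "S \<in> sets (stream_filt (M k) n)"
  shows "emeasure (P0 k) S = (\<integral>\<^sup>+x. ennreal (exp (- lam k n x)) * indicator S x \<partial>P1 k)"
proof -
  note lm[measurable] = lam_meas[OF k n]
  note S[measurable]
  have f: "(\<lambda>x. ennreal (exp (lam k n x))) \<in> borel_measurable (stream_filt (M k) n)" by measurable
  have gi: "(\<lambda>x. ennreal (exp (- lam k n x)) * indicator S x) \<in> borel_measurable (stream_filt (M k) n)" by measurable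
  have "(\<integral>\<^sup>+x. ennreal (exp (- lam k n x)) * indicator S x \<partial>P1 k)
      = (\<integral>\<^sup>+x. ennreal (exp (- lam k n x)) * indicator S x \<partial>restr_to_subalg (P1 k) (stream_filt (M k) n))"
    by (rule nn_integral_subalgebra2[OF subalg1[OF k] gi, symmetric])
  also have "\<dots> = (\<integral>\<^sup>+x. ennreal (exp (- lam k n x)) * indicator S x \<partial>density (restr_to_subalg (P0 k) (stream_filt (M k) n)) (\<lambda>x. ennreal (exp (lam k n x))))"
    using lam_llr[OF k n] by simp
  also have "\<dots> = (\<integral>\<^sup>+x. ennreal (exp (lam k n x)) * (ennreal (exp (- lam k n x)) * indicator S x) \<partial>restr_to_subalg (P0 k) (stream_filt (M k) n))"
    by (rule nn_integral_density[OF measurable_in_subalg[OF subalg0[OF k] f] measurable_in_subalg[OF subalg0[OF k] gi]])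
  also have "\<dots> = (\<integral>\<^sup>+x. indicator S x \<partial>restr_to_subalg (P0 k) (stream_filt (M k) n))"
  proof (rule nn_integral_cong)
    fix x
    have "ennreal (exp (lam k n x)) * ennreal (exp (- lam k n x)) = ennreal (exp (lam k n x) * exp (- lam k n x))"
      by (simp add: ennreal_mult)
    also have "\<dots> = 1" by (simp add: exp_minus)
    finally show "ennreal (exp (lam k n x)) * (ennreal (exp (- lam k n x)) * indicator S x) = indicator S x"
      by (metis mult.assoc mult_1)
  qed
  also have "\<dots> = emeasure (restr_to_subalg (P0 k) (stream_filt (M k) n)) S"
    by (rule nn_integral_indicator) (simp add: sets_restr_to_subalg[OF subalg0[OF k]] S)
  also have "\<dots> = emeasure (P0 k) S"
    by (rule emeasure_restr_to_subalg[OF subalg0[OF k] S])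
  finally show ?thesis by simp
qed

lemma JCM_gen:
  assumes k: "k \<in> {1..K}"
    and g: "g \<in> borel_measurable (stream_filt (M k) n)"
    and cm: "\<And>S. S \<in> sets (stream_filt (M k) n) \<Longrightarrow> emeasure (Q A k) S = (\<integral>\<^sup>+x. g x * indicator S x \<partial>Q B k)"
    and E: "E \<in> sets (local_filt K M k n)"
  shows "emeasure (PA A) E = (\<integral>\<^sup>+\<omega>. g (\<omega> k) * indicator E \<omega> \<partial>PA B)"
proof -
  have "E \<in> {(\<lambda>\<omega>. restrict (\<omega> k) {1..n}) -` S0 \<inter> Om | S0. S0 \<in> sets (PiM {1..n} (\<lambda>_. M k))}"
    using E unfolding local_filt_def Om_def[symmetric] sets_vimage_algebra2[OF rt_into[OF k]] .
  then obtain S0 where S0: "S0 \<in> sets (PiM {1..n} (\<lambda>_. M k))" and ES0: "E = (\<lambda>\<omega>. restrict (\<omega> k) {1..n}) -` S0 \<inter> Om"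
    by blast
  define S where "S = (\<lambda>x. restrict x {1..n}) -` S0 \<inter> space (path_space (M k))"
  have Ssf: "S \<in> sets (stream_filt (M k) n)"
    unfolding S_def stream_filt_def by (rule in_vimage_algebra[OF S0])
  have SQ: "S \<in> sets (Q C k)" for C
    using Ssf stream_filt_sets Q_sets[OF k] by auto
  have ES: "E = (\<lambda>\<omega>. \<omega> k) -` S \<inter> Om"
    unfolding ES0 S_def using Om_comp[OF _ k] by auto
  have gQ: "g \<in> borel_measurable (Q B k)" by (rule measurable_from_subalg[OF subalgQ[OF k] g])
  have giQ: "(\<lambda>x. g x * indicator S x) \<in> borel_measurable (Q B k)"
    using gQ SQ by measurable
  have "emeasure (PA A) E = emeasure (PA A) ((\<lambda>\<omega>. \<omega> k) -` S \<inter> space (PA A))"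
    unfolding ES PA_space ..
  also have "\<dots> = emeasure (distr (PA A) (Q A k) (\<lambda>\<omega>. \<omega> k)) S"
    by (rule emeasure_distr[symmetric, OF comp_meas[OF k] SQ])
  also have "\<dots> = emeasure (Q A k) S" unfolding comp_distr[OF k] ..
  also have "\<dots> = (\<integral>\<^sup>+x. g x * indicator S x \<partial>Q B k)" by (rule cm[OF Ssf])
  also have "\<dots> = (\<integral>\<^sup>+x. g x * indicator S x \<partial>distr (PA B) (Q B k) (\<lambda>\<omega>. \<omega> k))"
    unfolding comp_distr[OF k] ..
  also have "\<dots> = (\<integral>\<^sup>+\<omega>. g (\<omega> k) * indicator S (\<omega> k) \<partial>PA B)"
    by (rule nn_integral_distr[OF comp_meas[OF k]]) (simp add: comp_distr[OF k] giQ)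
  also have "\<dots> = (\<integral>\<^sup>+\<omega>. g (\<omega> k) * indicator E \<omega> \<partial>PA B)"
    by (rule nn_integral_cong) (auto simp: ES PA_space indicator_def)
  finally show ?thesis .
qed

lemma JCM1:
  assumes k: "k \<in> {1..K}" and n: "n \<ge> 1" and kA: "k \<in> A" and kB: "k \<notin> B"
    and E: "E \<in> sets (local_filt K M k n)"
  shows "emeasure (PA A) E = (\<integral>\<^sup>+\<omega>. ennreal (exp (lam k n (\<omega> k))) * indicator E \<omega> \<partial>PA B)"
proof (rule JCM_gen[OF k _ _ E])
  note lm[measurable] = lam_meas[OF k n]
  show "(\<lambda>x. ennreal (exp (lam k n x))) \<in> borel_measurable (stream_filt (M k) n)" by measurable
  fix S assume "S \<in> sets (stream_filt (M k) n)"
  then show "emeasure (Q A k) S = (\<integral>\<^sup>+x. ennreal (exp (lam k n x)) * indicator S x \<partial>Q B k)"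
    using CM1[OF k n] kA kB by (simp add: Q_def)
qed

lemma JCM0:
  assumes k: "k \<in> {1..K}" and n: "n \<ge> 1" and kA: "k \<notin> A" and kB: "k \<in> B"
    and E: "E \<in> sets (local_filt K M k n)"
  shows "emeasure (PA A) E = (\<integral>\<^sup>+\<omega>. ennreal (exp (- lam k n (\<omega> k))) * indicator E \<omega> \<partial>PA B)"
proof (rule JCM_gen[OF k _ _ E])
  note lm[measurable] = lam_meas[OF k n]
  show "(\<lambda>x. ennreal (exp (- lam k n x))) \<in> borel_measurable (stream_filt (M k) n)" by measurable
  fix S assume "S \<in> sets (stream_filt (M k) n)"
  then show "emeasure (Q A k) S = (\<integral>\<^sup>+x. ennreal (exp (- lam k n x)) * indicator S x \<partial>Q B k)"
    using CM0[OF k n] kA kB by (simp add: Q_def)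
qed

lemma lam_meas_PA:
  assumes k: "k \<in> {1..K}" and n: "n \<ge> 1"
  shows "(\<lambda>\<omega>. lam k n (\<omega> k)) \<in> borel_measurable (PA A)"
proof -
  have "(\<lambda>\<omega>. lam k n (\<omega> k)) \<in> borel_measurable (local_filt K M k n)" by (rule lam_meas_local[OF k n order_refl])
  then show ?thesis
    using local_sub_joint[OF k] by (auto simp: measurable_def PA_space local_space PA_sets)
qed

lemma set_PA_measure:
  assumes k: "k \<in> {1..K}" and S: "S \<in> sets (path_space (M k))"
  shows "emeasure (PA A) {\<omega>\<in>Om. \<omega> k \<in> S} = emeasure (Q A k) S"
proof -
  have SQ: "S \<in> sets (Q A k)" using S Q_sets[OF k] by simp
  have "{\<omega>\<in>Om. \<omega> k \<in> S} = (\<lambda>\<omega>. \<omega> k) -` S \<inter> space (PA A)" by (auto simp: PA_space)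
  also have "emeasure (PA A) \<dots> = emeasure (distr (PA A) (Q A k) (\<lambda>\<omega>. \<omega> k)) S"
    by (rule emeasure_distr[symmetric, OF comp_meas[OF k] SQ])
  finally show ?thesis unfolding comp_distr[OF k] .
qed

lemma AE_PA:
  assumes k: "k \<in> {1..K}" and ae: "AE x in Q A k. P x"
  shows "AE \<omega> in PA A. P (\<omega> k)"
  unfolding PA_eq by (rule AE_PiM_component[OF _ k]) (auto intro: Q_prob simp: ae)

end

lemma LB_core:
  fixes PA PB :: "'b measure" and G :: "nat \<Rightarrow> 'b measure" and \<Lambda> :: "nat \<Rightarrow> 'b \<Rightarrow> real"
    and T :: "'b \<Rightarrow> enat" and D :: "'b \<Rightarrow> bool"
  assumes pA: "prob_space PA" and pB: "prob_space PB" and sPB: "sets PB = sets PA"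
    and Gsp: "\<And>n. space (G n) = space PA" and Gsub: "\<And>n. sets (G n) \<subseteq> sets PA"
    and \<Lambda>m: "\<And>n. n \<ge> 1 \<Longrightarrow> \<Lambda> n \<in> borel_measurable (G n)"
    and cm: "\<And>n E. n \<ge> 1 \<Longrightarrow> E \<in> sets (G n) \<Longrightarrow> emeasure PA E = (\<integral>\<^sup>+\<omega>. ennreal (exp (\<Lambda> n \<omega>)) * indicator E \<omega> \<partial>PB)"
    and T0: "\<forall>\<omega>\<in>space PA. T \<omega> \<noteq> 0"
    and TD: "\<And>n. n \<ge> 1 \<Longrightarrow> {\<omega>\<in>space PA. T \<omega> = enat n \<and> D \<omega>} \<in> sets (G n)"
    and Dm: "{\<omega>\<in>space PA. D \<omega>} \<in> sets PA"
    and D\<alpha>: "measure PB {\<omega>\<in>space PB. D \<omega>} \<le> \<alpha>"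
    and D\<beta>: "measure PA {\<omega>\<in>space PA. \<not> D \<omega>} \<le> \<beta>"
  shows "ennreal (real N * (1 - \<beta> - exp c * \<alpha> - measure PA {\<omega>\<in>space PA. \<exists>n\<in>{1..N}. c \<le> \<Lambda> n \<omega>}))
     \<le> (\<integral>\<^sup>+\<omega>. ennreal_of_enat (T \<omega>) \<partial>PA)"
proof -
  interpret A: prob_space PA by (rule pA)
  interpret B: prob_space PB by (rule pB)
  have spB: "space PB = space PA" by (rule sets_eq_imp_space_eq[OF sPB])
  have \<alpha>0: "0 \<le> \<alpha>" using D\<alpha> measure_nonneg order_trans by blast
  define H where "H n = {\<omega>\<in>space PA. T \<omega> = enat n \<and> D \<omega>}" for n
  define F where "F n = {\<omega>\<in>space PA. T \<omega> = enat n \<and> D \<omega> \<and> \<Lambda> n \<omega> < c}" for n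
  define Bc where "Bc = {\<omega>\<in>space PA. \<exists>n\<in>{1..N}. c \<le> \<Lambda> n \<omega>}"
  define S where "S = {\<omega>\<in>space PA. \<not> D \<omega>} \<union> (\<Union>n\<in>{1..N}. H n)"
  have subalg: "subalgebra PA (G n)" for n using Gsp Gsub by (auto simp: subalgebra_def)
  have \<Lambda>mA: "n \<ge> 1 \<Longrightarrow> \<Lambda> n \<in> borel_measurable PA" for n
    by (rule measurable_from_subalg[OF subalg \<Lambda>m])
  have HG: "n \<ge> 1 \<Longrightarrow> H n \<in> sets (G n)" for n unfolding H_def by (rule TD)
  have Hm: "n \<ge> 1 \<Longrightarrow> H n \<in> sets PA" for n using HG Gsub by blast
  have FG: "n \<ge> 1 \<Longrightarrow> F n \<in> sets (G n)" for n
  proof -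
    assume n: "n \<ge> 1"
    have "{\<omega>\<in>space (G n). \<Lambda> n \<omega> < c} \<in> sets (G n)"
      using \<Lambda>m[OF n] by measurable
    then have "H n \<inter> {\<omega>\<in>space (G n). \<Lambda> n \<omega> < c} \<in> sets (G n)" using HG[OF n] by blast
    moreover have "F n = H n \<inter> {\<omega>\<in>space (G n). \<Lambda> n \<omega> < c}" unfolding F_def H_def Gsp by blast
    ultimately show ?thesis by simp
  qed
  have Fm: "n \<ge> 1 \<Longrightarrow> F n \<in> sets PA" for n using FG Gsub by blast
  have Bm: "Bc \<in> sets PA"
  proof -
    have "Bc = (\<Union>n\<in>{1..N}. {\<omega>\<in>space PA. c \<le> \<Lambda> n \<omega>})" unfolding Bc_def by blast
    moreover have "{\<omega>\<in>space PA. c \<le> \<Lambda> n \<omega>} \<in> sets PA" if "n \<in> {1..N}" for n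
    proof -
      have "n \<ge> 1" using that by simp
      note \<Lambda>mA[OF this, measurable]
      show ?thesis by measurable
    qed
    ultimately show ?thesis by auto
  qed
  have UFm: "(\<Union>n\<in>{1..N}. F n) \<in> sets PA" using Fm by auto
  have UHm: "(\<Union>n\<in>{1..N}. H n) \<in> sets PA" using Hm by auto
  have nDm: "{\<omega>\<in>space PA. \<not> D \<omega>} \<in> sets PA"
  proof -
    have "{\<omega>\<in>space PA. \<not> D \<omega>} = space PA - {\<omega>\<in>space PA. D \<omega>}" by blast
    then show ?thesis using Dm by auto
  qed
  have Sm: "S \<in> sets PA" unfolding S_def using nDm UHm by auto
  have emF: "emeasure PA (\<Union>n\<in>{1..N}. F n) \<le> ennreal (exp c * \<alpha>)"
  proof -
    have "emeasure PA (\<Union>n\<in>{1..N}. F n) \<le> (\<Sum>n\<in>{1..N}. emeasure PA (F n))"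
      by (rule emeasure_subadditive_finite) (use Fm in auto)
    also have "\<dots> = (\<Sum>n\<in>{1..N}. \<integral>\<^sup>+\<omega>. ennreal (exp (\<Lambda> n \<omega>)) * indicator (F n) \<omega> \<partial>PB)"
    proof (rule sum.cong)
      fix n assume "n \<in> {1..N}"
      then have n: "n \<ge> 1" by simp
      show "emeasure PA (F n) = (\<integral>\<^sup>+\<omega>. ennreal (exp (\<Lambda> n \<omega>)) * indicator (F n) \<omega> \<partial>PB)"
        by (rule cm[OF n FG[OF n]])
    qed simp
    also have "\<dots> \<le> (\<Sum>n\<in>{1..N}. \<integral>\<^sup>+\<omega>. ennreal (exp c) * indicator (H n) \<omega> \<partial>PB)"
    proof (rule sum_mono, rule nn_integral_mono)
      fix n \<omega>
      show "ennreal (exp (\<Lambda> n \<omega>)) * indicator (F n) \<omega> \<le> ennreal (exp c) * indicator (H n) \<omega>"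
        by (cases "\<omega> \<in> F n") (auto simp: F_def H_def indicator_def intro: ennreal_leI)
    qed
    also have "\<dots> = (\<Sum>n\<in>{1..N}. ennreal (exp c) * emeasure PB (H n))"
      by (rule sum.cong) (auto intro!: nn_integral_cmult_indicator simp: sPB Hm)
    also have "\<dots> = ennreal (exp c) * (\<Sum>n\<in>{1..N}. emeasure PB (H n))"
      by (simp add: sum_distrib_left)
    also have "(\<Sum>n\<in>{1..N}. emeasure PB (H n)) = emeasure PB (\<Union>n\<in>{1..N}. H n)"
    proof (rule sum_emeasure)
      show "H ` {1..N} \<subseteq> sets PB" using Hm by (auto simp: sPB)
      show "disjoint_family_on H {1..N}" by (auto simp: disjoint_family_on_def H_def)
    qed simp
    also have "\<dots> \<le> emeasure PB {\<omega>\<in>space PB. D \<omega>}"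
      by (rule emeasure_mono) (auto simp: H_def spB sPB Dm)
    also have "\<dots> = ennreal (measure PB {\<omega>\<in>space PB. D \<omega>})" by (rule B.emeasure_eq_measure)
    also have "\<dots> \<le> ennreal \<alpha>" using D\<alpha> by (rule ennreal_leI)
    finally have "emeasure PA (\<Union>n\<in>{1..N}. F n) \<le> ennreal (exp c) * ennreal \<alpha>"
      by (simp add: mult_left_mono)
    then show ?thesis by (simp add: ennreal_mult \<alpha>0)
  qed
  have mF: "measure PA (\<Union>n\<in>{1..N}. F n) \<le> exp c * \<alpha>"
    using emF \<alpha>0 by (simp add: A.emeasure_eq_measure ennreal_le_iff)
  have "S \<subseteq> {\<omega>\<in>space PA. \<not> D \<omega>} \<union> ((\<Union>n\<in>{1..N}. F n) \<union> Bc)"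
    unfolding S_def H_def F_def Bc_def by force
  then have "measure PA S \<le> measure PA ({\<omega>\<in>space PA. \<not> D \<omega>} \<union> ((\<Union>n\<in>{1..N}. F n) \<union> Bc))"
    by (intro A.finite_measure_mono) (use nDm UFm Bm in auto)
  also have "\<dots> \<le> measure PA {\<omega>\<in>space PA. \<not> D \<omega>} + measure PA ((\<Union>n\<in>{1..N}. F n) \<union> Bc)"
    by (rule measure_Un_le) (use nDm UFm Bm in auto)
  also have "measure PA ((\<Union>n\<in>{1..N}. F n) \<union> Bc) \<le> measure PA (\<Union>n\<in>{1..N}. F n) + measure PA Bc"
    by (rule measure_Un_le) (use UFm Bm in auto)
  finally have mS: "measure PA S \<le> \<beta> + exp c * \<alpha> + measure PA Bc"
    using D\<beta> mF by linarith
  have "ennreal (real N * (1 - \<beta> - exp c * \<alpha> - measure PA Bc)) \<le> ennreal (real N * (1 - measure PA S))"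
    by (rule ennreal_leI, rule mult_left_mono) (use mS in auto)
  also have "\<dots> = ennreal (real N) * emeasure PA (space PA - S)"
    by (simp add: A.emeasure_eq_measure A.prob_compl[OF Sm] ennreal_mult)
  also have "\<dots> = (\<integral>\<^sup>+\<omega>. ennreal (real N) * indicator (space PA - S) \<omega> \<partial>PA)"
    by (rule nn_integral_cmult_indicator[symmetric]) (use Sm in auto)
  also have "\<dots> \<le> (\<integral>\<^sup>+\<omega>. ennreal_of_enat (T \<omega>) \<partial>PA)"
  proof (rule nn_integral_mono)
    fix \<omega> assume \<omega>: "\<omega> \<in> space PA"
    show "ennreal (real N) * indicator (space PA - S) \<omega> \<le> ennreal_of_enat (T \<omega>)"
    proof (cases "\<omega> \<in> S")
      case True then show ?thesis by simp
    next
      case False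
      then have Dw: "D \<omega>" and nT: "\<And>n. n \<in> {1..N} \<Longrightarrow> T \<omega> \<noteq> enat n"
        using \<omega> unfolding S_def H_def by auto
      show ?thesis
      proof (cases "T \<omega>")
        case (enat m)
        have "m \<noteq> 0" using T0 \<omega> enat by (auto simp: zero_enat_def)
        then have "m > N" using nT[of m] enat by (cases "m \<le> N") auto
        then show ?thesis using enat \<omega> False
          by (simp add: ennreal_of_nat_eq_real_of_nat[symmetric])
      next
        case infinity then show ?thesis by simp
      qed
    qed
  qed
  finally show ?thesis unfolding Bc_def .
qed

lemma PW:
  fixes x :: "nat \<Rightarrow> real"
  assumes ls: "limsup (\<lambda>n. ereal (x n / real n)) \<le> ereal I" and I: "I > 0" and d: "d > 0"
  shows "eventually (\<lambda>N. \<forall>n\<in>{1..N}. x n < (1+d) * I * real N) sequentially"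
proof -
  have "limsup (\<lambda>n. ereal (x n / real n)) < ereal ((1 + d/2) * I)"
    using ls I d by (simp add: order_le_less_trans)
  then have "eventually (\<lambda>n. ereal (x n / real n) < ereal ((1 + d/2) * I)) sequentially"
    by (rule Limsup_lessD)
  then obtain n0 where n0: "\<And>n. n \<ge> n0 \<Longrightarrow> x n / real n < (1 + d/2) * I"
    by (auto simp: eventually_sequentially)
  define Mx where "Mx = (\<Sum>n<n0. \<bar>x n\<bar>)"
  have Mx: "n < n0 \<Longrightarrow> x n \<le> Mx" for n
  proof -
    assume "n < n0"
    then have "\<bar>x n\<bar> \<le> Mx" unfolding Mx_def
      by (intro member_le_sum) auto
    then show ?thesis by simp
  qed
  have Mx0: "Mx \<ge> 0" unfolding Mx_def by (simp add: sum_nonneg)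
  define N0 where "N0 = nat \<lceil>Mx / (d/2 * I)\<rceil> + 1"
  have dI: "d/2 * I > 0" using d I by simp
  show ?thesis unfolding eventually_sequentially
  proof (intro exI allI impI ballI)
    fix N n assume N: "N \<ge> N0" and n: "n \<in> {1..N}"
    have N1: "real N \<ge> 1" using N unfolding N0_def by simp
    have "real N \<ge> Mx / (d/2 * I) + 0" using N unfolding N0_def by linarith
    then have MN: "Mx \<le> d/2 * I * real N" using dI by (simp add: field_simps)
    have pos: "d/2 * I * real N > 0" using dI N1 by simp
    show "x n < (1+d) * I * real N"
    proof (cases "n < n0")
      case True
      then have "x n \<le> d/2 * I * real N" using Mx MN by fastforce
      also have "\<dots> < (1+d) * I * real N"
      proof -
        have p2: "0 < (1 + d/2) * (I * real N)" using I d N1 by (intro mult_pos_pos) auto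
        have "(1+d) * I * real N - d/2 * I * real N = (1 + d/2) * (I * real N)" by (simp add: algebra_simps)
        then show ?thesis using p2 by linarith
      qed
      finally show ?thesis .
    next
      case False
      then have "x n / real n < (1 + d/2) * I" using n0 by simp
      moreover have "real n > 0" using n by simp
      ultimately have "x n < (1 + d/2) * I * real n" by (simp add: field_simps)
      also have "\<dots> \<le> (1 + d/2) * I * real N" using n I d by (intro mult_left_mono) auto
      also have "\<dots> < (1+d) * I * real N" using pos by (simp add: field_simps)
      finally show ?thesis .
    qed
  qed
qed

lemma LB_tail:
  fixes PA :: "'b measure" and \<Lambda> :: "nat \<Rightarrow> 'b \<Rightarrow> real"
  assumes pA: "prob_space PA"
    and \<Lambda>m: "\<And>n. n \<ge> 1 \<Longrightarrow> \<Lambda> n \<in> borel_measurable PA"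
    and ls: "AE \<omega> in PA. limsup (\<lambda>n. ereal (\<Lambda> n \<omega> / real n)) \<le> ereal I"
    and I: "I > 0" and d: "d > 0"
  shows "(\<lambda>N. measure PA {\<omega>\<in>space PA. \<exists>n\<in>{1..N}. (1+d)*I*real N \<le> \<Lambda> n \<omega>}) \<longlonglongrightarrow> 0"
proof -
  interpret A: prob_space PA by (rule pA)
  define Bs where "Bs N = {\<omega>\<in>space PA. \<exists>n\<in>{1..N}. (1+d)*I*real N \<le> \<Lambda> n \<omega>}" for N
  define C where "C N = (\<Union>m\<in>{N..}. Bs m)" for N
  have Bsm: "Bs N \<in> sets PA" for N
  proof -
    have "Bs N = (\<Union>n\<in>{1..N}. {\<omega>\<in>space PA. (1+d)*I*real N \<le> \<Lambda> n \<omega>})" unfolding Bs_def by blast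
    moreover have "{\<omega>\<in>space PA. (1+d)*I*real N \<le> \<Lambda> n \<omega>} \<in> sets PA" if "n \<in> {1..N}" for n
    proof -
      have "n \<ge> 1" using that by simp
      note \<Lambda>m[OF this, measurable]
      show ?thesis by measurable
    qed
    ultimately show ?thesis by auto
  qed
  have Cm: "C N \<in> sets PA" for N unfolding C_def using Bsm by auto
  have dec: "decseq C" unfolding decseq_def C_def by (intro allI impI UN_mono) auto
  have AEev: "AE \<omega> in PA. eventually (\<lambda>N. \<omega> \<notin> Bs N) sequentially"
    using ls
  proof (rule AE_mp, intro AE_I2 impI)
    fix \<omega> assume "\<omega> \<in> space PA" and l: "limsup (\<lambda>n. ereal (\<Lambda> n \<omega> / real n)) \<le> ereal I"
    show "eventually (\<lambda>N. \<omega> \<notin> Bs N) sequentially"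
      using PW[OF l I d] by eventually_elim (auto simp: Bs_def not_le)
  qed
  have eqI: "{\<omega>\<in>space PA. \<not> eventually (\<lambda>N. \<omega> \<notin> Bs N) sequentially} = (\<Inter>N. C N)"
  proof
    show "{\<omega>\<in>space PA. \<not> eventually (\<lambda>N. \<omega> \<notin> Bs N) sequentially} \<subseteq> (\<Inter>N. C N)"
      by (auto simp: C_def eventually_sequentially)
    show "(\<Inter>N. C N) \<subseteq> {\<omega>\<in>space PA. \<not> eventually (\<lambda>N. \<omega> \<notin> Bs N) sequentially}"
    proof
      fix \<omega> assume w: "\<omega> \<in> (\<Inter>N. C N)"
      then have "\<omega> \<in> C 0" by blast
      then have "\<omega> \<in> space PA" unfolding C_def Bs_def by blast
      moreover have "\<not> eventually (\<lambda>N. \<omega> \<notin> Bs N) sequentially"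
      proof
        assume "eventually (\<lambda>N. \<omega> \<notin> Bs N) sequentially"
        then obtain N where "\<And>m. m \<ge> N \<Longrightarrow> \<omega> \<notin> Bs m" by (auto simp: eventually_sequentially)
        moreover have "\<omega> \<in> C N" using w by blast
        ultimately show False unfolding C_def by auto
      qed
      ultimately show "\<omega> \<in> {\<omega>\<in>space PA. \<not> eventually (\<lambda>N. \<omega> \<notin> Bs N) sequentially}" by blast
    qed
  qed
  have ICm: "(\<Inter>N. C N) \<in> sets PA" using Cm by auto
  have "emeasure PA (\<Inter>N. C N) = 0"
    using AE_iff_measurable[OF ICm eqI] AEev by simp
  then have m0: "measure PA (\<Inter>N. C N) = 0" by (simp add: A.emeasure_eq_measure)
  have lim: "(\<lambda>N. measure PA (C N)) \<longlonglongrightarrow> 0"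
    using A.finite_Lim_measure_decseq[of C] Cm dec m0 by auto
  show ?thesis
  proof (rule tendsto_sandwich[OF _ _ tendsto_const lim])
    show "eventually (\<lambda>N. 0 \<le> measure PA {\<omega>\<in>space PA. \<exists>n\<in>{1..N}. (1+d)*I*real N \<le> \<Lambda> n \<omega>}) sequentially"
      by simp
    show "eventually (\<lambda>N. measure PA {\<omega>\<in>space PA. \<exists>n\<in>{1..N}. (1+d)*I*real N \<le> \<Lambda> n \<omega>} \<le> measure PA (C N)) sequentially"
    proof (intro always_eventually allI)
      fix N
      have "Bs N \<subseteq> C N" unfolding C_def by auto
      then show "measure PA {\<omega>\<in>space PA. \<exists>n\<in>{1..N}. (1+d)*I*real N \<le> \<Lambda> n \<omega>} \<le> measure PA (C N)"
        unfolding Bs_def[symmetric] by (rule A.finite_measure_mono) (rule Cm)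
    qed
  qed
qed

lemma LB:
  fixes PA PB :: "'b measure" and G :: "nat \<Rightarrow> 'b measure" and \<Lambda> :: "nat \<Rightarrow> 'b \<Rightarrow> real"
  assumes pA: "prob_space PA" and pB: "prob_space PB" and sPB: "sets PB = sets PA"
    and Gsp: "\<And>n. space (G n) = space PA" and Gsub: "\<And>n. sets (G n) \<subseteq> sets PA"
    and \<Lambda>m: "\<And>n. n \<ge> 1 \<Longrightarrow> \<Lambda> n \<in> borel_measurable (G n)"
    and cm: "\<And>n E. n \<ge> 1 \<Longrightarrow> E \<in> sets (G n) \<Longrightarrow> emeasure PA E = (\<integral>\<^sup>+\<omega>. ennreal (exp (\<Lambda> n \<omega>)) * indicator E \<omega> \<partial>PB)"
    and ls: "AE \<omega> in PA. limsup (\<lambda>n. ereal (\<Lambda> n \<omega> / real n)) \<le> ereal I"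
    and I: "I > 0" and \<delta>: "0 < \<delta>" "\<delta> < 1"
  shows "\<exists>\<alpha>0>0. \<forall>\<alpha> \<beta> (T::'b \<Rightarrow> enat) D. 0 < \<alpha> \<longrightarrow> \<alpha> < \<alpha>0 \<longrightarrow> \<beta> < \<alpha>0 \<longrightarrow>
      (\<forall>\<omega>\<in>space PA. T \<omega> \<noteq> 0) \<longrightarrow>
      (\<forall>n\<ge>1. {\<omega>\<in>space PA. T \<omega> = enat n \<and> D \<omega>} \<in> sets (G n)) \<longrightarrow>
      {\<omega>\<in>space PA. D \<omega>} \<in> sets PA \<longrightarrow>
      measure PB {\<omega>\<in>space PB. D \<omega>} \<le> \<alpha> \<longrightarrow> measure PA {\<omega>\<in>space PA. \<not> D \<omega>} \<le> \<beta> \<longrightarrow>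
      ennreal ((1 - \<delta>) * \<bar>ln \<alpha>\<bar> / I) \<le> (\<integral>\<^sup>+\<omega>. ennreal_of_enat (T \<omega>) \<partial>PA)"
proof -
  interpret A: prob_space PA by (rule pA)
  define d where "d = \<delta> / 6"
  have d0: "d > 0" and d1: "d < 1/6" using \<delta> unfolding d_def by auto
  have subalg: "subalgebra PA (G n)" for n using Gsp Gsub by (auto simp: subalgebra_def)
  have \<Lambda>mA: "n \<ge> 1 \<Longrightarrow> \<Lambda> n \<in> borel_measurable PA" for n
    by (rule measurable_from_subalg[OF subalg \<Lambda>m])
  define Bs where "Bs N = {\<omega>\<in>space PA. \<exists>n\<in>{1..N}. (1+d)*I*real N \<le> \<Lambda> n \<omega>}" for N
  have Bsm: "Bs N \<in> sets PA" for N
  proof -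
    have "Bs N = (\<Union>n\<in>{1..N}. {\<omega>\<in>space PA. (1+d)*I*real N \<le> \<Lambda> n \<omega>})" unfolding Bs_def by blast
    moreover have "{\<omega>\<in>space PA. (1+d)*I*real N \<le> \<Lambda> n \<omega>} \<in> sets PA" if "n \<in> {1..N}" for n
    proof -
      have "n \<ge> 1" using that by simp
      note \<Lambda>mA[OF this, measurable]
      show ?thesis by measurable
    qed
    ultimately show ?thesis by auto
  qed
  have tl: "(\<lambda>N. measure PA (Bs N)) \<longlonglongrightarrow> 0"
    unfolding Bs_def by (rule LB_tail[OF pA \<Lambda>mA ls I d0])
  then have "eventually (\<lambda>N. measure PA (Bs N) < d) sequentially"
    using d0 by (rule order_tendstoD)
  then obtain N1 where N1: "\<And>N. N \<ge> N1 \<Longrightarrow> measure PA (Bs N) < d"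
    by (auto simp: eventually_sequentially)
  define L0 where "L0 = max (max (- ln d / d) (real N1 * (1+d) * I / (1-d))) (I / d)"
  define \<alpha>0 where "\<alpha>0 = min d (exp (- L0))"
  have \<alpha>0pos: "\<alpha>0 > 0" unfolding \<alpha>0_def using d0 by simp
  show ?thesis
  proof (intro exI[of _ \<alpha>0] conjI \<alpha>0pos allI impI)
    fix \<alpha> \<beta> :: real and T :: "'b \<Rightarrow> enat" and D :: "'b \<Rightarrow> bool"
    assume \<alpha>: "0 < \<alpha>" "\<alpha> < \<alpha>0" and \<beta>: "\<beta> < \<alpha>0"
      and T0: "\<forall>\<omega>\<in>space PA. T \<omega> \<noteq> 0"
      and TD: "\<forall>n\<ge>1. {\<omega>\<in>space PA. T \<omega> = enat n \<and> D \<omega>} \<in> sets (G n)"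
      and Dm: "{\<omega>\<in>space PA. D \<omega>} \<in> sets PA"
      and D\<alpha>: "measure PB {\<omega>\<in>space PB. D \<omega>} \<le> \<alpha>"
      and D\<beta>: "measure PA {\<omega>\<in>space PA. \<not> D \<omega>} \<le> \<beta>"
    define L where "L = - ln \<alpha>"
    have "ln \<alpha> < ln (exp (- L0))"
      using \<alpha> unfolding \<alpha>0_def by (subst ln_less_cancel_iff) auto
    then have LL0: "L > L0" unfolding L_def by simp
    have "\<alpha> < 1" using \<alpha> d1 unfolding \<alpha>0_def by simp
    then have absL: "\<bar>ln \<alpha>\<bar> = L" unfolding L_def using \<alpha> by simp
    have L1: "L \<ge> - ln d / d" and L2: "L \<ge> real N1 * (1+d) * I / (1-d)" and L3: "L \<ge> I / d"
      using LL0 unfolding L0_def by auto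
    have \<beta>d: "\<beta> \<le> d" using \<beta> unfolding \<alpha>0_def by simp
    define c where "c = (1 - d) * L"
    define x where "x = c / ((1+d) * I)"
    define N where "N = nat \<lfloor>x\<rfloor>"
    have Lpos: "L > 0" using L3 d0 I by (smt (verit) divide_pos_pos)
    have xpos: "x \<ge> 0" unfolding x_def c_def using d0 d1 Lpos I by (intro divide_nonneg_pos mult_nonneg_nonneg mult_pos_pos) auto
    have Nx: "real N \<le> x" "x < real N + 1" unfolding N_def using xpos by linarith+
    have core: "ennreal (real N * (1 - \<beta> - exp c * \<alpha> - measure PA {\<omega>\<in>space PA. \<exists>n\<in>{1..N}. c \<le> \<Lambda> n \<omega>}))
        \<le> (\<integral>\<^sup>+\<omega>. ennreal_of_enat (T \<omega>) \<partial>PA)"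
      by (rule LB_core[OF pA pB sPB Gsp Gsub \<Lambda>m cm _ _ Dm D\<alpha> D\<beta>]) (use T0 TD in auto)
    have cN: "(1+d)*I*real N \<le> c"
    proof -
      have "real N * ((1+d) * I) \<le> x * ((1+d) * I)" using Nx(1) d0 I by (intro mult_right_mono) auto
      also have "\<dots> = c" unfolding x_def using d0 I by simp
      finally show ?thesis by (simp add: algebra_simps)
    qed
    have Bsub: "{\<omega>\<in>space PA. \<exists>n\<in>{1..N}. c \<le> \<Lambda> n \<omega>} \<subseteq> Bs N"
      unfolding Bs_def using cN by force
    have mB: "measure PA {\<omega>\<in>space PA. \<exists>n\<in>{1..N}. c \<le> \<Lambda> n \<omega>} \<le> measure PA (Bs N)"
      by (rule A.finite_measure_mono[OF Bsub Bsm])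
    have xN1: "x \<ge> real N1"
    proof -
      have "real N1 * (1+d) * I \<le> L * (1-d)" using L2 d1 by (simp add: field_simps)
      then have "real N1 * ((1+d) * I) \<le> c" unfolding c_def by (simp add: algebra_simps)
      moreover have "(1+d) * I > 0" using d0 I by simp
      ultimately show ?thesis unfolding x_def by (simp add: pos_le_divide_eq)
    qed
    have "N \<ge> N1" unfolding N_def using xN1 by linarith
    then have mBs: "measure PA (Bs N) < d" by (rule N1)
    have ec: "exp c * \<alpha> \<le> d"
    proof -
      have "exp c * \<alpha> = exp (c + ln \<alpha>)" using \<alpha> by (simp add: exp_add)
      also have "c + ln \<alpha> = - d * L" unfolding c_def L_def by (simp add: algebra_simps)
      also have "- d * L \<le> ln d"
      proof -
        have "- ln d \<le> d * L" using L1 d0 by (simp add: field_simps)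
        then show ?thesis by simp
      qed
      then have "exp (- d * L) \<le> exp (ln d)" by simp
      then have "exp (- d * L) \<le> d" using d0 by simp
      finally show ?thesis .
    qed
    define f where "f = 1 - \<beta> - exp c * \<alpha> - measure PA {\<omega>\<in>space PA. \<exists>n\<in>{1..N}. c \<le> \<Lambda> n \<omega>}"
    have f3: "f \<ge> 1 - 3 * d" unfolding f_def using \<beta>d ec mB mBs by linarith
    have x2: "x \<ge> (1 - 2*d) * L / I"
    proof -
      have "(1 - 2*d) * (1 + d) \<le> 1 - d" using d0 by (simp add: algebra_simps)
      then have r: "1 - 2*d \<le> (1 - d) / (1 + d)" using d0 by (simp add: pos_le_divide_eq)
      have xe: "x = ((1 - d) / (1 + d)) * (L / I)" unfolding x_def c_def by simp
      have "(1 - 2*d) * L / I = (1 - 2*d) * (L / I)" by simp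
      also have "\<dots> \<le> ((1 - d) / (1 + d)) * (L / I)" using r Lpos I by (intro mult_right_mono) auto
      finally show ?thesis unfolding xe .
    qed
    have dL: "d * L / I \<ge> 1" using L3 d0 I by (simp add: field_simps)
    have N3: "real N \<ge> (1 - 3*d) * L / I"
    proof -
      have "(1 - 3*d) * L / I = (1 - 2*d) * L / I - d * L / I" by (simp add: algebra_simps diff_divide_distrib)
      then show ?thesis using Nx x2 dL by linarith
    qed
    have p3: "1 - 3*d \<ge> 0" using d1 by simp
    have LI: "L / I \<ge> 0" using Lpos I by simp
    have "(1 - \<delta>) * \<bar>ln \<alpha>\<bar> / I = (1 - 6*d) * (L / I)" unfolding d_def absL by simp
    also have "\<dots> \<le> (1 - 3*d) * (1 - 3*d) * (L / I)"
      using LI by (intro mult_right_mono) (auto simp: algebra_simps)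
    also have "\<dots> = ((1 - 3*d) * L / I) * (1 - 3*d)" by simp
    also have "\<dots> \<le> real N * f"
      using N3 f3 p3 LI by (intro mult_mono) (auto simp: mult_nonneg_nonneg)
    finally have "ennreal ((1 - \<delta>) * \<bar>ln \<alpha>\<bar> / I) \<le> ennreal (real N * f)" by (rule ennreal_leI)
    also have "\<dots> \<le> (\<integral>\<^sup>+\<omega>. ennreal_of_enat (T \<omega>) \<partial>PA)" using core unfolding f_def .
    finally show "ennreal ((1 - \<delta>) * \<bar>ln \<alpha>\<bar> / I) \<le> (\<integral>\<^sup>+\<omega>. ennreal_of_enat (T \<omega>) \<partial>PA)" .
  qed
qed

lemma ennreal_sum_le_suminf: "(\<Sum>i<n. f i) \<le> (\<Sum>i. f i :: ennreal)"
  unfolding suminf_eq_SUP by (rule SUP_upper) simp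

lemma ennreal_suminf_mono: "(\<And>i. f i \<le> g i) \<Longrightarrow> (\<Sum>i. f i :: ennreal) \<le> (\<Sum>i. g i)"
  unfolding suminf_eq_SUP by (intro SUP_mono' sum_mono) auto

lemma UB_bound:
  fixes Q :: "'b measure" and ll :: "nat \<Rightarrow> 'b \<Rightarrow> real" and S :: "'b \<Rightarrow> enat"
  assumes pQ: "prob_space Q"
    and llm: "\<And>n. n \<ge> 1 \<Longrightarrow> ll n \<in> borel_measurable Q"
    and sm: "summable (\<lambda>n. measure Q {x\<in>space Q. ll n x / real n \<le> I - \<epsilon>})"
    and \<epsilon>: "0 < \<epsilon>" "\<epsilon> < I" and thr: "thr > 0"
    and hit: "\<And>x n. x \<in> space Q \<Longrightarrow> n \<ge> 1 \<Longrightarrow> thr \<le> ll n x \<Longrightarrow> S x \<le> enat n"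
  shows "(\<integral>\<^sup>+x. ennreal_of_enat (S x) \<partial>Q)
     \<le> ennreal (thr / (I - \<epsilon>) + 2 + (\<Sum>n. measure Q {x\<in>space Q. ll n x / real n \<le> I - \<epsilon>}))"
proof -
  interpret prob_space Q by (rule pQ)
  define C where "C n = {x\<in>space Q. ll n x / real n \<le> I - \<epsilon>}" for n
  define A where "A t = (if t = 0 then space Q else {x\<in>space Q. ll t x < thr})" for t
  define t0 where "t0 = nat \<lceil>thr / (I - \<epsilon>)\<rceil> + 1"
  have Am: "A t \<in> sets Q" for t
  proof (cases "t = 0")
    case True then show ?thesis by (simp add: A_def)
  next
    case False
    then have "t \<ge> 1" by simp
    note llm[OF this, measurable]
    have "{x\<in>space Q. ll t x < thr} \<in> sets Q" by measurable
    then show ?thesis using False unfolding A_def by simp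
  qed
  have Cm: "t \<ge> 1 \<Longrightarrow> C t \<in> sets Q" for t
  proof -
    assume "t \<ge> 1"
    note llm[OF this, measurable]
    show ?thesis unfolding C_def by measurable
  qed
  have pw: "ennreal_of_enat (S x) \<le> (\<Sum>t. indicator (A t) x)" if x: "x \<in> space Q" for x
  proof -
    have key: "of_nat (Suc m) \<le> (\<Sum>t. indicator (A t) x :: ennreal)" if m: "enat m < S x" for m
    proof -
      have "\<forall>t<Suc m. x \<in> A t"
      proof (intro allI impI)
        fix t assume t: "t < Suc m"
        show "x \<in> A t"
        proof (cases "t = 0")
          case True then show ?thesis using x by (simp add: A_def)
        next
          case False
          have "\<not> thr \<le> ll t x"
          proof
            assume "thr \<le> ll t x"
            then have "S x \<le> enat t" using hit[OF x] False by simp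
            moreover have "enat t \<le> enat m" using t by simp
            ultimately have "S x \<le> enat m" by (rule order_trans)
            then show False using m by simp
          qed
          then show ?thesis using False x by (simp add: A_def)
        qed
      qed
      then have "(\<Sum>t<Suc m. indicator (A t) x :: ennreal) = of_nat (Suc m)" by simp
      then show ?thesis using ennreal_sum_le_suminf[of "\<lambda>t. indicator (A t) x" "Suc m"] by simp
    qed
    show ?thesis
    proof (cases "S x")
      case (enat m)
      show ?thesis
      proof (cases m)
        case 0 then show ?thesis using enat by simp
      next
        case (Suc m')
        then have "enat m' < S x" using enat by simp
        from key[OF this] show ?thesis using enat Suc by simp
      qed
    next
      case infinity
      have "(SUP n. of_nat n :: ennreal) \<le> (\<Sum>t. indicator (A t) x)"
      proof (rule SUP_least)
        fix n :: nat
        have "of_nat n \<le> (of_nat (Suc n) :: ennreal)" by simp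
        also have "\<dots> \<le> (\<Sum>t. indicator (A t) x)" using key[of n] infinity by simp
        finally show "of_nat n \<le> (\<Sum>t. indicator (A t) x :: ennreal)" .
      qed
      then show ?thesis using infinity by (simp add: ennreal_SUP_of_nat_eq_top)
    qed
  qed
  define g where "g t = (if t \<in> {..<t0} then 1 else 0) + measure Q (C t)" for t
  have sm': "summable (\<lambda>t. measure Q (C t))" using sm unfolding C_def .
  have s1: "(\<lambda>t. if t \<in> {..<t0} then 1 else 0 :: real) sums (\<Sum>r\<in>{..<t0}. 1)"
    by (rule sums_If_finite_set) simp
  have gs: "g sums (real t0 + (\<Sum>t. measure Q (C t)))"
    unfolding g_def using sums_add[OF s1 summable_sums[OF sm']] by simp
  have g0: "0 \<le> g t" for t unfolding g_def by simp
  have Ag: "emeasure Q (A t) \<le> ennreal (g t)" for t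
  proof -
    have "measure Q (A t) \<le> g t"
    proof (cases "t < t0")
      case True
      then show ?thesis unfolding g_def by (simp add: prob_le_1 add_increasing2)
    next
      case False
      then have t1: "t \<ge> 1" and tt: "real t \<ge> thr / (I - \<epsilon>)" unfolding t0_def by linarith+
      have "thr \<le> (I - \<epsilon>) * real t" using tt \<epsilon> by (simp add: field_simps)
      then have "A t \<subseteq> C t" using t1 \<epsilon> unfolding A_def C_def by (auto simp: field_simps)
      then have "measure Q (A t) \<le> measure Q (C t)" by (rule finite_measure_mono) (rule Cm[OF t1])
      then show ?thesis unfolding g_def using False by simp
    qed
    then show ?thesis by (simp add: emeasure_eq_measure ennreal_leI)
  qed
  have "(\<integral>\<^sup>+x. ennreal_of_enat (S x) \<partial>Q) \<le> (\<integral>\<^sup>+x. (\<Sum>t. indicator (A t) x) \<partial>Q)"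
    by (rule nn_integral_mono) (rule pw)
  also have "\<dots> = (\<Sum>t. \<integral>\<^sup>+x. indicator (A t) x \<partial>Q)"
    by (rule nn_integral_suminf) (use Am in auto)
  also have "\<dots> = (\<Sum>t. emeasure Q (A t))"
    by (simp add: Am)
  also have "\<dots> \<le> (\<Sum>t. ennreal (g t))" by (rule ennreal_suminf_mono[OF Ag])
  also have "\<dots> = ennreal (\<Sum>t. g t)" by (rule suminf_ennreal2[OF g0 sums_summable[OF gs]])
  also have "(\<Sum>t. g t) = real t0 + (\<Sum>t. measure Q (C t))" using gs by (rule sums_unique[symmetric])
  also have "ennreal (real t0 + (\<Sum>t. measure Q (C t))) \<le> ennreal (thr / (I - \<epsilon>) + 2 + (\<Sum>t. measure Q (C t)))"
  proof (rule ennreal_leI)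
    have "real t0 \<le> thr / (I - \<epsilon>) + 2"
    proof -
      have "thr / (I - \<epsilon>) \<ge> 0" using thr \<epsilon> by simp
      then show ?thesis unfolding t0_def by linarith
    qed
    then show "real t0 + (\<Sum>t. measure Q (C t)) \<le> thr / (I - \<epsilon>) + 2 + (\<Sum>t. measure Q (C t))" by simp
  qed
  finally show ?thesis unfolding C_def .
qed

lemma sprt_T_eq_iff:
  "sprt_T lam a b k \<omega> = enat n \<longleftrightarrow>
     n \<ge> 1 \<and> lam k n (\<omega> k) \<notin> {-b<..<a} \<and> (\<forall>m. 1 \<le> m \<and> m < n \<longrightarrow> lam k m (\<omega> k) \<in> {-b<..<a})"
proof -
  let ?P = "\<lambda>n. n \<ge> 1 \<and> lam k n (\<omega> k) \<notin> {-b<..<a}"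
  show ?thesis
  proof
    assume eq: "sprt_T lam a b k \<omega> = enat n"
    then have ex: "\<exists>n. ?P n" unfolding sprt_T_def by (auto split: if_splits)
    then have nL: "n = (LEAST n. ?P n)" using eq unfolding sprt_T_def by (auto split: if_splits)
    have "?P n" unfolding nL by (rule LeastI_ex[OF ex])
    moreover have "\<forall>m. 1 \<le> m \<and> m < n \<longrightarrow> lam k m (\<omega> k) \<in> {-b<..<a}"
    proof (intro allI impI)
      fix m assume m: "1 \<le> m \<and> m < n"
      then have "\<not> ?P m" unfolding nL using not_less_Least by blast
      then show "lam k m (\<omega> k) \<in> {-b<..<a}" using m by blast
    qed
    ultimately show "n \<ge> 1 \<and> lam k n (\<omega> k) \<notin> {-b<..<a} \<and> (\<forall>m. 1 \<le> m \<and> m < n \<longrightarrow> lam k m (\<omega> k) \<in> {-b<..<a})" by blast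
  next
    assume h: "n \<ge> 1 \<and> lam k n (\<omega> k) \<notin> {-b<..<a} \<and> (\<forall>m. 1 \<le> m \<and> m < n \<longrightarrow> lam k m (\<omega> k) \<in> {-b<..<a})"
    then have ex: "\<exists>n. ?P n" by blast
    have "(LEAST n. ?P n) = n"
    proof (rule Least_equality)
      show "?P n" using h by blast
      fix y assume "?P y"
      then show "n \<le> y" using h by (meson not_le)
    qed
    then show "sprt_T lam a b k \<omega> = enat n" unfolding sprt_T_def using ex by simp
  qed
qed

lemma sprt_T_ne0: "sprt_T lam a b k \<omega> \<noteq> 0"
proof
  assume "sprt_T lam a b k \<omega> = 0"
  then have "sprt_T lam a b k \<omega> = enat 0" by (simp add: zero_enat_def)
  then have "(0::nat) \<ge> 1" unfolding sprt_T_eq_iff by blast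
  then show False by simp
qed

lemma sprt_T_le:
  assumes "n \<ge> 1" "lam k n (\<omega> k) \<notin> {-b<..<a}"
  shows "sprt_T lam a b k \<omega> \<le> enat n"
proof -
  let ?P = "\<lambda>n. n \<ge> 1 \<and> lam k n (\<omega> k) \<notin> {-b<..<a}"
  have ex: "\<exists>n\<ge>1. lam k n (\<omega> k) \<notin> {-b<..<a}" using assms by blast
  have "(LEAST n. ?P n) \<le> n" by (rule Least_le) (use assms in blast)
  then show ?thesis unfolding sprt_T_def using ex by simp
qed

lemma sprt_D_iff: "sprt_D lam a b k \<omega> \<longleftrightarrow> (\<exists>n. sprt_T lam a b k \<omega> = enat n \<and> a \<le> lam k n (\<omega> k))"
  unfolding sprt_D_def by (cases "sprt_T lam a b k \<omega>") auto

context setting begin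

lemma Z_local:
  assumes k: "k \<in> {1..K}" and m: "1 \<le> m" "m \<le> t" and that: "X \<in> sets borel"
  shows "{\<omega>\<in>Om. lam k m (\<omega> k) \<in> X} \<in> sets (local_filt K M k t)"
proof -
  have "(\<lambda>\<omega>. lam k m (\<omega> k)) -` X \<inter> space (local_filt K M k t) \<in> sets (local_filt K M k t)"
    by (rule measurable_sets[OF lam_meas_local[OF k m] that])
  moreover have "(\<lambda>\<omega>. lam k m (\<omega> k)) -` X \<inter> space (local_filt K M k t) = {\<omega>\<in>Om. lam k m (\<omega> k) \<in> X}"
    by (auto simp: local_space)
  ultimately show ?thesis by simp
qed

lemma sprt_T_set_local:
  assumes k: "k \<in> {1..K}" and n: "1 \<le> n" "n \<le> t"
  shows "{\<omega>\<in>Om. sprt_T lam a b k \<omega> = enat n} \<in> sets (local_filt K M k t)"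
proof -
  define Z where "Z m = {\<omega>\<in>Om. lam k m (\<omega> k) \<in> {-b<..<a}}" for m
  have Zm: "1 \<le> m \<Longrightarrow> m \<le> t \<Longrightarrow> Z m \<in> sets (local_filt K M k t)" for m
    unfolding Z_def by (rule Z_local[OF k]) auto
  have eq: "{\<omega>\<in>Om. sprt_T lam a b k \<omega> = enat n} = (Om - Z n) - (\<Union>m\<in>{1..<n}. Om - Z m)"
  proof (intro equalityI subsetI)
    fix \<omega> assume "\<omega> \<in> {\<omega>\<in>Om. sprt_T lam a b k \<omega> = enat n}"
    then have w: "\<omega> \<in> Om" and h: "n \<ge> 1 \<and> lam k n (\<omega> k) \<notin> {-b<..<a} \<and> (\<forall>m. 1 \<le> m \<and> m < n \<longrightarrow> lam k m (\<omega> k) \<in> {-b<..<a})"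
      unfolding sprt_T_eq_iff by auto
    have "\<omega> \<notin> (\<Union>m\<in>{1..<n}. Om - Z m)"
    proof
      assume "\<omega> \<in> (\<Union>m\<in>{1..<n}. Om - Z m)"
      then obtain m where "m \<in> {1..<n}" "\<omega> \<notin> Z m" by blast
      then show False using h w unfolding Z_def by auto
    qed
    moreover have "\<omega> \<in> Om - Z n" using w h unfolding Z_def by blast
    ultimately show "\<omega> \<in> (Om - Z n) - (\<Union>m\<in>{1..<n}. Om - Z m)" by blast
  next
    fix \<omega> assume w: "\<omega> \<in> (Om - Z n) - (\<Union>m\<in>{1..<n}. Om - Z m)"
    then have "\<omega> \<in> Om" by blast
    have "n \<ge> 1 \<and> lam k n (\<omega> k) \<notin> {-b<..<a} \<and> (\<forall>m. 1 \<le> m \<and> m < n \<longrightarrow> lam k m (\<omega> k) \<in> {-b<..<a})"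
    proof (intro conjI allI impI)
      show "n \<ge> 1" using n by simp
      show "lam k n (\<omega> k) \<notin> {-b<..<a}" using w unfolding Z_def by blast
      fix m assume "1 \<le> m \<and> m < n"
      then have "\<omega> \<in> Z m" using w \<open>\<omega> \<in> Om\<close> by auto
      then show "lam k m (\<omega> k) \<in> {-b<..<a}" unfolding Z_def by blast
    qed
    then show "\<omega> \<in> {\<omega>\<in>Om. sprt_T lam a b k \<omega> = enat n}" using \<open>\<omega> \<in> Om\<close> unfolding sprt_T_eq_iff by blast
  qed
  have "Om \<in> sets (local_filt K M k t)" using sets.top[of "local_filt K M k t"] by (simp add: local_space)
  moreover have "(\<Union>m\<in>{1..<n}. Om - Z m) \<in> sets (local_filt K M k t)"
    using Zm n \<open>Om \<in> sets (local_filt K M k t)\<close> by (intro sets.finite_UN) auto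
  ultimately show ?thesis unfolding eq using Zm[OF n] by auto
qed

lemma sprt_TD_set_local:
  assumes k: "k \<in> {1..K}" and n: "1 \<le> n" "n \<le> t"
  shows "{\<omega>\<in>Om. sprt_T lam a b k \<omega> = enat n \<and> sprt_D lam a b k \<omega>} \<in> sets (local_filt K M k t)"
proof -
  have eq: "{\<omega>\<in>Om. sprt_T lam a b k \<omega> = enat n \<and> sprt_D lam a b k \<omega>}
      = {\<omega>\<in>Om. sprt_T lam a b k \<omega> = enat n} \<inter> {\<omega>\<in>Om. lam k n (\<omega> k) \<in> {a..}}"
    unfolding sprt_D_iff by force
  show ?thesis unfolding eq
    by (intro sets.Int sprt_T_set_local[OF k n] Z_local[OF k n]) simp
qed

lemma sprt_TnD_set_local:
  assumes k: "k \<in> {1..K}" and n: "1 \<le> n" "n \<le> t"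
  shows "{\<omega>\<in>Om. sprt_T lam a b k \<omega> = enat n \<and> \<not> sprt_D lam a b k \<omega>} \<in> sets (local_filt K M k t)"
proof -
  have eq: "{\<omega>\<in>Om. sprt_T lam a b k \<omega> = enat n \<and> \<not> sprt_D lam a b k \<omega>}
      = {\<omega>\<in>Om. sprt_T lam a b k \<omega> = enat n} - {\<omega>\<in>Om. sprt_T lam a b k \<omega> = enat n \<and> sprt_D lam a b k \<omega>}"
    by auto
  show ?thesis unfolding eq
    by (intro sets.Diff sprt_T_set_local[OF k n] sprt_TD_set_local[OF k n])
qed

lemma local_PA: "k \<in> {1..K} \<Longrightarrow> X \<in> sets (local_filt K M k t) \<Longrightarrow> X \<in> sets (PA A)"
  using local_sub_joint PA_sets by auto

lemma sprt_T_set_PA: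
  assumes k: "k \<in> {1..K}"
  shows "{\<omega>\<in>Om. sprt_T lam a b k \<omega> = e} \<in> sets (PA A)"
proof -
  have fin: "{\<omega>\<in>Om. sprt_T lam a b k \<omega> = enat (Suc n)} \<in> sets (PA A)" for n
    by (rule local_PA[OF k sprt_T_set_local[OF k]]) auto
  show ?thesis
  proof (cases e)
    case (enat n)
    show ?thesis
    proof (cases n)
      case 0
      then have e0: "{\<omega>\<in>Om. sprt_T lam a b k \<omega> = e} = {}" using enat by (simp add: zero_enat_def[symmetric] sprt_T_ne0)
      show ?thesis unfolding e0 by simp
    next
      case (Suc m) then show ?thesis using fin enat by simp
    qed
  next
    case infinity
    have "{\<omega>\<in>Om. sprt_T lam a b k \<omega> = e} = Om - (\<Union>n. {\<omega>\<in>Om. sprt_T lam a b k \<omega> = enat (Suc n)})"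
    proof (intro equalityI subsetI)
      fix \<omega> assume "\<omega> \<in> {\<omega>\<in>Om. sprt_T lam a b k \<omega> = e}"
      then show "\<omega> \<in> Om - (\<Union>n. {\<omega>\<in>Om. sprt_T lam a b k \<omega> = enat (Suc n)})" using infinity by auto
    next
      fix \<omega> assume w: "\<omega> \<in> Om - (\<Union>n. {\<omega>\<in>Om. sprt_T lam a b k \<omega> = enat (Suc n)})"
      have "sprt_T lam a b k \<omega> = \<infinity>"
      proof (cases "sprt_T lam a b k \<omega>")
        case (enat m)
        with sprt_T_ne0[of lam a b k \<omega>] obtain m' where "m = Suc m'" by (cases m) (auto simp: zero_enat_def)
        then show ?thesis using w enat by auto
      qed simp
      then show "\<omega> \<in> {\<omega>\<in>Om. sprt_T lam a b k \<omega> = e}" using w infinity by simp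
    qed
    moreover have "Om \<in> sets (PA A)" using sets.top[of "PA A"] by (simp add: PA_space)
    ultimately show ?thesis using fin by auto
  qed
qed

lemma sprt_T_meas_PA:
  assumes k: "k \<in> {1..K}"
  shows "sprt_T lam a b k \<in> measurable (PA A) (count_space UNIV)"
proof (subst measurable_count_space_eq2_countable, intro conjI ballI)
  show "sprt_T lam a b k \<in> space (PA A) \<rightarrow> UNIV" by simp
  fix e :: enat
  have "sprt_T lam a b k -` {e} \<inter> space (PA A) = {\<omega>\<in>Om. sprt_T lam a b k \<omega> = e}" by (auto simp: PA_space)
  then show "sprt_T lam a b k -` {e} \<inter> space (PA A) \<in> sets (PA A)" using sprt_T_set_PA[OF k] by simp
qed

lemma sprt_D_set_PA:
  assumes k: "k \<in> {1..K}"
  shows "{\<omega>\<in>Om. sprt_D lam a b k \<omega>} \<in> sets (PA A)"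
proof -
  have "{\<omega>\<in>Om. sprt_D lam a b k \<omega>} = (\<Union>n. {\<omega>\<in>Om. sprt_T lam a b k \<omega> = enat (Suc n) \<and> sprt_D lam a b k \<omega>})"
  proof (intro equalityI subsetI)
    fix \<omega> assume w: "\<omega> \<in> {\<omega>\<in>Om. sprt_D lam a b k \<omega>}"
    then obtain n where n: "sprt_T lam a b k \<omega> = enat n" unfolding sprt_D_iff by auto
    with sprt_T_ne0[of lam a b k \<omega>] obtain m' where "n = Suc m'" by (cases n) (auto simp: zero_enat_def)
    then show "\<omega> \<in> (\<Union>n. {\<omega>\<in>Om. sprt_T lam a b k \<omega> = enat (Suc n) \<and> sprt_D lam a b k \<omega>})" using w n by auto
  qed auto
  moreover have "{\<omega>\<in>Om. sprt_T lam a b k \<omega> = enat (Suc n) \<and> sprt_D lam a b k \<omega>} \<in> sets (PA A)" for n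
    by (rule local_PA[OF k sprt_TD_set_local[OF k]]) auto
  ultimately show ?thesis by auto
qed

end

context setting begin
lemma AE_PA1:
  assumes k: "k \<in> {1..K}" and kA: "k \<in> A" and ae: "AE x in P1 k. P x"
  shows "AE \<omega> in PA A. P (\<omega> k)"
  using AE_PA[OF k, where A=A and P=P] ae kA unfolding Q_def by simp
lemma AE_PA0:
  assumes k: "k \<in> {1..K}" and kA: "k \<notin> A" and ae: "AE x in P0 k. P x"
  shows "AE \<omega> in PA A. P (\<omega> k)"
  using AE_PA[OF k, where A=A and P=P] ae kA unfolding Q_def by simp
end

locale full = setting K M P0 P1 lam for K M P0 P1 lam +
  fixes I J :: "nat \<Rightarrow> real"
  assumes IJ_pos: "\<And>k. k \<in> {1..K} \<Longrightarrow> I k > 0 \<and> J k > 0"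
    and limsup1: "\<And>k. k \<in> {1..K} \<Longrightarrow>
        AE x in P1 k. limsup (\<lambda>n. ereal (lam k n x / real n)) \<le> ereal (I k)"
    and limsup0: "\<And>k. k \<in> {1..K} \<Longrightarrow>
        AE x in P0 k. limsup (\<lambda>n. ereal (- lam k n x / real n)) \<le> ereal (J k)"
    and compl1: "\<And>k \<epsilon>. k \<in> {1..K} \<Longrightarrow> \<epsilon> > 0 \<Longrightarrow>
        summable (\<lambda>n. measure (P1 k) {x \<in> space (P1 k). lam k n x / real n \<le> I k - \<epsilon>})"
    and compl0: "\<And>k \<epsilon>. k \<in> {1..K} \<Longrightarrow> \<epsilon> > 0 \<Longrightarrow>
        summable (\<lambda>n. measure (P0 k) {x \<in> space (P0 k). - lam k n x / real n \<le> J k - \<epsilon>})"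
begin

lemma lam_meas_path:
  assumes k: "k \<in> {1..K}" and m: "m \<ge> 1"
  shows "lam k m \<in> borel_measurable (path_space (M k))"
proof (rule measurable_from_subalg[OF _ lam_meas[OF k m]])
  show "subalgebra (path_space (M k)) (stream_filt (M k) m)"
    unfolding subalgebra_def using stream_filt_sets[of "M k" m] stream_filt_space[of "M k" m] by simp
qed

lemma transfer_meas:
  assumes k: "k \<in> {1..K}" and m: "m \<ge> 1" and s: "s = 1 \<or> s = -1"
  shows "measure (PA A) {\<omega>\<in>space (PA A). s * lam k m (\<omega> k) / real m \<le> c}
       = measure (Q A k) {x\<in>space (Q A k). s * lam k m x / real m \<le> c}"
proof -
  note lam_meas_path[OF k m, measurable]
  define S where "S = {x\<in>space (path_space (M k)). s * lam k m x / real m \<le> c}"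
  have Sm: "S \<in> sets (path_space (M k))" unfolding S_def by measurable
  have e1: "{\<omega>\<in>space (PA A). s * lam k m (\<omega> k) / real m \<le> c} = {\<omega>\<in>Om. \<omega> k \<in> S}"
    unfolding S_def PA_space using Om_comp[OF _ k] by auto
  have e2: "{x\<in>space (Q A k). s * lam k m x / real m \<le> c} = S"
    unfolding S_def Q_space[OF k] ..
  show ?thesis unfolding e1 e2 measure_def set_PA_measure[OF k Sm] ..
qed

definition C1 where "C1 A k \<epsilon> = (\<Sum>n. measure (PA A) {\<omega>\<in>space (PA A). lam k n (\<omega> k) / real n \<le> I k - \<epsilon>})"
definition C0 where "C0 A k \<epsilon> = (\<Sum>n. measure (PA A) {\<omega>\<in>space (PA A). - lam k n (\<omega> k) / real n \<le> J k - \<epsilon>})"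

lemma sum1:
  assumes k: "k \<in> {1..K}" and kA: "k \<in> A" and \<epsilon>: "\<epsilon> > 0"
  shows "summable (\<lambda>n. measure (PA A) {\<omega>\<in>space (PA A). lam k n (\<omega> k) / real n \<le> I k - \<epsilon>})"
proof -
  have "summable (\<lambda>n. measure (P1 k) {x \<in> space (P1 k). lam k (n + 1) x / real (n + 1) \<le> I k - \<epsilon>})"
    using compl1[OF k \<epsilon>] by (subst summable_iff_shift) 
  moreover have "measure (PA A) {\<omega>\<in>space (PA A). lam k (n+1) (\<omega> k) / real (n+1) \<le> I k - \<epsilon>}
      = measure (P1 k) {x \<in> space (P1 k). lam k (n + 1) x / real (n + 1) \<le> I k - \<epsilon>}" for n
    using transfer_meas[OF k _ disjI1[OF refl], of "n+1" A "I k - \<epsilon>"] kA by (simp add: Q_def)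
  ultimately have "summable (\<lambda>n. measure (PA A) {\<omega>\<in>space (PA A). lam k (n+1) (\<omega> k) / real (n+1) \<le> I k - \<epsilon>})"
    by simp
  then show ?thesis by (subst (asm) summable_iff_shift)
qed

lemma sum0:
  assumes k: "k \<in> {1..K}" and kA: "k \<notin> A" and \<epsilon>: "\<epsilon> > 0"
  shows "summable (\<lambda>n. measure (PA A) {\<omega>\<in>space (PA A). - lam k n (\<omega> k) / real n \<le> J k - \<epsilon>})"
proof -
  have "summable (\<lambda>n. measure (P0 k) {x \<in> space (P0 k). - lam k (n + 1) x / real (n + 1) \<le> J k - \<epsilon>})"
    using compl0[OF k \<epsilon>] by (subst summable_iff_shift)
  moreover have "measure (PA A) {\<omega>\<in>space (PA A). - lam k (n+1) (\<omega> k) / real (n+1) \<le> J k - \<epsilon>}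
      = measure (P0 k) {x \<in> space (P0 k). - lam k (n + 1) x / real (n + 1) \<le> J k - \<epsilon>}" for n
    using transfer_meas[OF k _ disjI2[OF refl], of "n+1" A "J k - \<epsilon>"] kA by (simp add: Q_def)
  ultimately have "summable (\<lambda>n. measure (PA A) {\<omega>\<in>space (PA A). - lam k (n+1) (\<omega> k) / real (n+1) \<le> J k - \<epsilon>})"
    by simp
  then show ?thesis by (subst (asm) summable_iff_shift)
qed

lemma UB_app1:
  assumes k: "k \<in> {1..K}" and kA: "k \<in> A" and \<epsilon>: "0 < \<epsilon>" "\<epsilon> < I k" and a: "a > 0"
  shows "E_sprt_T K P0 P1 lam a b k A \<le> ennreal (a / (I k - \<epsilon>) + 2 + C1 A k \<epsilon>)"
  unfolding E_sprt_T_def C1_def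
proof (rule UB_bound[OF PA_prob _ sum1[OF k kA \<epsilon>(1)] \<epsilon> a])
  show "\<And>n. 1 \<le> n \<Longrightarrow> (\<lambda>\<omega>. lam k n (\<omega> k)) \<in> borel_measurable (PA A)" by (rule lam_meas_PA[OF k])
  fix \<omega> n assume "\<omega> \<in> space (PA A)" "1 \<le> n" "a \<le> lam k n (\<omega> k)"
  then show "sprt_T lam a b k \<omega> \<le> enat n" by (intro sprt_T_le) auto
qed

lemma UB_app0:
  assumes k: "k \<in> {1..K}" and kA: "k \<notin> A" and \<epsilon>: "0 < \<epsilon>" "\<epsilon> < J k" and b: "b > 0"
  shows "E_sprt_T K P0 P1 lam a b k A \<le> ennreal (b / (J k - \<epsilon>) + 2 + C0 A k \<epsilon>)"
  unfolding E_sprt_T_def C0_def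
proof (rule UB_bound[OF PA_prob _ sum0[OF k kA \<epsilon>(1)] \<epsilon> b])
  show "\<And>n. 1 \<le> n \<Longrightarrow> (\<lambda>\<omega>. - lam k n (\<omega> k)) \<in> borel_measurable (PA A)"
    using lam_meas_PA[OF k] by measurable
  fix \<omega> n assume "\<omega> \<in> space (PA A)" "1 \<le> n" "b \<le> - lam k n (\<omega> k)"
  then show "sprt_T lam a b k \<omega> \<le> enat n" by (intro sprt_T_le) auto
qed

lemma LB_app1:
  assumes k: "k \<in> {1..K}" and kA: "k \<in> A" and kB: "k \<notin> B" and \<delta>: "0 < \<delta>" "\<delta> < 1"
  shows "\<exists>\<alpha>0>0. \<forall>\<alpha> \<beta> (T::(nat \<Rightarrow> nat \<Rightarrow> 'a) \<Rightarrow> enat) D. 0 < \<alpha> \<longrightarrow> \<alpha> < \<alpha>0 \<longrightarrow> \<beta> < \<alpha>0 \<longrightarrow>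
      (\<forall>\<omega>\<in>space (PA A). T \<omega> \<noteq> 0) \<longrightarrow>
      (\<forall>n\<ge>1. {\<omega>\<in>space (PA A). T \<omega> = enat n \<and> D \<omega>} \<in> sets (local_filt K M k n)) \<longrightarrow>
      {\<omega>\<in>space (PA A). D \<omega>} \<in> sets (PA A) \<longrightarrow>
      measure (PA B) {\<omega>\<in>space (PA B). D \<omega>} \<le> \<alpha> \<longrightarrow> measure (PA A) {\<omega>\<in>space (PA A). \<not> D \<omega>} \<le> \<beta> \<longrightarrow>
      ennreal ((1 - \<delta>) * \<bar>ln \<alpha>\<bar> / I k) \<le> (\<integral>\<^sup>+\<omega>. ennreal_of_enat (T \<omega>) \<partial>PA A)"
proof (rule LB[OF PA_prob PA_prob _ _ _ _ _ _ _ \<delta>])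
  show "sets (PA B) = sets (PA A)" by (simp add: PA_sets)
  show "\<And>n. space (local_filt K M k n) = space (PA A)" by (simp add: local_space PA_space)
  show "\<And>n. sets (local_filt K M k n) \<subseteq> sets (PA A)" using local_sub_joint[OF k] by (simp add: PA_sets)
  show "\<And>n. 1 \<le> n \<Longrightarrow> (\<lambda>\<omega>. lam k n (\<omega> k)) \<in> borel_measurable (local_filt K M k n)"
    by (rule lam_meas_local[OF k]) auto
  show "\<And>n E. 1 \<le> n \<Longrightarrow> E \<in> sets (local_filt K M k n) \<Longrightarrow>
      emeasure (PA A) E = (\<integral>\<^sup>+\<omega>. ennreal (exp (lam k n (\<omega> k))) * indicator E \<omega> \<partial>PA B)"
    by (rule JCM1[OF k _ kA kB])
  show "AE \<omega> in PA A. limsup (\<lambda>n. ereal (lam k n (\<omega> k) / real n)) \<le> ereal (I k)"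
    by (rule AE_PA1[OF k kA limsup1[OF k]])
  show "0 < I k" using IJ_pos[OF k] by simp
qed

lemma LB_app0:
  assumes k: "k \<in> {1..K}" and kA: "k \<notin> A" and kB: "k \<in> B" and \<delta>: "0 < \<delta>" "\<delta> < 1"
  shows "\<exists>\<alpha>0>0. \<forall>\<alpha> \<beta> (T::(nat \<Rightarrow> nat \<Rightarrow> 'a) \<Rightarrow> enat) D. 0 < \<alpha> \<longrightarrow> \<alpha> < \<alpha>0 \<longrightarrow> \<beta> < \<alpha>0 \<longrightarrow>
      (\<forall>\<omega>\<in>space (PA A). T \<omega> \<noteq> 0) \<longrightarrow>
      (\<forall>n\<ge>1. {\<omega>\<in>space (PA A). T \<omega> = enat n \<and> D \<omega>} \<in> sets (local_filt K M k n)) \<longrightarrow>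
      {\<omega>\<in>space (PA A). D \<omega>} \<in> sets (PA A) \<longrightarrow>
      measure (PA B) {\<omega>\<in>space (PA B). D \<omega>} \<le> \<alpha> \<longrightarrow> measure (PA A) {\<omega>\<in>space (PA A). \<not> D \<omega>} \<le> \<beta> \<longrightarrow>
      ennreal ((1 - \<delta>) * \<bar>ln \<alpha>\<bar> / J k) \<le> (\<integral>\<^sup>+\<omega>. ennreal_of_enat (T \<omega>) \<partial>PA A)"
proof (rule LB[OF PA_prob PA_prob _ _ _ _ _ _ _ \<delta>])
  show "sets (PA B) = sets (PA A)" by (simp add: PA_sets)
  show "\<And>n. space (local_filt K M k n) = space (PA A)" by (simp add: local_space PA_space)
  show "\<And>n. sets (local_filt K M k n) \<subseteq> sets (PA A)" using local_sub_joint[OF k] by (simp add: PA_sets)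
  show "\<And>n. 1 \<le> n \<Longrightarrow> (\<lambda>\<omega>. - lam k n (\<omega> k)) \<in> borel_measurable (local_filt K M k n)"
  proof -
    fix n :: nat assume "1 \<le> n"
    note lam_meas_local[OF k this order_refl, measurable]
    show "(\<lambda>\<omega>. - lam k n (\<omega> k)) \<in> borel_measurable (local_filt K M k n)" by measurable
  qed
  show "\<And>n E. 1 \<le> n \<Longrightarrow> E \<in> sets (local_filt K M k n) \<Longrightarrow>
      emeasure (PA A) E = (\<integral>\<^sup>+\<omega>. ennreal (exp (- lam k n (\<omega> k))) * indicator E \<omega> \<partial>PA B)"
    by (rule JCM0[OF k _ kA kB])
  show "AE \<omega> in PA A. limsup (\<lambda>n. ereal (- lam k n (\<omega> k) / real n)) \<le> ereal (J k)"
    by (rule AE_PA0[OF k kA limsup0[OF k]])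
  show "0 < J k" using IJ_pos[OF k] by simp
qed

end

context setting begin

definition trT :: "real \<Rightarrow> real \<Rightarrow> nat \<Rightarrow> nat \<Rightarrow> (nat \<Rightarrow> nat \<Rightarrow> 'a) \<Rightarrow> nat" where
  "trT a b N k \<omega> = (case sprt_T lam a b k \<omega> of enat n \<Rightarrow> min n N | \<infinity> \<Rightarrow> N)"

definition trD :: "real \<Rightarrow> real \<Rightarrow> nat \<Rightarrow> nat \<Rightarrow> (nat \<Rightarrow> nat \<Rightarrow> 'a) \<Rightarrow> bool" where
  "trD a b N k \<omega> = (sprt_D lam a b k \<omega> \<and> sprt_T lam a b k \<omega> \<le> enat N)"

lemma sprt_T_enat_ge1: "sprt_T lam a b k \<omega> = enat n \<Longrightarrow> n \<ge> 1"
  unfolding sprt_T_eq_iff by blast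

lemma trT_le_iff:
  assumes N: "N \<ge> 1"
  shows "trT a b N k \<omega> \<le> t \<longleftrightarrow> (N \<le> t \<or> (\<exists>n\<in>{1..t}. sprt_T lam a b k \<omega> = enat n))"
proof (cases "sprt_T lam a b k \<omega>")
  case (enat n)
  have "n \<ge> 1" by (rule sprt_T_enat_ge1[OF enat])
  then show ?thesis unfolding trT_def enat by auto
next
  case infinity
  then show ?thesis unfolding trT_def by auto
qed

lemma trT_ge1: "N \<ge> 1 \<Longrightarrow> trT a b N k \<omega> \<ge> 1"
  using trT_le_iff[of N a b k \<omega> 0] by auto

lemma trDT_iff:
  "(trD a b N k \<omega> \<and> trT a b N k \<omega> \<le> t) \<longleftrightarrow>
     (\<exists>n\<in>{1..min t N}. sprt_T lam a b k \<omega> = enat n \<and> sprt_D lam a b k \<omega>)"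
proof (cases "sprt_T lam a b k \<omega>")
  case (enat n)
  have "n \<ge> 1" by (rule sprt_T_enat_ge1[OF enat])
  then show ?thesis unfolding trT_def trD_def enat by auto
next
  case infinity
  then show ?thesis unfolding trT_def trD_def by auto
qed

lemma trT_set_local:
  assumes k: "k \<in> {1..K}" and N: "N \<ge> 1"
  shows "{\<omega>\<in>Om. trT a b N k \<omega> \<le> t} \<in> sets (local_filt K M k t)"
proof (cases "N \<le> t")
  case True
  then have "{\<omega>\<in>Om. trT a b N k \<omega> \<le> t} = space (local_filt K M k t)"
    using trT_le_iff[OF N] by (auto simp: local_space)
  then show ?thesis by simp
next
  case False
  then have "{\<omega>\<in>Om. trT a b N k \<omega> \<le> t} = (\<Union>n\<in>{1..t}. {\<omega>\<in>Om. sprt_T lam a b k \<omega> = enat n})"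
    using trT_le_iff[OF N] by auto
  moreover have "(\<Union>n\<in>{1..t}. {\<omega>\<in>Om. sprt_T lam a b k \<omega> = enat n}) \<in> sets (local_filt K M k t)"
    by (intro sets.finite_UN sprt_T_set_local[OF k]) auto
  ultimately show ?thesis by simp
qed

lemma trDT_set_local:
  assumes k: "k \<in> {1..K}"
  shows "{\<omega>\<in>Om. trD a b N k \<omega> \<and> trT a b N k \<omega> \<le> t} \<in> sets (local_filt K M k t)"
proof -
  have "{\<omega>\<in>Om. trD a b N k \<omega> \<and> trT a b N k \<omega> \<le> t}
      = (\<Union>n\<in>{1..min t N}. {\<omega>\<in>Om. sprt_T lam a b k \<omega> = enat n \<and> sprt_D lam a b k \<omega>})"
    using trDT_iff[of a b N k _ t] by auto
  moreover have "(\<Union>n\<in>{1..min t N}. {\<omega>\<in>Om. sprt_T lam a b k \<omega> = enat n \<and> sprt_D lam a b k \<omega>}) \<in> sets (local_filt K M k t)"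
    by (intro sets.finite_UN sprt_TD_set_local[OF k]) auto
  ultimately show ?thesis by simp
qed

lemma trnDT_set_local:
  assumes k: "k \<in> {1..K}" and N: "N \<ge> 1"
  shows "{\<omega>\<in>Om. \<not> trD a b N k \<omega> \<and> trT a b N k \<omega> \<le> t} \<in> sets (local_filt K M k t)"
proof -
  have "{\<omega>\<in>Om. \<not> trD a b N k \<omega> \<and> trT a b N k \<omega> \<le> t}
     = {\<omega>\<in>Om. trT a b N k \<omega> \<le> t} - {\<omega>\<in>Om. trD a b N k \<omega> \<and> trT a b N k \<omega> \<le> t}" by auto
  then show ?thesis using trT_set_local[OF k N] trDT_set_local[OF k] by auto
qed

lemma global_filtration': "filtration (space (joint_space K M)) (global_filt K M)"
  using global_filtration unfolding Om_def .

lemma local_filtration': "k \<in> {1..K} \<Longrightarrow> filtration (space (joint_space K M)) (local_filt K M k)"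
  using local_filtration unfolding Om_def .

lemma trunc_dec:
  assumes N: "N \<ge> 1"
  shows "is_decentralized K M (trT a b N) (trD a b N)"
  unfolding is_decentralized_def is_procedure_def
proof (intro conjI ballI)
  fix k assume k: "k \<in> {1..K}"
  show "1 \<le> trT a b N k \<omega>" for \<omega> by (rule trT_ge1[OF N])
  have lg: "X \<in> sets (local_filt K M k t) \<Longrightarrow> X \<in> sets (global_filt K M t)" for X t
    using local_sub_global[OF k] by auto
  show "stopping_time (global_filt K M) (trT a b N k)"
  proof (rule stopping_timeI)
    fix t
    show "Measurable.pred (global_filt K M t) (\<lambda>x. trT a b N k x \<le> t)"
      unfolding pred_def global_space using lg[OF trT_set_local[OF k N]] .
  qed
  show "stopping_time (local_filt K M k) (trT a b N k)"
  proof (rule stopping_timeI)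
    fix t
    show "Measurable.pred (local_filt K M k t) (\<lambda>x. trT a b N k x \<le> t)"
      unfolding pred_def local_space using trT_set_local[OF k N] .
  qed
  show "trD a b N k \<in> measurable (filtration.pre_sigma (space (joint_space K M)) (global_filt K M) (trT a b N k)) (count_space UNIV)"
    by (rule pre_sigma_bool_meas[OF global_filtration'])
       (auto simp: global_space Om_def[symmetric] intro: lg trDT_set_local[OF k] trnDT_set_local[OF k N])
  show "trD a b N k \<in> measurable (filtration.pre_sigma (space (joint_space K M)) (local_filt K M k) (trT a b N k)) (count_space UNIV)"
    by (rule pre_sigma_bool_meas[OF local_filtration'[OF k]])
       (auto simp: local_space Om_def[symmetric] intro: trDT_set_local[OF k] trnDT_set_local[OF k N])
qed

lemma tailset_PA:
  assumes k: "k \<in> {1..K}"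
  shows "{\<omega>\<in>Om. enat N < sprt_T lam a b k \<omega>} \<in> sets (PA A)"
proof -
  have "{\<omega>\<in>Om. enat N < sprt_T lam a b k \<omega>} = (\<Union>e\<in>{e. enat N < e}. {\<omega>\<in>Om. sprt_T lam a b k \<omega> = e})" by auto
  moreover have "(\<Union>e\<in>{e. enat N < e}. {\<omega>\<in>Om. sprt_T lam a b k \<omega> = e}) \<in> sets (PA A)"
    by (intro sets.countable_UN) (use sprt_T_set_PA[OF k] in auto)
  ultimately show ?thesis by simp
qed

lemma trunc_err:
  assumes Pis: "Pis \<subseteq> Pow {1..K}"
    and ok: "error_ok K P0 P1 (sprt_D lam a b) \<alpha> (\<beta>/2) Pis"
    and tail: "\<forall>A\<in>Pis. measure (PA A) {\<omega>\<in>Om. \<exists>k\<in>{1..K}. enat N < sprt_T lam a b k \<omega>} \<le> \<beta>/2"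
  shows "error_ok K P0 P1 (trD a b N) \<alpha> \<beta> Pis"
  unfolding error_ok_def
proof (intro ballI conjI)
  fix A assume A: "A \<in> Pis"
  then have AK: "A \<subseteq> {1..K}" using Pis by auto
  interpret prob_space "PA A" by (rule PA_prob)
  have s1: "{\<omega>\<in>space (PA A). \<exists>j\<in>{1..K} - A. sprt_D lam a b j \<omega>} \<in> sets (PA A)"
  proof -
    have "{\<omega>\<in>space (PA A). \<exists>j\<in>{1..K} - A. sprt_D lam a b j \<omega>} = (\<Union>j\<in>{1..K} - A. {\<omega>\<in>Om. sprt_D lam a b j \<omega>})"
      by (auto simp: PA_space)
    moreover have "(\<Union>j\<in>{1..K} - A. {\<omega>\<in>Om. sprt_D lam a b j \<omega>}) \<in> sets (PA A)"
      by (intro sets.finite_UN sprt_D_set_PA) auto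
    ultimately show ?thesis by simp
  qed
  have "FWE1 K P0 P1 (trD a b N) A \<le> FWE1 K P0 P1 (sprt_D lam a b) A"
    unfolding FWE1_def by (rule finite_measure_mono[OF _ s1]) (auto simp: trD_def)
  also have "\<dots> \<le> \<alpha>" using ok A unfolding error_ok_def by auto
  finally show "FWE1 K P0 P1 (trD a b N) A \<le> \<alpha>" .
  have s2: "{\<omega>\<in>space (PA A). \<exists>i\<in>A. \<not> sprt_D lam a b i \<omega>} \<in> sets (PA A)"
  proof -
    have "{\<omega>\<in>space (PA A). \<exists>i\<in>A. \<not> sprt_D lam a b i \<omega>} = (\<Union>i\<in>A. Om - {\<omega>\<in>Om. sprt_D lam a b i \<omega>})"
      by (auto simp: PA_space)
    moreover have "(\<Union>i\<in>A. Om - {\<omega>\<in>Om. sprt_D lam a b i \<omega>}) \<in> sets (PA A)"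
    proof (intro sets.finite_UN sets.Diff)
      show "finite A" using AK finite_subset by blast
      show "Om \<in> sets (PA A)" using sets.top[of "PA A"] by (simp add: PA_space)
      fix i assume "i \<in> A"
      then show "{\<omega>\<in>Om. sprt_D lam a b i \<omega>} \<in> sets (PA A)" using AK by (intro sprt_D_set_PA) auto
    qed
    ultimately show ?thesis by simp
  qed
  have s3: "{\<omega>\<in>Om. \<exists>k\<in>{1..K}. enat N < sprt_T lam a b k \<omega>} \<in> sets (PA A)"
  proof -
    have "{\<omega>\<in>Om. \<exists>k\<in>{1..K}. enat N < sprt_T lam a b k \<omega>} = (\<Union>k\<in>{1..K}. {\<omega>\<in>Om. enat N < sprt_T lam a b k \<omega>})"
      by auto
    moreover have "(\<Union>k\<in>{1..K}. {\<omega>\<in>Om. enat N < sprt_T lam a b k \<omega>}) \<in> sets (PA A)"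
      by (intro sets.finite_UN tailset_PA) auto
    ultimately show ?thesis by simp
  qed
  have sub: "{\<omega>\<in>space (PA A). \<exists>i\<in>A. \<not> trD a b N i \<omega>}
      \<subseteq> {\<omega>\<in>space (PA A). \<exists>i\<in>A. \<not> sprt_D lam a b i \<omega>} \<union> {\<omega>\<in>Om. \<exists>k\<in>{1..K}. enat N < sprt_T lam a b k \<omega>}"
    using AK by (auto simp: trD_def PA_space not_le)
  have "FWE2 K P0 P1 (trD a b N) A
      \<le> measure (PA A) ({\<omega>\<in>space (PA A). \<exists>i\<in>A. \<not> sprt_D lam a b i \<omega>} \<union> {\<omega>\<in>Om. \<exists>k\<in>{1..K}. enat N < sprt_T lam a b k \<omega>})"
    unfolding FWE2_def by (rule finite_measure_mono[OF sub]) (use s2 s3 in auto)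
  also have "\<dots> \<le> measure (PA A) {\<omega>\<in>space (PA A). \<exists>i\<in>A. \<not> sprt_D lam a b i \<omega>} + measure (PA A) {\<omega>\<in>Om. \<exists>k\<in>{1..K}. enat N < sprt_T lam a b k \<omega>}"
    by (rule measure_Un_le[OF s2 s3])
  also have "\<dots> \<le> \<beta>/2 + \<beta>/2"
  proof (rule add_mono)
    show "measure (PA A) {\<omega>\<in>space (PA A). \<exists>i\<in>A. \<not> sprt_D lam a b i \<omega>} \<le> \<beta>/2"
      using ok A unfolding error_ok_def FWE2_def by auto
    show "measure (PA A) {\<omega>\<in>Om. \<exists>k\<in>{1..K}. enat N < sprt_T lam a b k \<omega>} \<le> \<beta>/2"
      using tail A by auto
  qed
  finally show "FWE2 K P0 P1 (trD a b N) A \<le> \<beta>" by simp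
qed

lemma Ldec_le:
  assumes k: "k \<in> {1..K}" and N: "N \<ge> 1"
    and ok: "error_ok K P0 P1 (trD a b N) \<alpha> \<beta> Pis"
  shows "L_dec K M P0 P1 k A \<alpha> \<beta> Pis \<le> E_sprt_T K P0 P1 lam a b k A"
proof -
  have mem: "(trT a b N, trD a b N) \<in> {(T, D). is_decentralized K M T D \<and> error_ok K P0 P1 D \<alpha> \<beta> Pis}"
    using trunc_dec[OF N] ok by simp
  have "L_dec K M P0 P1 k A \<alpha> \<beta> Pis \<le> (\<integral>\<^sup>+ \<omega>. ennreal (real (trT a b N k \<omega>)) \<partial>PA A)"
    unfolding L_dec_def using INF_lower[OF mem, of "\<lambda>TD. \<integral>\<^sup>+ \<omega>. ennreal (real (fst TD k \<omega>)) \<partial>PA A"] by simp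
  also have "\<dots> \<le> (\<integral>\<^sup>+ \<omega>. ennreal_of_enat (sprt_T lam a b k \<omega>) \<partial>PA A)"
  proof (rule nn_integral_mono)
    fix \<omega>
    show "ennreal (real (trT a b N k \<omega>)) \<le> ennreal_of_enat (sprt_T lam a b k \<omega>)"
      by (cases "sprt_T lam a b k \<omega>") (auto simp: trT_def ennreal_of_nat_eq_real_of_nat[symmetric])
  qed
  finally show ?thesis unfolding E_sprt_T_def .
qed

end

context full begin

lemma E_fin:
  assumes k: "k \<in> {1..K}" and a: "a > 0" and b: "b > 0"
  shows "E_sprt_T K P0 P1 lam a b k A < \<infinity>"
proof (cases "k \<in> A")
  case True
  have I: "I k > 0" using IJ_pos[OF k] by simp
  have "E_sprt_T K P0 P1 lam a b k A \<le> ennreal (a / (I k - I k / 2) + 2 + C1 A k (I k / 2))"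
    by (rule UB_app1[OF k True]) (use I a in auto)
  also have "\<dots> < \<infinity>" by simp
  finally show ?thesis .
next
  case False
  have J: "J k > 0" using IJ_pos[OF k] by simp
  have "E_sprt_T K P0 P1 lam a b k A \<le> ennreal (b / (J k - J k / 2) + 2 + C0 A k (J k / 2))"
    by (rule UB_app0[OF k False]) (use J b in auto)
  also have "\<dots> < \<infinity>" by simp
  finally show ?thesis .
qed

lemma T_fin_AE:
  assumes k: "k \<in> {1..K}" and a: "a > 0" and b: "b > 0"
  shows "AE \<omega> in PA A. sprt_T lam a b k \<omega> \<noteq> \<infinity>"
proof -
  have m: "(\<lambda>\<omega>. ennreal_of_enat (sprt_T lam a b k \<omega>)) \<in> borel_measurable (PA A)"
    using measurable_compose[OF sprt_T_meas_PA[OF k], of "ennreal_of_enat" borel] by simp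
  have "AE \<omega> in PA A. ennreal_of_enat (sprt_T lam a b k \<omega>) \<noteq> \<infinity>"
    by (rule nn_integral_PInf_AE[OF m]) (use E_fin[OF k a b, of A] in \<open>simp add: E_sprt_T_def\<close>)
  then show ?thesis
  proof eventually_elim
    case (elim \<omega>)
    show ?case
    proof
      assume "sprt_T lam a b k \<omega> = \<infinity>"
      then show False using elim by simp
    qed
  qed
qed

lemma tail_N:
  assumes a: "a > 0" and b: "b > 0" and fin: "finite Pis" and \<beta>: "\<beta> > 0"
  shows "\<exists>N\<ge>1. \<forall>A\<in>Pis. measure (PA A) {\<omega>\<in>Om. \<exists>k\<in>{1..K}. enat N < sprt_T lam a b k \<omega>} \<le> \<beta>/2"
proof -
  define U where "U N = {\<omega>\<in>Om. \<exists>k\<in>{1..K}. enat N < sprt_T lam a b k \<omega>}" for N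
  have lim: "(\<lambda>N. measure (PA A) (U N)) \<longlonglongrightarrow> 0" for A
  proof -
    interpret prob_space "PA A" by (rule PA_prob)
    have Um: "U N \<in> sets (PA A)" for N
    proof -
      have "U N = (\<Union>k\<in>{1..K}. {\<omega>\<in>Om. enat N < sprt_T lam a b k \<omega>})" unfolding U_def by auto
      moreover have "(\<Union>k\<in>{1..K}. {\<omega>\<in>Om. enat N < sprt_T lam a b k \<omega>}) \<in> sets (PA A)"
        by (intro sets.finite_UN tailset_PA) auto
      ultimately show ?thesis by simp
    qed
    have dec: "decseq U" unfolding decseq_def
    proof (intro allI impI subsetI)
      fix m n \<omega> assume mn: "m \<le> n" and w: "\<omega> \<in> U n"
      then obtain k where kk: "k\<in>{1..K}" "\<omega>\<in>Om" "enat n < sprt_T lam a b k \<omega>" unfolding U_def by blast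
      have "enat m \<le> enat n" using mn by simp
      then have "enat m < sprt_T lam a b k \<omega>" using kk(3) by (rule order.strict_trans1)
      then show "\<omega> \<in> U m" unfolding U_def using kk by blast
    qed
    define Inf where "Inf = {\<omega>\<in>Om. \<exists>k\<in>{1..K}. sprt_T lam a b k \<omega> = \<infinity>}"
    have Infm: "Inf \<in> sets (PA A)"
    proof -
      have "Inf = (\<Union>k\<in>{1..K}. {\<omega>\<in>Om. sprt_T lam a b k \<omega> = \<infinity>})" unfolding Inf_def by auto
      moreover have "(\<Union>k\<in>{1..K}. {\<omega>\<in>Om. sprt_T lam a b k \<omega> = \<infinity>}) \<in> sets (PA A)"
        by (intro sets.finite_UN sprt_T_set_PA) auto
      ultimately show ?thesis by simp
    qed
    have aeF: "AE \<omega> in PA A. \<forall>k\<in>{1..K}. sprt_T lam a b k \<omega> \<noteq> \<infinity>"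
      using AE_finite_allI[where S="{1..K}" and M="PA A" and Q="\<lambda>k \<omega>. sprt_T lam a b k \<omega> \<noteq> \<infinity>"] T_fin_AE[OF _ a b, where A=A]
      by auto
    have eqInf: "{\<omega>\<in>space (PA A). \<not> (\<forall>k\<in>{1..K}. sprt_T lam a b k \<omega> \<noteq> \<infinity>)} = Inf"
      unfolding Inf_def PA_space by simp
    have "emeasure (PA A) Inf = 0" by (rule AE_iff_measurable[OF Infm eqInf, THEN iffD1, OF aeF])
    then have mInf: "measure (PA A) Inf = 0" by (simp add: emeasure_eq_measure)
    have sub: "(\<Inter>N. U N) \<subseteq> Inf"
    proof
      fix \<omega> assume w: "\<omega> \<in> (\<Inter>N. U N)"
      then have wO: "\<omega> \<in> Om" unfolding U_def by blast
      show "\<omega> \<in> Inf"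
      proof (rule ccontr)
        assume nI: "\<omega> \<notin> Inf"
        have fin': "\<forall>k\<in>{1..K}. sprt_T lam a b k \<omega> \<noteq> \<infinity>"
        proof (intro ballI notI)
          fix k assume "k \<in> {1..K}" "sprt_T lam a b k \<omega> = \<infinity>"
          then have "\<omega> \<in> Inf" using wO unfolding Inf_def by blast
          then show False using nI by contradiction
        qed
        define N\<omega> where "N\<omega> = (\<Sum>k\<in>{1..K}. the_enat (sprt_T lam a b k \<omega>))"
        have "\<omega> \<in> U N\<omega>" using w by blast
        then obtain k where k: "k \<in> {1..K}" and lt: "enat N\<omega> < sprt_T lam a b k \<omega>" unfolding U_def by blast
        have le: "the_enat (sprt_T lam a b k \<omega>) \<le> N\<omega>" unfolding N\<omega>_def using k by (intro member_le_sum) auto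
        have "sprt_T lam a b k \<omega> \<noteq> \<infinity>" using fin' k by blast
        then obtain n where Tn: "sprt_T lam a b k \<omega> = enat n" by (cases "sprt_T lam a b k \<omega>") auto
        have "n \<le> N\<omega>" using le unfolding Tn by simp
        then have "enat n \<le> enat N\<omega>" by simp
        then show False using lt unfolding Tn by simp
      qed
    qed
    have "measure (PA A) (\<Inter>N. U N) \<le> measure (PA A) Inf"
      by (rule finite_measure_mono[OF sub Infm])
    then have m0: "measure (PA A) (\<Inter>N. U N) = 0" using mInf measure_nonneg[of "PA A" "\<Inter>N. U N"] by linarith
    show ?thesis using finite_Lim_measure_decseq[of U] Um dec m0 by auto
  qed
  have "eventually (\<lambda>N. \<forall>A\<in>Pis. measure (PA A) (U N) < \<beta>/2) sequentially"
    using fin by (intro eventually_ball_finite ballI order_tendstoD(2)[OF lim]) (use \<beta> in auto)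
  moreover have "eventually (\<lambda>N. N \<ge> (1::nat)) sequentially" by (rule eventually_ge_at_top)
  ultimately have "eventually (\<lambda>N. N \<ge> 1 \<and> (\<forall>A\<in>Pis. measure (PA A) (U N) < \<beta>/2)) sequentially"
    by eventually_elim auto
  then obtain N0 where "\<forall>n\<ge>N0. n \<ge> 1 \<and> (\<forall>A\<in>Pis. measure (PA A) (U n) < \<beta>/2)"
    unfolding eventually_sequentially by blast
  then have "N0 \<ge> 1 \<and> (\<forall>A\<in>Pis. measure (PA A) (U N0) < \<beta>/2)" by blast
  then obtain N where "N \<ge> 1" "\<forall>A\<in>Pis. measure (PA A) (U N) < \<beta>/2" by blast
  then show ?thesis unfolding U_def by (intro exI[of _ N]) auto
qed

end

lemma upper_arith:
  fixes I \<delta> thr L C :: real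
  assumes I: "I > 0" and \<delta>: "0 < \<delta>" "\<delta> < 1" and thr: "thr \<le> (1 + \<delta>/8) * L"
    and L: "L \<ge> 2 * I * (2 + \<bar>C\<bar>) / \<delta>" and L0: "L \<ge> 0"
  shows "thr / (I - I * \<delta> / 8) + 2 + C \<le> (1 + \<delta>) * L / I"
proof -
  have Ie: "I - I * \<delta> / 8 = I * (1 - \<delta>/8)" by (simp add: algebra_simps)
  have Ip: "I * (1 - \<delta>/8) > 0" using I \<delta> by simp
  have r: "(1 + \<delta>/8) / (1 - \<delta>/8) \<le> 1 + \<delta>/2"
  proof -
    have "(1 + \<delta>/8) \<le> (1 + \<delta>/2) * (1 - \<delta>/8)"
    proof -
      have "(1 + \<delta>/2) * (1 - \<delta>/8) - (1 + \<delta>/8) = \<delta> / 4 - \<delta> * \<delta> / 16" by (simp add: field_simps)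
      moreover have "\<delta> * \<delta> \<le> \<delta> * 1" using \<delta> by (intro mult_left_mono) auto
      ultimately show ?thesis using \<delta> by linarith
    qed
    then show ?thesis using \<delta> by (simp add: pos_divide_le_eq)
  qed
  have "thr / (I - I * \<delta> / 8) \<le> (1 + \<delta>/8) * L / (I * (1 - \<delta>/8))"
    unfolding Ie using thr Ip by (intro divide_right_mono) auto
  also have "\<dots> = ((1 + \<delta>/8) / (1 - \<delta>/8)) * (L / I)" by (simp add: field_simps)
  also have "\<dots> \<le> (1 + \<delta>/2) * (L / I)" using r L0 I by (intro mult_right_mono) auto
  finally have t1: "thr / (I - I * \<delta> / 8) \<le> (1 + \<delta>/2) * (L / I)" .
  have "2 * I * (2 + \<bar>C\<bar>) \<le> L * \<delta>" using L \<delta> by (simp add: pos_divide_le_eq)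
  then have "2 + \<bar>C\<bar> \<le> (\<delta>/2) * (L / I)" using I by (simp add: field_simps)
  then have t2: "2 + C \<le> (\<delta>/2) * (L / I)" by linarith
  have "(1 + \<delta>/2) * (L / I) + (\<delta>/2) * (L / I) = (1 + \<delta>) * L / I" using I by (simp add: field_simps)
  then show ?thesis using t1 t2 by linarith
qed

lemma enn_bounds:
  fixes X :: ennreal
  assumes l: "0 \<le> l" and lo: "ennreal l \<le> X" and up: "X \<le> ennreal u" and u0: "0 \<le> u"
  shows "l \<le> enn2real X \<and> enn2real X \<le> u"
proof -
  have fin: "X < top" using up by (simp add: le_less_trans)
  have "l = enn2real (ennreal l)" using l by simp
  also have "\<dots> \<le> enn2real X" by (rule enn2real_mono[OF lo fin])
  finally have "l \<le> enn2real X" .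
  moreover have "enn2real X \<le> enn2real (ennreal u)" by (rule enn2real_mono[OF up]) simp
  ultimately show ?thesis using u0 by simp
qed

lemma asymp_from_bounds:
  fixes f g :: "'x \<Rightarrow> real"
  assumes gpos: "eventually (\<lambda>x. g x > 0) F"
    and bnd: "\<And>\<delta>. 0 < \<delta> \<Longrightarrow> \<delta> < 1 \<Longrightarrow> eventually (\<lambda>x. (1 - \<delta>) * g x \<le> f x \<and> f x \<le> (1 + \<delta>) * g x) F"
  shows "f \<sim>[F] g"
proof (rule asymp_equivI')
  show "((\<lambda>x. f x / g x) \<longlongrightarrow> 1) F"
  proof (rule tendstoI)
    fix e :: real assume e: "e > 0"
    define \<delta> where "\<delta> = min (e/2) (1/2)"
    have \<delta>: "0 < \<delta>" "\<delta> < 1" "\<delta> < e" unfolding \<delta>_def using e by auto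
    from bnd[OF \<delta>(1,2)] gpos show "eventually (\<lambda>x. dist (f x / g x) 1 < e) F"
    proof eventually_elim
      case (elim x)
      then have "(1 - \<delta>) \<le> f x / g x" "f x / g x \<le> 1 + \<delta>" by (simp_all add: field_simps)
      then have "\<bar>f x / g x - 1\<bar> \<le> \<delta>" by linarith
      then show ?case using \<delta> by (simp add: dist_real_def)
    qed
  qed
qed

lemma asymp_boundsD:
  fixes f g :: "'x \<Rightarrow> real"
  assumes eq: "f \<sim>[F] g" and gpos: "eventually (\<lambda>x. g x > 0) F" and \<delta>: "\<delta> > 0"
  shows "eventually (\<lambda>x. \<bar>f x - g x\<bar> \<le> \<delta> * g x) F"
proof -
  have "eventually (\<lambda>x. dist (if f x = 0 \<and> g x = 0 then 1 else f x / g x) 1 < \<delta>) F"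
    using tendstoD[OF asymp_equivD[OF eq] \<delta>] .
  with gpos show ?thesis
  proof eventually_elim
    case (elim x)
    then have "\<bar>f x / g x - 1\<bar> < \<delta>" by (simp add: dist_real_def)
    then have "\<bar>(f x - g x) / g x\<bar> < \<delta>" using elim by (simp add: diff_divide_distrib)
    then have "\<bar>f x - g x\<bar> / g x < \<delta>" using elim by simp
    then show ?case using elim by (simp add: pos_divide_less_eq less_imp_le)
  qed
qed

lemma ab_to_0_in: "eventually (\<lambda>x. 0 < fst x \<and> fst x < 1 \<and> 0 < snd x \<and> snd x < 1) ab_to_0"
  unfolding ab_to_0_def eventually_at_filter by (intro always_eventually) (auto simp: mem_Times_iff)

lemma ab_to_0_small: "c > 0 \<Longrightarrow> eventually (\<lambda>x. fst x < c \<and> snd x < c) ab_to_0"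
proof -
  assume c: "c > 0"
  have t1: "((\<lambda>x. fst x) \<longlongrightarrow> 0) ab_to_0"
    unfolding ab_to_0_def using tendsto_fst[OF tendsto_ident_at, of "(0::real, 0::real)"] by simp
  have t2: "((\<lambda>x. snd x) \<longlongrightarrow> 0) ab_to_0"
    unfolding ab_to_0_def using tendsto_snd[OF tendsto_ident_at, of "(0::real, 0::real)"] by simp
  show ?thesis using order_tendstoD(2)[OF t1 c] order_tendstoD(2)[OF t2 c] by eventually_elim auto
qed

lemma ab_to_0_half: "filterlim (\<lambda>x. (fst x, snd x / 2)) ab_to_0 ab_to_0"
  unfolding ab_to_0_def[of] filterlim_at
proof
  show "eventually (\<lambda>x. (fst x, snd x / 2) \<in> {0<..<1} \<times> {0<..<1::real} \<and> (fst x, snd x / (2::real)) \<noteq> (0, 0)) (at (0::real, 0::real) within {0<..<1} \<times> {0<..<1})"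
    using ab_to_0_in unfolding ab_to_0_def by eventually_elim auto
  have t1: "((\<lambda>x. fst x) \<longlongrightarrow> 0) (at (0::real, 0::real) within {0<..<1} \<times> {0<..<1})"
    using tendsto_fst[OF tendsto_ident_at, of "(0::real, 0::real)"] by simp
  have t2: "((\<lambda>x. snd x / 2) \<longlongrightarrow> 0) (at (0::real, 0::real) within {0<..<1} \<times> {0<..<1})"
    using tendsto_divide[OF tendsto_snd[OF tendsto_ident_at, of "(0::real, 0::real)"] tendsto_const[of 2]] by simp
  show "((\<lambda>x. (fst x, snd x / (2::real))) \<longlongrightarrow> (0, 0)) (at (0::real, 0::real) within {0<..<1} \<times> {0<..<1})"
    using tendsto_Pair[OF t1 t2] by simp
qed

lemma eventually_half:
  assumes "eventually P ab_to_0"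
  shows "eventually (\<lambda>x. P (fst x, snd x / 2)) ab_to_0"
  using ab_to_0_half assms unfolding filterlim_iff by blast

locale thmctx = full K M P0 P1 lam I J for K M P0 P1 lam I J +
  fixes Pis :: "nat set set" and a b :: "real \<times> real \<Rightarrow> real"
  assumes Pi_sub: "Pis \<subseteq> Pow {1..K}"
    and Pi_rich: "\<And>k. k \<in> {1..K} \<Longrightarrow> \<exists>A\<in>Pis. \<exists>B\<in>Pis. k \<in> A \<and> k \<notin> B"
    and ab_pos: "\<And>\<alpha> \<beta>. \<alpha> \<in> {0<..<1} \<Longrightarrow> \<beta> \<in> {0<..<1} \<Longrightarrow> a (\<alpha>, \<beta>) > 0 \<and> b (\<alpha>, \<beta>) > 0"
    and sprt_ok: "\<And>\<alpha> \<beta>. \<alpha> \<in> {0<..<1} \<Longrightarrow> \<beta> \<in> {0<..<1} \<Longrightarrow>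
        error_ok K P0 P1 (sprt_D lam (a (\<alpha>, \<beta>)) (b (\<alpha>, \<beta>))) \<alpha> \<beta> Pis"
    and a_asymp: "a \<sim>[ab_to_0] (\<lambda>(\<alpha>, \<beta>). \<bar>ln \<alpha>\<bar>)"
    and b_asymp: "b \<sim>[ab_to_0] (\<lambda>(\<alpha>, \<beta>). \<bar>ln \<beta>\<bar>)"
begin

lemma Pis_fin: "finite Pis"
  using Pi_sub by (rule finite_subset) simp

lemma A_sub: "A \<in> Pis \<Longrightarrow> A \<subseteq> {1..K}" using Pi_sub by auto

lemma D_le_FWE1:
  assumes i: "i \<in> {1..K}" and iB: "i \<notin> B"
    and Dm: "\<And>j. j \<in> {1..K} \<Longrightarrow> {\<omega>\<in>Om. D j \<omega>} \<in> sets (PA B)"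
  shows "measure (PA B) {\<omega>\<in>space (PA B). D i \<omega>} \<le> FWE1 K P0 P1 D B"
proof -
  interpret prob_space "PA B" by (rule PA_prob)
  have "{\<omega>\<in>space (PA B). \<exists>j\<in>{1..K} - B. D j \<omega>} = (\<Union>j\<in>{1..K} - B. {\<omega>\<in>Om. D j \<omega>})"
    by (auto simp: PA_space)
  moreover have "(\<Union>j\<in>{1..K} - B. {\<omega>\<in>Om. D j \<omega>}) \<in> sets (PA B)"
    by (intro sets.finite_UN Dm) auto
  ultimately have s: "{\<omega>\<in>space (PA B). \<exists>j\<in>{1..K} - B. D j \<omega>} \<in> sets (PA B)" by simp
  show ?thesis unfolding FWE1_def
    by (rule finite_measure_mono[OF _ s]) (use i iB in auto)
qed

lemma nD_le_FWE2:
  assumes iA: "i \<in> A" and A: "A \<subseteq> {1..K}"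
    and Dm: "\<And>j. j \<in> {1..K} \<Longrightarrow> {\<omega>\<in>Om. D j \<omega>} \<in> sets (PA A)"
  shows "measure (PA A) {\<omega>\<in>space (PA A). \<not> D i \<omega>} \<le> FWE2 K P0 P1 D A"
proof -
  interpret prob_space "PA A" by (rule PA_prob)
  have "{\<omega>\<in>space (PA A). \<exists>i\<in>A. \<not> D i \<omega>} = (\<Union>i\<in>A. Om - {\<omega>\<in>Om. D i \<omega>})"
    by (auto simp: PA_space)
  moreover have "(\<Union>i\<in>A. Om - {\<omega>\<in>Om. D i \<omega>}) \<in> sets (PA A)"
  proof (intro sets.finite_UN sets.Diff)
    show "finite A" using A finite_subset by blast
    show "Om \<in> sets (PA A)" using sets.top[of "PA A"] by (simp add: PA_space)
    fix i assume "i \<in> A" then show "{\<omega>\<in>Om. D i \<omega>} \<in> sets (PA A)" using A Dm by auto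
  qed
  ultimately have s: "{\<omega>\<in>space (PA A). \<exists>i\<in>A. \<not> D i \<omega>} \<in> sets (PA A)" by simp
  show ?thesis unfolding FWE2_def
    by (rule finite_measure_mono[OF _ s]) (use iA in auto)
qed

lemma dec_sets:
  assumes dec: "is_decentralized K M T D" and k: "k \<in> {1..K}"
  shows "{\<omega>\<in>Om. T k \<omega> = n \<and> D k \<omega>} \<in> sets (local_filt K M k n)"
    and "{\<omega>\<in>Om. T k \<omega> = n \<and> \<not> D k \<omega>} \<in> sets (local_filt K M k n)"
    and "{\<omega>\<in>Om. D k \<omega>} \<in> sets (PA A)"
    and "\<And>\<omega>. \<omega> \<in> Om \<Longrightarrow> T k \<omega> \<ge> 1"
proof -
  have st: "stopping_time (local_filt K M k) (T k)"
    and Dm: "D k \<in> measurable (filtration.pre_sigma Om (local_filt K M k) (T k)) (count_space UNIV)"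
    using dec k unfolding is_decentralized_def Om_def by auto
  have Dm': "(\<lambda>\<omega>. \<not> D k \<omega>) \<in> measurable (filtration.pre_sigma Om (local_filt K M k) (T k)) (count_space UNIV)"
    using measurable_compose[OF Dm, of Not "count_space UNIV"] by (simp add: comp_def)
  show s1: "{\<omega>\<in>Om. T k \<omega> = n \<and> D k \<omega>} \<in> sets (local_filt K M k n)" for n
    by (rule pre_sigma_bool_inv[OF local_filtration[OF k] st Dm])
  show "{\<omega>\<in>Om. T k \<omega> = n \<and> \<not> D k \<omega>} \<in> sets (local_filt K M k n)"
    by (rule pre_sigma_bool_inv[OF local_filtration[OF k] st Dm'])
  have "{\<omega>\<in>Om. D k \<omega>} = (\<Union>n. {\<omega>\<in>Om. T k \<omega> = n \<and> D k \<omega>})" by auto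
  moreover have "(\<Union>n. {\<omega>\<in>Om. T k \<omega> = n \<and> D k \<omega>}) \<in> sets (PA A)"
    using local_PA[OF k s1] by auto
  ultimately show "{\<omega>\<in>Om. D k \<omega>} \<in> sets (PA A)" by simp
  show "\<And>\<omega>. \<omega> \<in> Om \<Longrightarrow> T k \<omega> \<ge> 1"
    using dec k unfolding is_decentralized_def is_procedure_def Om_def by auto
qed

lemma ev_in: "eventually (\<lambda>x. fst x \<in> {0<..<1} \<and> snd x \<in> {0<..<1}) ab_to_0"
  using ab_to_0_in by eventually_elim auto

end

context thmctx begin

lemma lowE1:
  assumes A: "A \<in> Pis" and iA: "i \<in> A" and \<delta>: "0 < \<delta>" "\<delta> < 1"
  shows "eventually (\<lambda>x. ennreal ((1 - \<delta>) * \<bar>ln (fst x)\<bar> / I i) \<le> E_sprt_T K P0 P1 lam (a x) (b x) i A) ab_to_0"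
proof -
  have i: "i \<in> {1..K}" using A_sub[OF A] iA by auto
  obtain B where B: "B \<in> Pis" "i \<notin> B" using Pi_rich[OF i] by blast
  obtain \<alpha>0 where \<alpha>0: "\<alpha>0 > 0" and H: "\<forall>\<alpha> \<beta> (T::(nat \<Rightarrow> nat \<Rightarrow> 'a) \<Rightarrow> enat) D. 0 < \<alpha> \<longrightarrow> \<alpha> < \<alpha>0 \<longrightarrow> \<beta> < \<alpha>0 \<longrightarrow>
      (\<forall>\<omega>\<in>space (PA A). T \<omega> \<noteq> 0) \<longrightarrow>
      (\<forall>n\<ge>1. {\<omega>\<in>space (PA A). T \<omega> = enat n \<and> D \<omega>} \<in> sets (local_filt K M i n)) \<longrightarrow>
      {\<omega>\<in>space (PA A). D \<omega>} \<in> sets (PA A) \<longrightarrow>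
      measure (PA B) {\<omega>\<in>space (PA B). D \<omega>} \<le> \<alpha> \<longrightarrow> measure (PA A) {\<omega>\<in>space (PA A). \<not> D \<omega>} \<le> \<beta> \<longrightarrow>
      ennreal ((1 - \<delta>) * \<bar>ln \<alpha>\<bar> / I i) \<le> (\<integral>\<^sup>+\<omega>. ennreal_of_enat (T \<omega>) \<partial>PA A)"
    using LB_app1[OF i iA B(2) \<delta>] by blast
  from ab_to_0_small[OF \<alpha>0] ev_in show ?thesis
  proof eventually_elim
    case (elim x)
    define \<alpha> \<beta> where "\<alpha> = fst x" and "\<beta> = snd x"
    have x: "x = (\<alpha>, \<beta>)" unfolding \<alpha>_def \<beta>_def by simp
    have \<alpha>\<beta>: "\<alpha> \<in> {0<..<1}" "\<beta> \<in> {0<..<1}" using elim unfolding \<alpha>_def \<beta>_def by auto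
    have ok: "error_ok K P0 P1 (sprt_D lam (a x) (b x)) \<alpha> \<beta> Pis" using sprt_ok[OF \<alpha>\<beta>] x by simp
    have Dm: "\<And>j C. j \<in> {1..K} \<Longrightarrow> {\<omega>\<in>Om. sprt_D lam (a x) (b x) j \<omega>} \<in> sets (PA C)"
      by (rule sprt_D_set_PA)
    have c1: "measure (PA B) {\<omega>\<in>space (PA B). sprt_D lam (a x) (b x) i \<omega>} \<le> \<alpha>"
      using D_le_FWE1[OF i B(2) Dm] ok B(1) unfolding error_ok_def by fastforce
    have c2: "measure (PA A) {\<omega>\<in>space (PA A). \<not> sprt_D lam (a x) (b x) i \<omega>} \<le> \<beta>"
      using nD_le_FWE2[OF iA A_sub[OF A] Dm] ok A unfolding error_ok_def by fastforce
    have c3: "\<forall>n\<ge>1. {\<omega>\<in>space (PA A). sprt_T lam (a x) (b x) i \<omega> = enat n \<and> sprt_D lam (a x) (b x) i \<omega>} \<in> sets (local_filt K M i n)"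
      unfolding PA_space using sprt_TD_set_local[OF i] by auto
    have c4: "{\<omega>\<in>space (PA A). sprt_D lam (a x) (b x) i \<omega>} \<in> sets (PA A)"
      unfolding PA_space by (rule Dm[OF i])
    have c5: "\<forall>\<omega>\<in>space (PA A). sprt_T lam (a x) (b x) i \<omega> \<noteq> 0" by (simp add: sprt_T_ne0)
    have "ennreal ((1 - \<delta>) * \<bar>ln \<alpha>\<bar> / I i) \<le> (\<integral>\<^sup>+\<omega>. ennreal_of_enat (sprt_T lam (a x) (b x) i \<omega>) \<partial>PA A)"
      using H[rule_format, of \<alpha> \<beta> "sprt_T lam (a x) (b x) i" "sprt_D lam (a x) (b x) i"] c1 c2 c3 c4 c5 \<alpha>\<beta> elim
      unfolding \<alpha>_def \<beta>_def by auto
    then show ?case unfolding E_sprt_T_def \<alpha>_def .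
  qed
qed

lemma lowL1:
  assumes A: "A \<in> Pis" and iA: "i \<in> A" and \<delta>: "0 < \<delta>" "\<delta> < 1"
  shows "eventually (\<lambda>x. ennreal ((1 - \<delta>) * \<bar>ln (fst x)\<bar> / I i) \<le> L_dec K M P0 P1 i A (fst x) (snd x) Pis) ab_to_0"
proof -
  have i: "i \<in> {1..K}" using A_sub[OF A] iA by auto
  obtain B where B: "B \<in> Pis" "i \<notin> B" using Pi_rich[OF i] by blast
  obtain \<alpha>0 where \<alpha>0: "\<alpha>0 > 0" and H: "\<forall>\<alpha> \<beta> (T::(nat \<Rightarrow> nat \<Rightarrow> 'a) \<Rightarrow> enat) D. 0 < \<alpha> \<longrightarrow> \<alpha> < \<alpha>0 \<longrightarrow> \<beta> < \<alpha>0 \<longrightarrow>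
      (\<forall>\<omega>\<in>space (PA A). T \<omega> \<noteq> 0) \<longrightarrow>
      (\<forall>n\<ge>1. {\<omega>\<in>space (PA A). T \<omega> = enat n \<and> D \<omega>} \<in> sets (local_filt K M i n)) \<longrightarrow>
      {\<omega>\<in>space (PA A). D \<omega>} \<in> sets (PA A) \<longrightarrow>
      measure (PA B) {\<omega>\<in>space (PA B). D \<omega>} \<le> \<alpha> \<longrightarrow> measure (PA A) {\<omega>\<in>space (PA A). \<not> D \<omega>} \<le> \<beta> \<longrightarrow>
      ennreal ((1 - \<delta>) * \<bar>ln \<alpha>\<bar> / I i) \<le> (\<integral>\<^sup>+\<omega>. ennreal_of_enat (T \<omega>) \<partial>PA A)"
    using LB_app1[OF i iA B(2) \<delta>] by blast
  from ab_to_0_small[OF \<alpha>0] ev_in show ?thesis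
  proof eventually_elim
    case (elim x)
    define \<alpha> \<beta> where "\<alpha> = fst x" and "\<beta> = snd x"
    have \<alpha>\<beta>: "\<alpha> \<in> {0<..<1}" "\<beta> \<in> {0<..<1}" using elim unfolding \<alpha>_def \<beta>_def by auto
    have "ennreal ((1 - \<delta>) * \<bar>ln \<alpha>\<bar> / I i) \<le> L_dec K M P0 P1 i A \<alpha> \<beta> Pis"
      unfolding L_dec_def
    proof (rule INF_greatest)
      fix TD assume "TD \<in> {(T, D). is_decentralized K M T D \<and> error_ok K P0 P1 D \<alpha> \<beta> Pis}"
      then obtain T D where TD: "TD = (T, D)" and dec: "is_decentralized K M T D" and ok: "error_ok K P0 P1 D \<alpha> \<beta> Pis"
        by auto
      have Dm: "\<And>j C. j \<in> {1..K} \<Longrightarrow> {\<omega>\<in>Om. D j \<omega>} \<in> sets (PA C)"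
        by (rule dec_sets(3)[OF dec])
      have c1: "measure (PA B) {\<omega>\<in>space (PA B). D i \<omega>} \<le> \<alpha>"
        using D_le_FWE1[OF i B(2) Dm] ok B(1) unfolding error_ok_def by fastforce
      have c2: "measure (PA A) {\<omega>\<in>space (PA A). \<not> D i \<omega>} \<le> \<beta>"
        using nD_le_FWE2[OF iA A_sub[OF A] Dm] ok A unfolding error_ok_def by fastforce
      have c3: "\<forall>n\<ge>1. {\<omega>\<in>space (PA A). enat (T i \<omega>) = enat n \<and> D i \<omega>} \<in> sets (local_filt K M i n)"
        unfolding PA_space using dec_sets(1)[OF dec i] by simp
      have c4: "{\<omega>\<in>space (PA A). D i \<omega>} \<in> sets (PA A)"
        unfolding PA_space by (rule Dm[OF i])
      have c5: "\<forall>\<omega>\<in>space (PA A). enat (T i \<omega>) \<noteq> 0"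
      proof
        fix \<omega> assume "\<omega> \<in> space (PA A)"
        then have "T i \<omega> \<ge> 1" using dec_sets(4)[OF dec i, of \<omega>] by (simp add: PA_space)
        then show "enat (T i \<omega>) \<noteq> 0" by (simp add: zero_enat_def)
      qed
      have "ennreal ((1 - \<delta>) * \<bar>ln \<alpha>\<bar> / I i) \<le> (\<integral>\<^sup>+\<omega>. ennreal_of_enat (enat (T i \<omega>)) \<partial>PA A)"
        using H[rule_format, of \<alpha> \<beta> "\<lambda>\<omega>. enat (T i \<omega>)" "D i"] c1 c2 c3 c4 c5 \<alpha>\<beta> elim
        unfolding \<alpha>_def \<beta>_def by auto
      also have "\<dots> = (\<integral>\<^sup>+\<omega>. ennreal (real (fst TD i \<omega>)) \<partial>PA A)"
        unfolding TD by (simp add: ennreal_of_nat_eq_real_of_nat)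
      finally show "ennreal ((1 - \<delta>) * \<bar>ln \<alpha>\<bar> / I i) \<le> (\<integral>\<^sup>+\<omega>. ennreal (real (fst TD i \<omega>)) \<partial>PA A)" .
    qed
    then show ?case unfolding \<alpha>_def \<beta>_def .
  qed
qed

lemma lowE0:
  assumes A: "A \<in> Pis" and jA: "j \<in> {1..K} - A" and \<delta>: "0 < \<delta>" "\<delta> < 1"
  shows "eventually (\<lambda>x. ennreal ((1 - \<delta>) * \<bar>ln (snd x)\<bar> / J j) \<le> E_sprt_T K P0 P1 lam (a x) (b x) j A) ab_to_0"
proof -
  have j: "j \<in> {1..K}" and jA': "j \<notin> A" using jA by auto
  obtain B where B: "B \<in> Pis" "j \<in> B" using Pi_rich[OF j] by blast
  obtain \<alpha>0 where \<alpha>0: "\<alpha>0 > 0" and H: "\<forall>\<alpha> \<beta> (T::(nat \<Rightarrow> nat \<Rightarrow> 'a) \<Rightarrow> enat) D. 0 < \<alpha> \<longrightarrow> \<alpha> < \<alpha>0 \<longrightarrow> \<beta> < \<alpha>0 \<longrightarrow>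
      (\<forall>\<omega>\<in>space (PA A). T \<omega> \<noteq> 0) \<longrightarrow>
      (\<forall>n\<ge>1. {\<omega>\<in>space (PA A). T \<omega> = enat n \<and> D \<omega>} \<in> sets (local_filt K M j n)) \<longrightarrow>
      {\<omega>\<in>space (PA A). D \<omega>} \<in> sets (PA A) \<longrightarrow>
      measure (PA B) {\<omega>\<in>space (PA B). D \<omega>} \<le> \<alpha> \<longrightarrow> measure (PA A) {\<omega>\<in>space (PA A). \<not> D \<omega>} \<le> \<beta> \<longrightarrow>
      ennreal ((1 - \<delta>) * \<bar>ln \<alpha>\<bar> / J j) \<le> (\<integral>\<^sup>+\<omega>. ennreal_of_enat (T \<omega>) \<partial>PA A)"
    using LB_app0[OF j jA' B(2) \<delta>] by blast
  from ab_to_0_small[OF \<alpha>0] ev_in show ?thesis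
  proof eventually_elim
    case (elim x)
    define \<alpha> \<beta> where "\<alpha> = fst x" and "\<beta> = snd x"
    have x: "x = (\<alpha>, \<beta>)" unfolding \<alpha>_def \<beta>_def by simp
    have \<alpha>\<beta>: "\<alpha> \<in> {0<..<1}" "\<beta> \<in> {0<..<1}" using elim unfolding \<alpha>_def \<beta>_def by auto
    have ok: "error_ok K P0 P1 (sprt_D lam (a x) (b x)) \<alpha> \<beta> Pis" using sprt_ok[OF \<alpha>\<beta>] x by simp
    have Dm: "\<And>j C. j \<in> {1..K} \<Longrightarrow> {\<omega>\<in>Om. sprt_D lam (a x) (b x) j \<omega>} \<in> sets (PA C)"
      by (rule sprt_D_set_PA)
    have c1: "measure (PA B) {\<omega>\<in>space (PA B). \<not> sprt_D lam (a x) (b x) j \<omega>} \<le> \<beta>"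
      using nD_le_FWE2[OF B(2) A_sub[OF B(1)] Dm] ok B(1) unfolding error_ok_def by fastforce
    have c2: "measure (PA A) {\<omega>\<in>space (PA A). \<not> \<not> sprt_D lam (a x) (b x) j \<omega>} \<le> \<alpha>"
      using D_le_FWE1[OF j jA' Dm] ok A unfolding error_ok_def by fastforce
    have c3: "\<forall>n\<ge>1. {\<omega>\<in>space (PA A). sprt_T lam (a x) (b x) j \<omega> = enat n \<and> \<not> sprt_D lam (a x) (b x) j \<omega>} \<in> sets (local_filt K M j n)"
      unfolding PA_space using sprt_TnD_set_local[OF j] by auto
    have c4: "{\<omega>\<in>space (PA A). \<not> sprt_D lam (a x) (b x) j \<omega>} \<in> sets (PA A)"
    proof -
      have "{\<omega>\<in>space (PA A). \<not> sprt_D lam (a x) (b x) j \<omega>} = space (PA A) - {\<omega>\<in>Om. sprt_D lam (a x) (b x) j \<omega>}"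
        by (auto simp: PA_space)
      then show ?thesis using Dm[OF j] by auto
    qed
    have c5: "\<forall>\<omega>\<in>space (PA A). sprt_T lam (a x) (b x) j \<omega> \<noteq> 0" by (simp add: sprt_T_ne0)
    have "ennreal ((1 - \<delta>) * \<bar>ln \<beta>\<bar> / J j) \<le> (\<integral>\<^sup>+\<omega>. ennreal_of_enat (sprt_T lam (a x) (b x) j \<omega>) \<partial>PA A)"
      using H[rule_format, of \<beta> \<alpha> "sprt_T lam (a x) (b x) j" "\<lambda>\<omega>. \<not> sprt_D lam (a x) (b x) j \<omega>"] c1 c2 c3 c4 c5 \<alpha>\<beta> elim
      unfolding \<alpha>_def \<beta>_def by auto
    then show ?case unfolding E_sprt_T_def \<beta>_def .
  qed
qed

lemma lowL0:
  assumes A: "A \<in> Pis" and jA: "j \<in> {1..K} - A" and \<delta>: "0 < \<delta>" "\<delta> < 1"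
  shows "eventually (\<lambda>x. ennreal ((1 - \<delta>) * \<bar>ln (snd x)\<bar> / J j) \<le> L_dec K M P0 P1 j A (fst x) (snd x) Pis) ab_to_0"
proof -
  have j: "j \<in> {1..K}" and jA': "j \<notin> A" using jA by auto
  obtain B where B: "B \<in> Pis" "j \<in> B" using Pi_rich[OF j] by blast
  obtain \<alpha>0 where \<alpha>0: "\<alpha>0 > 0" and H: "\<forall>\<alpha> \<beta> (T::(nat \<Rightarrow> nat \<Rightarrow> 'a) \<Rightarrow> enat) D. 0 < \<alpha> \<longrightarrow> \<alpha> < \<alpha>0 \<longrightarrow> \<beta> < \<alpha>0 \<longrightarrow>
      (\<forall>\<omega>\<in>space (PA A). T \<omega> \<noteq> 0) \<longrightarrow>
      (\<forall>n\<ge>1. {\<omega>\<in>space (PA A). T \<omega> = enat n \<and> D \<omega>} \<in> sets (local_filt K M j n)) \<longrightarrow>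
      {\<omega>\<in>space (PA A). D \<omega>} \<in> sets (PA A) \<longrightarrow>
      measure (PA B) {\<omega>\<in>space (PA B). D \<omega>} \<le> \<alpha> \<longrightarrow> measure (PA A) {\<omega>\<in>space (PA A). \<not> D \<omega>} \<le> \<beta> \<longrightarrow>
      ennreal ((1 - \<delta>) * \<bar>ln \<alpha>\<bar> / J j) \<le> (\<integral>\<^sup>+\<omega>. ennreal_of_enat (T \<omega>) \<partial>PA A)"
    using LB_app0[OF j jA' B(2) \<delta>] by blast
  from ab_to_0_small[OF \<alpha>0] ev_in show ?thesis
  proof eventually_elim
    case (elim x)
    define \<alpha> \<beta> where "\<alpha> = fst x" and "\<beta> = snd x"
    have \<alpha>\<beta>: "\<alpha> \<in> {0<..<1}" "\<beta> \<in> {0<..<1}" using elim unfolding \<alpha>_def \<beta>_def by auto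
    have "ennreal ((1 - \<delta>) * \<bar>ln \<beta>\<bar> / J j) \<le> L_dec K M P0 P1 j A \<alpha> \<beta> Pis"
      unfolding L_dec_def
    proof (rule INF_greatest)
      fix TD assume "TD \<in> {(T, D). is_decentralized K M T D \<and> error_ok K P0 P1 D \<alpha> \<beta> Pis}"
      then obtain T D where TD: "TD = (T, D)" and dec: "is_decentralized K M T D" and ok: "error_ok K P0 P1 D \<alpha> \<beta> Pis"
        by auto
      have Dm: "\<And>j C. j \<in> {1..K} \<Longrightarrow> {\<omega>\<in>Om. D j \<omega>} \<in> sets (PA C)"
        by (rule dec_sets(3)[OF dec])
      have c1: "measure (PA B) {\<omega>\<in>space (PA B). \<not> D j \<omega>} \<le> \<beta>"
        using nD_le_FWE2[OF B(2) A_sub[OF B(1)] Dm] ok B(1) unfolding error_ok_def by fastforce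
      have c2: "measure (PA A) {\<omega>\<in>space (PA A). \<not> \<not> D j \<omega>} \<le> \<alpha>"
        using D_le_FWE1[OF j jA' Dm] ok A unfolding error_ok_def by fastforce
      have c3: "\<forall>n\<ge>1. {\<omega>\<in>space (PA A). enat (T j \<omega>) = enat n \<and> \<not> D j \<omega>} \<in> sets (local_filt K M j n)"
        unfolding PA_space using dec_sets(2)[OF dec j] by simp
      have c4: "{\<omega>\<in>space (PA A). \<not> D j \<omega>} \<in> sets (PA A)"
      proof -
        have "{\<omega>\<in>space (PA A). \<not> D j \<omega>} = space (PA A) - {\<omega>\<in>Om. D j \<omega>}"
          by (auto simp: PA_space)
        then show ?thesis using Dm[OF j] by auto
      qed
      have c5: "\<forall>\<omega>\<in>space (PA A). enat (T j \<omega>) \<noteq> 0"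
      proof
        fix \<omega> assume "\<omega> \<in> space (PA A)"
        then have "T j \<omega> \<ge> 1" using dec_sets(4)[OF dec j, of \<omega>] by (simp add: PA_space)
        then show "enat (T j \<omega>) \<noteq> 0" by (simp add: zero_enat_def)
      qed
      have "ennreal ((1 - \<delta>) * \<bar>ln \<beta>\<bar> / J j) \<le> (\<integral>\<^sup>+\<omega>. ennreal_of_enat (enat (T j \<omega>)) \<partial>PA A)"
        using H[rule_format, of \<beta> \<alpha> "\<lambda>\<omega>. enat (T j \<omega>)" "\<lambda>\<omega>. \<not> D j \<omega>"] c1 c2 c3 c4 c5 \<alpha>\<beta> elim
        unfolding \<alpha>_def \<beta>_def by auto
      also have "\<dots> = (\<integral>\<^sup>+\<omega>. ennreal (real (fst TD j \<omega>)) \<partial>PA A)"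
        unfolding TD by (simp add: ennreal_of_nat_eq_real_of_nat)
      finally show "ennreal ((1 - \<delta>) * \<bar>ln \<beta>\<bar> / J j) \<le> (\<integral>\<^sup>+\<omega>. ennreal (real (fst TD j \<omega>)) \<partial>PA A)" .
    qed
    then show ?case unfolding \<alpha>_def \<beta>_def .
  qed
qed

end

context thmctx begin

lemma absln_big:
  fixes x L :: real
  assumes x: "0 < x" "x < 1" "x < exp (- L)"
  shows "\<bar>ln x\<bar> > L"
proof -
  have "ln x < - L"
  proof (rule ccontr)
    assume "\<not> ln x < - L"
    then have "exp (- L) \<le> exp (ln x)" by simp
    then have "exp (- L) \<le> x" using x by simp
    then show False using x by simp
  qed
  moreover have "ln x < 0" using x by simp
  ultimately show ?thesis by simp
qed

lemma upE_gen1: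
  assumes i: "i \<in> {1..K}" and iA: "i \<in> A" and \<delta>: "0 < \<delta>" "\<delta> < 1"
    and ev: "eventually (\<lambda>x. 0 < a1 x \<and> 0 < b1 x \<and> a1 x \<le> (1 + \<delta>/8) * \<bar>ln (fst x)\<bar>) ab_to_0"
  shows "eventually (\<lambda>x. E_sprt_T K P0 P1 lam (a1 x) (b1 x) i A \<le> ennreal ((1 + \<delta>) * \<bar>ln (fst x)\<bar> / I i)) ab_to_0"
proof -
  have Ii: "I i > 0" using IJ_pos[OF i] by simp
  define \<epsilon> where "\<epsilon> = I i * \<delta> / 8"
  have \<epsilon>: "0 < \<epsilon>" "\<epsilon> < I i" unfolding \<epsilon>_def using Ii \<delta> by auto
  define C where "C = C1 A i \<epsilon>"
  define L1 where "L1 = 2 * I i * (2 + \<bar>C\<bar>) / \<delta>"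
  from ev ev_in ab_to_0_small[OF exp_gt_zero[of "- L1"]] show ?thesis
  proof eventually_elim
    case (elim x)
    have L: "\<bar>ln (fst x)\<bar> > L1" by (rule absln_big) (use elim in auto)
    have "E_sprt_T K P0 P1 lam (a1 x) (b1 x) i A \<le> ennreal (a1 x / (I i - \<epsilon>) + 2 + C)"
      unfolding C_def by (rule UB_app1[OF i iA \<epsilon>]) (use elim in auto)
    also have "a1 x / (I i - \<epsilon>) + 2 + C \<le> (1 + \<delta>) * \<bar>ln (fst x)\<bar> / I i"
      unfolding \<epsilon>_def by (rule upper_arith[OF Ii \<delta>]) (use elim L in \<open>auto simp: L1_def\<close>)
    then have "ennreal (a1 x / (I i - \<epsilon>) + 2 + C) \<le> ennreal ((1 + \<delta>) * \<bar>ln (fst x)\<bar> / I i)"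
      by (rule ennreal_leI)
    finally show ?case .
  qed
qed

lemma upE_gen0:
  assumes j: "j \<in> {1..K}" and jA: "j \<notin> A" and \<delta>: "0 < \<delta>" "\<delta> < 1"
    and ev: "eventually (\<lambda>x. 0 < a1 x \<and> 0 < b1 x \<and> b1 x \<le> (1 + \<delta>/8) * \<bar>ln (snd x)\<bar>) ab_to_0"
  shows "eventually (\<lambda>x. E_sprt_T K P0 P1 lam (a1 x) (b1 x) j A \<le> ennreal ((1 + \<delta>) * \<bar>ln (snd x)\<bar> / J j)) ab_to_0"
proof -
  have Jj: "J j > 0" using IJ_pos[OF j] by simp
  define \<epsilon> where "\<epsilon> = J j * \<delta> / 8"
  have \<epsilon>: "0 < \<epsilon>" "\<epsilon> < J j" unfolding \<epsilon>_def using Jj \<delta> by auto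
  define C where "C = C0 A j \<epsilon>"
  define L1 where "L1 = 2 * J j * (2 + \<bar>C\<bar>) / \<delta>"
  from ev ev_in ab_to_0_small[OF exp_gt_zero[of "- L1"]] show ?thesis
  proof eventually_elim
    case (elim x)
    have L: "\<bar>ln (snd x)\<bar> > L1" by (rule absln_big) (use elim in auto)
    have "E_sprt_T K P0 P1 lam (a1 x) (b1 x) j A \<le> ennreal (b1 x / (J j - \<epsilon>) + 2 + C)"
      unfolding C_def by (rule UB_app0[OF j jA \<epsilon>]) (use elim in auto)
    also have "b1 x / (J j - \<epsilon>) + 2 + C \<le> (1 + \<delta>) * \<bar>ln (snd x)\<bar> / J j"
      unfolding \<epsilon>_def by (rule upper_arith[OF Jj \<delta>]) (use elim L in \<open>auto simp: L1_def\<close>)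
    then have "ennreal (b1 x / (J j - \<epsilon>) + 2 + C) \<le> ennreal ((1 + \<delta>) * \<bar>ln (snd x)\<bar> / J j)"
      by (rule ennreal_leI)
    finally show ?case .
  qed
qed

lemma upL:
  assumes A: "A \<in> Pis" and k: "k \<in> {1..K}" and \<alpha>: "\<alpha> \<in> {0<..<1}" and \<beta>: "\<beta> \<in> {0<..<1}"
  shows "L_dec K M P0 P1 k A \<alpha> \<beta> Pis \<le> E_sprt_T K P0 P1 lam (a (\<alpha>, \<beta>/2)) (b (\<alpha>, \<beta>/2)) k A"
proof -
  have \<beta>2: "\<beta>/2 \<in> {0<..<1}" using \<beta> by auto
  have ab: "a (\<alpha>, \<beta>/2) > 0" "b (\<alpha>, \<beta>/2) > 0" using ab_pos[OF \<alpha> \<beta>2] by auto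
  have \<beta>0: "\<beta> > 0" using \<beta> by simp
  obtain N where N: "N \<ge> 1" and tl: "\<forall>A\<in>Pis. measure (PA A) {\<omega>\<in>Om. \<exists>k\<in>{1..K}. enat N < sprt_T lam (a (\<alpha>, \<beta>/2)) (b (\<alpha>, \<beta>/2)) k \<omega>} \<le> \<beta>/2"
    using tail_N[OF ab Pis_fin \<beta>0] by blast
  have ok: "error_ok K P0 P1 (trD (a (\<alpha>, \<beta>/2)) (b (\<alpha>, \<beta>/2)) N) \<alpha> \<beta> Pis"
    by (rule trunc_err[OF Pi_sub sprt_ok[OF \<alpha> \<beta>2] tl])
  show ?thesis by (rule Ldec_le[OF k N ok])
qed

lemma gpos_fst: "eventually (\<lambda>x. \<bar>ln (fst x)\<bar> > 0) ab_to_0"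
  using ev_in by eventually_elim auto

lemma gpos_snd: "eventually (\<lambda>x. \<bar>ln (snd x)\<bar> > 0) ab_to_0"
  using ev_in by eventually_elim auto

lemma a_le: "\<delta> > 0 \<Longrightarrow> eventually (\<lambda>x. a x \<le> (1 + \<delta>) * \<bar>ln (fst x)\<bar>) ab_to_0"
proof -
  assume \<delta>: "\<delta> > 0"
  have eq: "(\<lambda>(\<alpha>, \<beta>). \<bar>ln \<alpha>\<bar>) = (\<lambda>x. \<bar>ln (fst x)\<bar>)" by (auto simp: fun_eq_iff)
  have "eventually (\<lambda>x. \<bar>a x - \<bar>ln (fst x)\<bar>\<bar> \<le> \<delta> * \<bar>ln (fst x)\<bar>) ab_to_0"
    using asymp_boundsD[OF a_asymp[unfolded eq] gpos_fst \<delta>] .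
  then show ?thesis by eventually_elim (simp add: algebra_simps abs_le_iff)
qed

lemma b_le: "\<delta> > 0 \<Longrightarrow> eventually (\<lambda>x. b x \<le> (1 + \<delta>) * \<bar>ln (snd x)\<bar>) ab_to_0"
proof -
  assume \<delta>: "\<delta> > 0"
  have eq: "(\<lambda>(\<alpha>, \<beta>). \<bar>ln \<beta>\<bar>) = (\<lambda>x. \<bar>ln (snd x)\<bar>)" by (auto simp: fun_eq_iff)
  have "eventually (\<lambda>x. \<bar>b x - \<bar>ln (snd x)\<bar>\<bar> \<le> \<delta> * \<bar>ln (snd x)\<bar>) ab_to_0"
    using asymp_boundsD[OF b_asymp[unfolded eq] gpos_snd \<delta>] .
  then show ?thesis by eventually_elim (simp add: algebra_simps abs_le_iff)
qed

lemma a_half_le: "\<delta> > 0 \<Longrightarrow> eventually (\<lambda>x. a (fst x, snd x / 2) \<le> (1 + \<delta>) * \<bar>ln (fst x)\<bar>) ab_to_0"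
  using eventually_half[OF a_le] by simp

lemma b_half_le:
  assumes \<delta>: "\<delta> > 0"
  shows "eventually (\<lambda>x. b (fst x, snd x / 2) \<le> (1 + \<delta>) * \<bar>ln (snd x)\<bar>) ab_to_0"
proof -
  define L2 where "L2 = (2 / \<delta> + 1) * ln 2"
  have "eventually (\<lambda>x. b (fst x, snd x / 2) \<le> (1 + \<delta>/2) * \<bar>ln (snd x / 2)\<bar>) ab_to_0"
    using eventually_half[OF b_le[of "\<delta>/2"]] \<delta> by simp
  with ev_in ab_to_0_small[OF exp_gt_zero[of "- L2"]] show ?thesis
  proof eventually_elim
    case (elim x)
    define \<beta> where "\<beta> = snd x"
    have \<beta>: "0 < \<beta>" "\<beta> < 1" using elim unfolding \<beta>_def by auto
    have L: "\<bar>ln \<beta>\<bar> > L2" by (rule absln_big) (use elim in \<open>auto simp: \<beta>_def\<close>)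
    have l2: "\<bar>ln (\<beta> / 2)\<bar> = \<bar>ln \<beta>\<bar> + ln 2"
    proof -
      have e: "ln (\<beta> / 2) = ln \<beta> - ln 2" using \<beta> by (simp add: ln_div)
      have n: "ln \<beta> < 0" using \<beta> by simp
      have p: "ln (2::real) > 0" by simp
      have "ln \<beta> - ln 2 < 0" using n p by linarith
      then have "\<bar>ln (\<beta> / 2)\<bar> = ln 2 - ln \<beta>" unfolding e by simp
      moreover have "\<bar>ln \<beta>\<bar> = - ln \<beta>" using n by simp
      ultimately show ?thesis by simp
    qed
    have "(1 + \<delta>/2) * ln 2 \<le> (\<delta>/2) * \<bar>ln \<beta>\<bar>"
    proof -
      have "(1 + \<delta>/2) * ln 2 = (\<delta>/2) * L2" unfolding L2_def using \<delta> by (simp add: field_simps)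
      also have "\<dots> \<le> (\<delta>/2) * \<bar>ln \<beta>\<bar>" using L \<delta> by (intro mult_left_mono) auto
      finally show ?thesis .
    qed
    then have "(1 + \<delta>/2) * \<bar>ln (\<beta> / 2)\<bar> \<le> (1 + \<delta>) * \<bar>ln \<beta>\<bar>"
      unfolding l2 by (simp add: algebra_simps)
    then show ?case using elim unfolding \<beta>_def by linarith
  qed
qed

end

context thmctx begin

theorem main:
  shows "\<forall>A\<in>Pis.
     (\<forall>i\<in>A.
        (\<lambda>(\<alpha>, \<beta>). enn2real (E_sprt_T K P0 P1 lam (a (\<alpha>, \<beta>)) (b (\<alpha>, \<beta>)) i A))
          \<sim>[ab_to_0] (\<lambda>(\<alpha>, \<beta>). enn2real (L_dec K M P0 P1 i A \<alpha> \<beta> Pis)) \<and>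
        (\<lambda>(\<alpha>, \<beta>). enn2real (L_dec K M P0 P1 i A \<alpha> \<beta> Pis))
          \<sim>[ab_to_0] (\<lambda>(\<alpha>, \<beta>). \<bar>ln \<alpha>\<bar> / I i)) \<and>
     (\<forall>j\<in>{1..K} - A.
        (\<lambda>(\<alpha>, \<beta>). enn2real (E_sprt_T K P0 P1 lam (a (\<alpha>, \<beta>)) (b (\<alpha>, \<beta>)) j A))
          \<sim>[ab_to_0] (\<lambda>(\<alpha>, \<beta>). enn2real (L_dec K M P0 P1 j A \<alpha> \<beta> Pis)) \<and>
        (\<lambda>(\<alpha>, \<beta>). enn2real (L_dec K M P0 P1 j A \<alpha> \<beta> Pis))
          \<sim>[ab_to_0] (\<lambda>(\<alpha>, \<beta>). \<bar>ln \<beta>\<bar> / J j))"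
proof (rule ballI, rule conjI)
  fix A assume A: "A \<in> Pis"
  {
    fix i assume iA: "i \<in> A"
    have i: "i \<in> {1..K}" using A_sub[OF A] iA by auto
    have Ii: "I i > 0" using IJ_pos[OF i] by simp
    have gp: "eventually (\<lambda>x. (\<lambda>(\<alpha>, \<beta>). \<bar>ln \<alpha>\<bar> / I i) x > 0) ab_to_0"
      using gpos_fst by eventually_elim (use Ii in \<open>auto simp: case_prod_beta\<close>)
    have E_g: "(\<lambda>(\<alpha>, \<beta>). enn2real (E_sprt_T K P0 P1 lam (a (\<alpha>, \<beta>)) (b (\<alpha>, \<beta>)) i A)) \<sim>[ab_to_0] (\<lambda>(\<alpha>, \<beta>). \<bar>ln \<alpha>\<bar> / I i)"
    proof (rule asymp_from_bounds[OF gp])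
      fix \<delta> :: real assume \<delta>: "0 < \<delta>" "\<delta> < 1"
      have d8: "\<delta>/8 > 0" using \<delta> by simp
      have ev: "eventually (\<lambda>x. 0 < a x \<and> 0 < b x \<and> a x \<le> (1 + \<delta>/8) * \<bar>ln (fst x)\<bar>) ab_to_0"
        using a_le[OF d8] ev_in
      proof eventually_elim
        case (elim x)
        then show ?case using ab_pos[of "fst x" "snd x"] by simp
      qed
      from upE_gen1[OF i iA \<delta> ev] lowE1[OF A iA \<delta>]
      show "eventually (\<lambda>x. (1 - \<delta>) * (\<lambda>(\<alpha>, \<beta>). \<bar>ln \<alpha>\<bar> / I i) x \<le> (\<lambda>(\<alpha>, \<beta>). enn2real (E_sprt_T K P0 P1 lam (a (\<alpha>, \<beta>)) (b (\<alpha>, \<beta>)) i A)) x \<and>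
          (\<lambda>(\<alpha>, \<beta>). enn2real (E_sprt_T K P0 P1 lam (a (\<alpha>, \<beta>)) (b (\<alpha>, \<beta>)) i A)) x \<le> (1 + \<delta>) * (\<lambda>(\<alpha>, \<beta>). \<bar>ln \<alpha>\<bar> / I i) x) ab_to_0"
      proof eventually_elim
        case (elim x)
        have l0: "0 \<le> (1 - \<delta>) * \<bar>ln (fst x)\<bar> / I i" using \<delta> Ii by simp
        have u0: "0 \<le> (1 + \<delta>) * \<bar>ln (fst x)\<bar> / I i" using \<delta> Ii by simp
        from enn_bounds[OF l0 elim(2) elim(1) u0] show ?case by (simp add: case_prod_beta)
      qed
    qed
    have L_g: "(\<lambda>(\<alpha>, \<beta>). enn2real (L_dec K M P0 P1 i A \<alpha> \<beta> Pis)) \<sim>[ab_to_0] (\<lambda>(\<alpha>, \<beta>). \<bar>ln \<alpha>\<bar> / I i)"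
    proof (rule asymp_from_bounds[OF gp])
      fix \<delta> :: real assume \<delta>: "0 < \<delta>" "\<delta> < 1"
      have d8: "\<delta>/8 > 0" using \<delta> by simp
      have ev: "eventually (\<lambda>x. 0 < a (fst x, snd x / 2) \<and> 0 < b (fst x, snd x / 2) \<and> a (fst x, snd x / 2) \<le> (1 + \<delta>/8) * \<bar>ln (fst x)\<bar>) ab_to_0"
        using a_half_le[OF d8] ev_in
      proof eventually_elim
        case (elim x)
        then show ?case using ab_pos[of "fst x" "snd x / 2"] by simp
      qed
      have up: "eventually (\<lambda>x. L_dec K M P0 P1 i A (fst x) (snd x) Pis \<le> ennreal ((1 + \<delta>) * \<bar>ln (fst x)\<bar> / I i)) ab_to_0"
        using upE_gen1[OF i iA \<delta> ev] ev_in
      proof eventually_elim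
        case (elim x)
        then show ?case using upL[OF A i, of "fst x" "snd x"] by (blast intro: order_trans)
      qed
      from up lowL1[OF A iA \<delta>]
      show "eventually (\<lambda>x. (1 - \<delta>) * (\<lambda>(\<alpha>, \<beta>). \<bar>ln \<alpha>\<bar> / I i) x \<le> (\<lambda>(\<alpha>, \<beta>). enn2real (L_dec K M P0 P1 i A \<alpha> \<beta> Pis)) x \<and>
          (\<lambda>(\<alpha>, \<beta>). enn2real (L_dec K M P0 P1 i A \<alpha> \<beta> Pis)) x \<le> (1 + \<delta>) * (\<lambda>(\<alpha>, \<beta>). \<bar>ln \<alpha>\<bar> / I i) x) ab_to_0"
      proof eventually_elim
        case (elim x)
        have l0: "0 \<le> (1 - \<delta>) * \<bar>ln (fst x)\<bar> / I i" using \<delta> Ii by simp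
        have u0: "0 \<le> (1 + \<delta>) * \<bar>ln (fst x)\<bar> / I i" using \<delta> Ii by simp
        from enn_bounds[OF l0 elim(2) elim(1) u0] show ?case by (simp add: case_prod_beta)
      qed
    qed
    have "(\<lambda>(\<alpha>, \<beta>). enn2real (E_sprt_T K P0 P1 lam (a (\<alpha>, \<beta>)) (b (\<alpha>, \<beta>)) i A))
          \<sim>[ab_to_0] (\<lambda>(\<alpha>, \<beta>). enn2real (L_dec K M P0 P1 i A \<alpha> \<beta> Pis))"
      by (rule asymp_equiv_trans[OF E_g asymp_equiv_symI[OF L_g]])
    note this L_g
  }
  then show "\<forall>i\<in>A. (\<lambda>(\<alpha>, \<beta>). enn2real (E_sprt_T K P0 P1 lam (a (\<alpha>, \<beta>)) (b (\<alpha>, \<beta>)) i A))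
          \<sim>[ab_to_0] (\<lambda>(\<alpha>, \<beta>). enn2real (L_dec K M P0 P1 i A \<alpha> \<beta> Pis)) \<and>
        (\<lambda>(\<alpha>, \<beta>). enn2real (L_dec K M P0 P1 i A \<alpha> \<beta> Pis))
          \<sim>[ab_to_0] (\<lambda>(\<alpha>, \<beta>). \<bar>ln \<alpha>\<bar> / I i)" by blast
  {
    fix j assume jA: "j \<in> {1..K} - A"
    have j: "j \<in> {1..K}" and jA': "j \<notin> A" using jA by auto
    have Jj: "J j > 0" using IJ_pos[OF j] by simp
    have gp: "eventually (\<lambda>x. (\<lambda>(\<alpha>, \<beta>). \<bar>ln \<beta>\<bar> / J j) x > 0) ab_to_0"
      using gpos_snd by eventually_elim (use Jj in \<open>auto simp: case_prod_beta\<close>)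
    have E_g: "(\<lambda>(\<alpha>, \<beta>). enn2real (E_sprt_T K P0 P1 lam (a (\<alpha>, \<beta>)) (b (\<alpha>, \<beta>)) j A)) \<sim>[ab_to_0] (\<lambda>(\<alpha>, \<beta>). \<bar>ln \<beta>\<bar> / J j)"
    proof (rule asymp_from_bounds[OF gp])
      fix \<delta> :: real assume \<delta>: "0 < \<delta>" "\<delta> < 1"
      have d8: "\<delta>/8 > 0" using \<delta> by simp
      have ev: "eventually (\<lambda>x. 0 < a x \<and> 0 < b x \<and> b x \<le> (1 + \<delta>/8) * \<bar>ln (snd x)\<bar>) ab_to_0"
        using b_le[OF d8] ev_in
      proof eventually_elim
        case (elim x)
        then show ?case using ab_pos[of "fst x" "snd x"] by simp
      qed
      from upE_gen0[OF j jA' \<delta> ev] lowE0[OF A jA \<delta>]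
      show "eventually (\<lambda>x. (1 - \<delta>) * (\<lambda>(\<alpha>, \<beta>). \<bar>ln \<beta>\<bar> / J j) x \<le> (\<lambda>(\<alpha>, \<beta>). enn2real (E_sprt_T K P0 P1 lam (a (\<alpha>, \<beta>)) (b (\<alpha>, \<beta>)) j A)) x \<and>
          (\<lambda>(\<alpha>, \<beta>). enn2real (E_sprt_T K P0 P1 lam (a (\<alpha>, \<beta>)) (b (\<alpha>, \<beta>)) j A)) x \<le> (1 + \<delta>) * (\<lambda>(\<alpha>, \<beta>). \<bar>ln \<beta>\<bar> / J j) x) ab_to_0"
      proof eventually_elim
        case (elim x)
        have l0: "0 \<le> (1 - \<delta>) * \<bar>ln (snd x)\<bar> / J j" using \<delta> Jj by simp
        have u0: "0 \<le> (1 + \<delta>) * \<bar>ln (snd x)\<bar> / J j" using \<delta> Jj by simp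
        from enn_bounds[OF l0 elim(2) elim(1) u0] show ?case by (simp add: case_prod_beta)
      qed
    qed
    have L_g: "(\<lambda>(\<alpha>, \<beta>). enn2real (L_dec K M P0 P1 j A \<alpha> \<beta> Pis)) \<sim>[ab_to_0] (\<lambda>(\<alpha>, \<beta>). \<bar>ln \<beta>\<bar> / J j)"
    proof (rule asymp_from_bounds[OF gp])
      fix \<delta> :: real assume \<delta>: "0 < \<delta>" "\<delta> < 1"
      have d8: "\<delta>/8 > 0" using \<delta> by simp
      have ev: "eventually (\<lambda>x. 0 < a (fst x, snd x / 2) \<and> 0 < b (fst x, snd x / 2) \<and> b (fst x, snd x / 2) \<le> (1 + \<delta>/8) * \<bar>ln (snd x)\<bar>) ab_to_0"
        using b_half_le[OF d8] ev_in
      proof eventually_elim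
        case (elim x)
        then show ?case using ab_pos[of "fst x" "snd x / 2"] by simp
      qed
      have up: "eventually (\<lambda>x. L_dec K M P0 P1 j A (fst x) (snd x) Pis \<le> ennreal ((1 + \<delta>) * \<bar>ln (snd x)\<bar> / J j)) ab_to_0"
        using upE_gen0[OF j jA' \<delta> ev] ev_in
      proof eventually_elim
        case (elim x)
        then show ?case using upL[OF A j, of "fst x" "snd x"] by (blast intro: order_trans)
      qed
      from up lowL0[OF A jA \<delta>]
      show "eventually (\<lambda>x. (1 - \<delta>) * (\<lambda>(\<alpha>, \<beta>). \<bar>ln \<beta>\<bar> / J j) x \<le> (\<lambda>(\<alpha>, \<beta>). enn2real (L_dec K M P0 P1 j A \<alpha> \<beta> Pis)) x \<and>
          (\<lambda>(\<alpha>, \<beta>). enn2real (L_dec K M P0 P1 j A \<alpha> \<beta> Pis)) x \<le> (1 + \<delta>) * (\<lambda>(\<alpha>, \<beta>). \<bar>ln \<beta>\<bar> / J j) x) ab_to_0"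
      proof eventually_elim
        case (elim x)
        have l0: "0 \<le> (1 - \<delta>) * \<bar>ln (snd x)\<bar> / J j" using \<delta> Jj by simp
        have u0: "0 \<le> (1 + \<delta>) * \<bar>ln (snd x)\<bar> / J j" using \<delta> Jj by simp
        from enn_bounds[OF l0 elim(2) elim(1) u0] show ?case by (simp add: case_prod_beta)
      qed
    qed
    have "(\<lambda>(\<alpha>, \<beta>). enn2real (E_sprt_T K P0 P1 lam (a (\<alpha>, \<beta>)) (b (\<alpha>, \<beta>)) j A))
          \<sim>[ab_to_0] (\<lambda>(\<alpha>, \<beta>). enn2real (L_dec K M P0 P1 j A \<alpha> \<beta> Pis))"
      by (rule asymp_equiv_trans[OF E_g asymp_equiv_symI[OF L_g]])
    note this L_g
  }
  then show "\<forall>j\<in>{1..K} - A. (\<lambda>(\<alpha>, \<beta>). enn2real (E_sprt_T K P0 P1 lam (a (\<alpha>, \<beta>)) (b (\<alpha>, \<beta>)) j A))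
          \<sim>[ab_to_0] (\<lambda>(\<alpha>, \<beta>). enn2real (L_dec K M P0 P1 j A \<alpha> \<beta> Pis)) \<and>
        (\<lambda>(\<alpha>, \<beta>). enn2real (L_dec K M P0 P1 j A \<alpha> \<beta> Pis))
          \<sim>[ab_to_0] (\<lambda>(\<alpha>, \<beta>). \<bar>ln \<beta>\<bar> / J j)" by blast
qed

end

theorem theorem5p3:
  fixes K :: nat
    and M :: "nat \<Rightarrow> 'a measure"
    and P0 P1 :: "nat \<Rightarrow> (nat \<Rightarrow> 'a) measure"
    and lam :: "nat \<Rightarrow> nat \<Rightarrow> (nat \<Rightarrow> 'a) \<Rightarrow> real"
    and Pis :: "nat set set"
    and a b :: "real \<times> real \<Rightarrow> real"
    and I J :: "nat \<Rightarrow> real"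
  assumes K: "K \<ge> 1"
    and P0: "\<And>k. k \<in> {1..K} \<Longrightarrow> prob_space (P0 k) \<and> sets (P0 k) = sets (path_space (M k))"
    and P1: "\<And>k. k \<in> {1..K} \<Longrightarrow> prob_space (P1 k) \<and> sets (P1 k) = sets (path_space (M k))"
    and lam_meas: "\<And>k n. k \<in> {1..K} \<Longrightarrow> n \<ge> 1 \<Longrightarrow>
        lam k n \<in> borel_measurable (stream_filt (M k) n)"
    and lam_llr: "\<And>k n. k \<in> {1..K} \<Longrightarrow> n \<ge> 1 \<Longrightarrow>
        density (restr_to_subalg (P0 k) (stream_filt (M k) n)) (\<lambda>x. ennreal (exp (lam k n x)))
          = restr_to_subalg (P1 k) (stream_filt (M k) n)"
    and Pi_sub: "Pis \<subseteq> Pow {1..K}"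
    and Pi_rich: "\<And>k. k \<in> {1..K} \<Longrightarrow> \<exists>A\<in>Pis. \<exists>B\<in>Pis. k \<in> A \<and> k \<notin> B"
    and ab_pos: "\<And>\<alpha> \<beta>. \<alpha> \<in> {0<..<1} \<Longrightarrow> \<beta> \<in> {0<..<1} \<Longrightarrow> a (\<alpha>, \<beta>) > 0 \<and> b (\<alpha>, \<beta>) > 0"
    and sprt_ok: "\<And>\<alpha> \<beta>. \<alpha> \<in> {0<..<1} \<Longrightarrow> \<beta> \<in> {0<..<1} \<Longrightarrow>
        error_ok K P0 P1 (sprt_D lam (a (\<alpha>, \<beta>)) (b (\<alpha>, \<beta>))) \<alpha> \<beta> Pis"
    and a_asymp: "a \<sim>[ab_to_0] (\<lambda>(\<alpha>, \<beta>). \<bar>ln \<alpha>\<bar>)"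
    and b_asymp: "b \<sim>[ab_to_0] (\<lambda>(\<alpha>, \<beta>). \<bar>ln \<beta>\<bar>)"
    and IJ_pos: "\<And>k. k \<in> {1..K} \<Longrightarrow> I k > 0 \<and> J k > 0"
    and limsup1: "\<And>k. k \<in> {1..K} \<Longrightarrow>
        AE x in P1 k. limsup (\<lambda>n. ereal (lam k n x / real n)) \<le> ereal (I k)"
    and limsup0: "\<And>k. k \<in> {1..K} \<Longrightarrow>
        AE x in P0 k. limsup (\<lambda>n. ereal (- lam k n x / real n)) \<le> ereal (J k)"
    and compl1: "\<And>k \<epsilon>. k \<in> {1..K} \<Longrightarrow> \<epsilon> > 0 \<Longrightarrow>
        summable (\<lambda>n. measure (P1 k) {x \<in> space (P1 k). lam k n x / real n \<le> I k - \<epsilon>})"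
    and compl0: "\<And>k \<epsilon>. k \<in> {1..K} \<Longrightarrow> \<epsilon> > 0 \<Longrightarrow>
        summable (\<lambda>n. measure (P0 k) {x \<in> space (P0 k). - lam k n x / real n \<le> J k - \<epsilon>})"
  shows "\<forall>A\<in>Pis.
     (\<forall>i\<in>A.
        (\<lambda>(\<alpha>, \<beta>). enn2real (E_sprt_T K P0 P1 lam (a (\<alpha>, \<beta>)) (b (\<alpha>, \<beta>)) i A))
          \<sim>[ab_to_0] (\<lambda>(\<alpha>, \<beta>). enn2real (L_dec K M P0 P1 i A \<alpha> \<beta> Pis)) \<and>
        (\<lambda>(\<alpha>, \<beta>). enn2real (L_dec K M P0 P1 i A \<alpha> \<beta> Pis))
          \<sim>[ab_to_0] (\<lambda>(\<alpha>, \<beta>). \<bar>ln \<alpha>\<bar> / I i)) \<and>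
     (\<forall>j\<in>{1..K} - A.
        (\<lambda>(\<alpha>, \<beta>). enn2real (E_sprt_T K P0 P1 lam (a (\<alpha>, \<beta>)) (b (\<alpha>, \<beta>)) j A))
          \<sim>[ab_to_0] (\<lambda>(\<alpha>, \<beta>). enn2real (L_dec K M P0 P1 j A \<alpha> \<beta> Pis)) \<and>
        (\<lambda>(\<alpha>, \<beta>). enn2real (L_dec K M P0 P1 j A \<alpha> \<beta> Pis))
          \<sim>[ab_to_0] (\<lambda>(\<alpha>, \<beta>). \<bar>ln \<beta>\<bar> / J j))"
proof -
  interpret thmctx K M P0 P1 lam I J Pis a b
    by unfold_locales (fact P0 P1 lam_meas lam_llr IJ_pos limsup1 limsup0 compl1 compl0 Pi_sub Pi_rich ab_pos sprt_ok a_asymp b_asymp)+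
  show ?thesis by (rule main)
qed

end
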